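(* Consider a degree-corrected stochastic block model with $K$ communities, membership matrix $\Theta\in\mathbb M_{n,K}$ (community sizes $n_k\ge1$), symmetric $B\in[0,1]^{K\times K}$ with $\mathrm{rank}(B)=K'\le K$, and propensities $\vartheta\in\mathbb R^n_+$ with $\max_{i\in G_k}\vartheta_i=1$. Let $P=\mathrm{diag}(\vartheta)\Theta B\Theta^\intercal\mathrm{diag}(\vartheta)=U\Sigma U^\intercal$ ($U\in\mathbb R^{n\times K'}$), $\gamma_n$ the smallest nonzero eigenvalue of $P$, $\phi_k$ the vector agreeing with $\vartheta$ on $G_k$ and zero elsewhere, $\Omega=\mathrm{diag}(\|\phi_1\|_2,\dots,\|\phi_K\|_2)$, $\bar B=\Omega B\Omega=HDH^\intercal$ ($H\in\mathbb R^{K\times K'}$), and $\tilde\vartheta\in\mathbb R^n$ with $\tilde\vartheta_i=\vartheta_i/\|\phi_{g_i}\|_2$. Let $\tilde A$ be either $\tilde A^{\rm rp}$ or $\tilde A^{\rm rs}$, computed from the adjacency matrix $A$ drawn from this model, and let $\tilde\Theta$ be the output of randomized spherical spectral clustering applied to $\tilde A$. Then: (a) If $K'=K$ and there is an absolute constant $c_9>0$ with $\frac{1}{\min_i\tilde\vartheta_i^2}\cdot\frac{K'\|\tilde A-P\|_2^2}{\gamma_n^2\min_kn_k}\le c_9$, then there exist subsets $S_k\subseteq G_k$ with $$L_1(\tilde\Theta,\Theta)\le\sum_{k=1}^K\frac{|S_k|}{n_k}\le c_9^{-1}\frac{1}{\min_i\tilde\vartheta_i^2}\cdot\frac{K'\|\tilde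 A-P\|_2^2}{\gamma_n^2\min_kn_k},$$ and for $G=\bigcup_k(G_k\setminus S_k)$ there is a $K\times K$ permutation matrix $J$ with $\tilde\Theta_{G\ast}J=\Theta_{G\ast}$. (b) If $K'<K$, there is a deterministic sequence $\xi'_n<1$ with $\max_{k\ne l}\cos(H_{k\ast},H_{l\ast})\le\xi'_n$, $\max_i\Sigma_{ii}<\overline\iota_n$, $\min_kB_{kk}>0$, and there is an absolute constant $c_{10}>0$ with $\frac{\overline\iota_n}{\min_i\tilde\vartheta_i^2\min_k\bar B_{kk}}\cdot\frac{K'\|\tilde A-P\|_2^2}{(1-\xi'_n)\gamma_n^2\min_kn_k}\le c_{10}$, then there exist subsets $S_k\subseteq G_k$ with $$L_1(\tilde\Theta,\Theta)\le\sum_{k=1}^K\frac{|S_k|}{n_k}\le c_{10}^{-1}\frac{\overline\iota_n}{\min_i\tilde\vartheta_i^2\min_k\bar B_{kk}}\cdot\frac{K'\|\tilde A-P\|_2^2}{(1-\xi'_n)\gamma_n^2\min_kn_k},$$ and for $G=\bigcup_k(G_k\setminus S_k)$ there is a $K\times K$ permutation matrix $I$ with $\tilde\Theta_{G\ast}I=\Theta_{G\ast}$.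
   Context: $\mathbb M_{n,K}$: $n\times K$ 0/1 matrices with exactly one $1$ per row; $g_i$ is the community of node $i$, $G_k=\{i:g_i=k\}$, $n_k=|G_k|$. DC-SBM: $a_{ij}\sim\mathrm{Bernoulli}(P_{ij})$ independently for $i<j$, $a_{ii}=0$, symmetric. Random-projection approximation $\tilde A^{\rm rp}$ (target rank $K'$, oversampling $r$, power $q$): draw $\Omega\in\mathbb R^{n\times(K'+r)}$ random, $Y=A^{2q+1}\Omega$, $Y=QR$ (QR), $\tilde A^{\rm rp}=QQ^\intercal AQQ^\intercal$. Random-sampling approximation $\tilde A^{\rm rs}$: for each $i<j$ independently select $(i,j)$ with probability $p_{ij}$, set $\tilde A^{\rm s}_{ij}=\tilde A^{\rm s}_{ji}=A_{ij}/p_{ij}$ if selected and $0$ otherwise, and let $\tilde A^{\rm rs}$ be a best rank-$K'$ approximation of $\tilde A^{\rm s}$ in spectral norm. Randomized spherical spectral clustering: let $\hat U\in\mathbb R^{n\times K'}$ be the eigenvectors of $\tilde A$ for its $K'$ largest eigenvalues; form $\hat U'$ by dividing each nonzero row of $\hat U$ by its Euclidean norm (zero rows left unchanged); let $(\tilde\Theta,\tilde X)$ minimize $\|\Theta'X-\hat U'\|_F^2$ over $\Theta'\in\mathbb M_{n,K}$, $X\in\mathbb R^{K\times K'}$ (exact $k$-means). $L_1(\tilde\Theta,\Theta)=\min_{J\in E_K}\sum_k(2n_k)^{-1}\|(\tilde\Theta J)_{G_k\ast}-\Theta_{G_k\ast}\|_0$, $E_K$ the $K\times K$ permutation matrices.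 $\cos(a,b)=a^\intercal b/(\|a\|_2\|b\|_2)$. *)

theory Defs
  imports "Jordan_Normal_Form.DL_Rank" "HOL-Combinatorics.Permutations"
begin

text \<open>Conventions: indices are 0-based; nodes are 0..<n, communities 0..<K.
Matrices are Jordan_Normal_Form matrices of type real mat with explicit carriers.\<close>

definition vnorm :: "real vec \<Rightarrow> real" where
  "vnorm x = sqrt (x \<bullet> x)"

definition spec_norm :: "real mat \<Rightarrow> real" where
  "spec_norm M = Sup {vnorm (M *\<^sub>v x) | x. x \<in> carrier_vec (dim_col M) \<and> vnorm x \<le> 1}"

definition frob_sq :: "real mat \<Rightarrow> real" where
  "frob_sq M = (\<Sum>i<dim_row M. \<Sum>j<dim_col M. (M $$ (i,j))\<^sup>2)"

definition mrank :: "real mat \<Rightarrow> nat" where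
  "mrank M = vec_space.rank (dim_row M) M"

definition diagv :: "real vec \<Rightarrow> real mat" where
  "diagv v = mat (dim_vec v) (dim_vec v) (\<lambda>(i,j). if i = j then v $ i else 0)"

definition symmetric_mat :: "real mat \<Rightarrow> bool" where
  "symmetric_mat M \<longleftrightarrow> M\<^sup>T = M"

definition memb_mat :: "nat \<Rightarrow> nat \<Rightarrow> real mat \<Rightarrow> bool" where
  "memb_mat n K T \<longleftrightarrow> T \<in> carrier_mat n K \<and>
     (\<forall>i<n. \<forall>k<K. T $$ (i,k) = 0 \<or> T $$ (i,k) = 1) \<and>
     (\<forall>i<n. card {k. k < K \<and> T $$ (i,k) = 1} = 1)"

definition comm :: "nat \<Rightarrow> real mat \<Rightarrow> nat \<Rightarrow> nat" where
  "comm K T i = (THE k. k < K \<and> T $$ (i,k) = 1)"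

definition Gset :: "real mat \<Rightarrow> nat \<Rightarrow> nat set" where
  "Gset T k = {i. i < dim_row T \<and> T $$ (i,k) = 1}"

definition perm_mat_of :: "nat \<Rightarrow> (nat \<Rightarrow> nat) \<Rightarrow> real mat" where
  "perm_mat_of K \<sigma> = mat K K (\<lambda>(i,j). if \<sigma> i = j then 1 else 0)"

definition perm_mats :: "nat \<Rightarrow> real mat set" where
  "perm_mats K = perm_mat_of K ` {\<sigma>. \<sigma> permutes {..<K}}"

definition l0_rows :: "real mat \<Rightarrow> nat set \<Rightarrow> nat" where
  "l0_rows M S = card {(i,j). i \<in> S \<and> i < dim_row M \<and> j < dim_col M \<and> M $$ (i,j) \<noteq> 0}"

definition L1_loss :: "nat \<Rightarrow> real mat \<Rightarrow> real mat \<Rightarrow> real" where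
  "L1_loss K Tt T = Min ((\<lambda>J. \<Sum>k<K. real (l0_rows (Tt * J - T) (Gset T k))
                                         / (2 * real (card (Gset T k)))) ` perm_mats K)"

definition cosv :: "real vec \<Rightarrow> real vec \<Rightarrow> real" where
  "cosv a b = (a \<bullet> b) / (vnorm a * vnorm b)"

definition phi :: "real mat \<Rightarrow> real vec \<Rightarrow> nat \<Rightarrow> real vec" where
  "phi T th k = vec (dim_vec th) (\<lambda>i. if i \<in> Gset T k then th $ i else 0)"

definition Omega_mat :: "nat \<Rightarrow> real mat \<Rightarrow> real vec \<Rightarrow> real mat" where
  "Omega_mat K T th = diagv (vec K (\<lambda>k. vnorm (phi T th k)))"

definition theta_tilde :: "nat \<Rightarrow> real mat \<Rightarrow> real vec \<Rightarrow> real vec" where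
  "theta_tilde K T th = vec (dim_vec th) (\<lambda>i. th $ i / vnorm (phi T th (comm K T i)))"

definition Pmat :: "real mat \<Rightarrow> real mat \<Rightarrow> real vec \<Rightarrow> real mat" where
  "Pmat T B th = diagv th * T * B * T\<^sup>T * diagv th"

definition dcsbm :: "nat \<Rightarrow> nat \<Rightarrow> nat \<Rightarrow> real mat \<Rightarrow> real mat \<Rightarrow> real vec \<Rightarrow> bool" where
  "dcsbm n K K' T B th \<longleftrightarrow>
     1 \<le> K \<and> memb_mat n K T \<and> (\<forall>k<K. 1 \<le> card (Gset T k)) \<and>
     B \<in> carrier_mat K K \<and> symmetric_mat B \<and> (\<forall>k<K. \<forall>l<K. 0 \<le> B $$ (k,l) \<and> B $$ (k,l) \<le> 1) \<and>
     mrank B = K' \<and> K' \<le> K \<and>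
     th \<in> carrier_vec n \<and> (\<forall>i<n. 0 < th $ i) \<and>
     (\<forall>k<K. Max ((\<lambda>i. th $ i) ` Gset T k) = 1)"

definition eig_decomp :: "nat \<Rightarrow> nat \<Rightarrow> real mat \<Rightarrow> real mat \<Rightarrow> real mat \<Rightarrow> bool" where
  "eig_decomp m r M V S \<longleftrightarrow> V \<in> carrier_mat m r \<and> S \<in> carrier_mat r r \<and>
     V\<^sup>T * V = 1\<^sub>m r \<and> diagonal_mat S \<and> (\<forall>i<r. S $$ (i,i) \<noteq> 0) \<and> M = V * S * V\<^sup>T"

text \<open>Possible realisations of the adjacency matrix A of the model with probability matrix P.\<close>
definition adj_realization :: "nat \<Rightarrow> real mat \<Rightarrow> real mat \<Rightarrow> bool" where
  "adj_realization n P A \<longleftrightarrow> A \<in> carrier_mat n n \<and> symmetric_mat A \<and>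
     (\<forall>i<n. A $$ (i,i) = 0) \<and>
     (\<forall>i<n. \<forall>j<n. i \<noteq> j \<longrightarrow> (A $$ (i,j) = 0 \<or> A $$ (i,j) = 1)) \<and>
     (\<forall>i<n. \<forall>j<n. i \<noteq> j \<longrightarrow> P $$ (i,j) = 0 \<longrightarrow> A $$ (i,j) = 0) \<and>
     (\<forall>i<n. \<forall>j<n. i \<noteq> j \<longrightarrow> P $$ (i,j) = 1 \<longrightarrow> A $$ (i,j) = 1)"

text \<open>Random-projection approximation (any test matrix Omega, any thin QR factorisation).\<close>
definition rp_approx :: "nat \<Rightarrow> nat \<Rightarrow> nat \<Rightarrow> nat \<Rightarrow> real mat \<Rightarrow> real mat \<Rightarrow> bool" where
  "rp_approx n K' r q A At \<longleftrightarrow> (\<exists>Om Q R.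
     Om \<in> carrier_mat n (K' + r) \<and> Q \<in> carrier_mat n (K' + r) \<and> R \<in> carrier_mat (K' + r) (K' + r) \<and>
     upper_triangular R \<and> Q\<^sup>T * Q = 1\<^sub>m (K' + r) \<and>
     A ^\<^sub>m (2 * q + 1) * Om = Q * R \<and>
     At = Q * Q\<^sup>T * A * Q * Q\<^sup>T)"

text \<open>Random-sampling approximation, for sampling probabilities p (0 < p_ij <= 1)
and any realisation sel of the independent edge selections (pairs with p_ij = 1 are always selected).\<close>
definition rs_approx :: "nat \<Rightarrow> nat \<Rightarrow> (nat \<Rightarrow> nat \<Rightarrow> real) \<Rightarrow> real mat \<Rightarrow> real mat \<Rightarrow> bool" where
  "rs_approx n K' p A At \<longleftrightarrow> (\<exists>sel :: nat \<Rightarrow> nat \<Rightarrow> bool.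
     (\<forall>i<n. \<forall>j<n. sel i j = sel j i) \<and>
     (\<forall>i<n. \<forall>j<n. i \<noteq> j \<longrightarrow> p i j = 1 \<longrightarrow> sel i j) \<and>
     (let As = mat n n (\<lambda>(i,j). if i \<noteq> j \<and> sel i j then A $$ (i,j) / p i j else 0) in
       At \<in> carrier_mat n n \<and> symmetric_mat At \<and> mrank At \<le> K' \<and>
       (\<forall>M \<in> carrier_mat n n. mrank M \<le> K' \<longrightarrow> spec_norm (As - At) \<le> spec_norm (As - M))))"

definition top_eigvecs :: "nat \<Rightarrow> nat \<Rightarrow> real mat \<Rightarrow> real mat \<Rightarrow> bool" where
  "top_eigvecs n K' At Uh \<longleftrightarrow> (\<exists>V lam.
     V \<in> carrier_mat n n \<and> V\<^sup>T * V = 1\<^sub>m n \<and>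
     At = V * diagv (vec n lam) * V\<^sup>T \<and>
     (\<forall>i j. i \<le> j \<longrightarrow> j < n \<longrightarrow> \<bar>lam j\<bar> \<le> \<bar>lam i\<bar>) \<and>
     Uh = mat n K' (\<lambda>(i,j). V $$ (i,j)))"

definition row_normalize :: "real mat \<Rightarrow> real mat" where
  "row_normalize M = mat (dim_row M) (dim_col M)
     (\<lambda>(i,j). if vnorm (row M i) = 0 then M $$ (i,j) else M $$ (i,j) / vnorm (row M i))"

text \<open>Exact k-means on the rows of Y: (T, X) minimises ||T X - Y||_F^2.\<close>
definition kmeans_sol :: "nat \<Rightarrow> nat \<Rightarrow> nat \<Rightarrow> real mat \<Rightarrow> real mat \<Rightarrow> real mat \<Rightarrow> bool" where
  "kmeans_sol n K K' Y T X \<longleftrightarrow> memb_mat n K T \<and> X \<in> carrier_mat K K' \<and>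
     (\<forall>T' X'. memb_mat n K T' \<longrightarrow> X' \<in> carrier_mat K K' \<longrightarrow>
        frob_sq (T * X - Y) \<le> frob_sq (T' * X' - Y))"

definition rssc_output :: "nat \<Rightarrow> nat \<Rightarrow> nat \<Rightarrow> real mat \<Rightarrow> real mat \<Rightarrow> bool" where
  "rssc_output n K K' At Tt \<longleftrightarrow> (\<exists>Uh X. top_eigvecs n K' At Uh \<and>
     kmeans_sol n K K' (row_normalize Uh) Tt X)"

text \<open>gamma_n: smallest (in absolute value) nonzero eigenvalue of P, read off a thin eigen-decomposition.\<close>
definition gamma_n :: "nat \<Rightarrow> real mat \<Rightarrow> real" where
  "gamma_n K' Sig = Min ((\<lambda>i. \<bar>Sig $$ (i,i)\<bar>) ` {..<K'})"

definition min_tt_sq :: "nat \<Rightarrow> nat \<Rightarrow> real mat \<Rightarrow> real vec \<Rightarrow> real" where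
  "min_tt_sq n K T th = Min ((\<lambda>i. (theta_tilde K T th $ i)\<^sup>2) ` {..<n})"

definition min_nk :: "nat \<Rightarrow> real mat \<Rightarrow> real" where
  "min_nk K T = real (Min ((\<lambda>k. card (Gset T k)) ` {..<K}))"

definition Bbar :: "nat \<Rightarrow> real mat \<Rightarrow> real mat \<Rightarrow> real vec \<Rightarrow> real mat" where
  "Bbar K T B th = Omega_mat K T th * B * Omega_mat K T th"

definition recovery :: "nat \<Rightarrow> real mat \<Rightarrow> real mat \<Rightarrow> real \<Rightarrow> bool" where
  "recovery K T Tt bound \<longleftrightarrow> (\<exists>S :: nat \<Rightarrow> nat set. (\<forall>k<K. S k \<subseteq> Gset T k) \<and>
     L1_loss K Tt T \<le> (\<Sum>k<K. real (card (S k)) / real (card (Gset T k))) \<and>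
     (\<Sum>k<K. real (card (S k)) / real (card (Gset T k))) \<le> bound \<and>
     (\<exists>J \<in> perm_mats K. \<forall>i \<in> (\<Union>k<K. Gset T k - S k). row (Tt * J) i = row T i))"

definition randomized_approx :: "nat \<Rightarrow> nat \<Rightarrow> real mat \<Rightarrow> real mat \<Rightarrow> bool" where
  "randomized_approx n K' A At \<longleftrightarrow> (\<exists>r q. rp_approx n K' r q A At) \<or>
      (\<exists>p. (\<forall>i<n. \<forall>j<n. 0 < p i j \<and> p i j \<le> 1) \<and> rs_approx n K' p A At)"

end

theory Submission
  imports Defs "HOL-Analysis.L2_Norm"
begin

lemma sum_delta_right: "finite A \<Longrightarrow> (\<Sum>j\<in>A. f j * (if i = j then 1 else 0)) = (if i \<in> A then f i else (0::real))"
  by (simp add: if_distrib sum.delta cong: if_cong)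

lemma cs_sum: "(\<Sum>i\<in>A. f i * g i)\<^sup>2 \<le> (\<Sum>i\<in>A. (f i)\<^sup>2) * (\<Sum>i\<in>A. (g i)\<^sup>2)" for f g :: "'a \<Rightarrow> real"
proof -
  have "\<bar>\<Sum>i\<in>A. f i * g i\<bar> \<le> (\<Sum>i\<in>A. \<bar>f i\<bar> * \<bar>g i\<bar>)"
    using sum_abs[of "\<lambda>i. f i * g i" A] by (simp add: abs_mult)
  also have "\<dots> \<le> L2_set f A * L2_set g A" by (rule L2_set_mult_ineq)
  finally have "\<bar>\<Sum>i\<in>A. f i * g i\<bar> \<le> \<bar>L2_set f A * L2_set g A\<bar>" by simp
  then have "(\<Sum>i\<in>A. f i * g i)\<^sup>2 \<le> (L2_set f A * L2_set g A)\<^sup>2"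
    by (simp only: abs_le_square_iff)
  also have "\<dots> = (\<Sum>i\<in>A. (f i)\<^sup>2) * (\<Sum>i\<in>A. (g i)\<^sup>2)"
    unfolding L2_set_def power_mult_distrib by (simp add: sum_nonneg)
  finally show ?thesis .
qed

lemma parseval_gen:
  fixes V :: "nat \<Rightarrow> nat \<Rightarrow> real"
  assumes orth: "\<And>i i'. i < n \<Longrightarrow> i' < n \<Longrightarrow> (\<Sum>j<m. V i j * V i' j) = (if i = i' then 1 else 0)"
  shows "(\<Sum>j<m. (\<Sum>i<n. V i j * y i)\<^sup>2) = (\<Sum>i<n. (y i)\<^sup>2)"
proof -
  have "(\<Sum>j<m. (\<Sum>i<n. V i j * y i)\<^sup>2) = (\<Sum>j<m. \<Sum>i<n. \<Sum>i'<n. y i * y i' * (V i j * V i' j))"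
    by (simp add: power2_eq_square sum_product mult_ac)
  also have "\<dots> = (\<Sum>i<n. \<Sum>i'<n. y i * y i' * (\<Sum>j<m. V i j * V i' j))"
    by (simp add: sum_distrib_left sum.swap[of _ "{..<m}"])
  also have "\<dots> = (\<Sum>i<n. \<Sum>i'<n. y i * y i' * (if i = i' then 1 else 0))"
    by (intro sum.cong refl) (simp add: orth)
  also have "\<dots> = (\<Sum>i<n. (y i)\<^sup>2)"
    by (simp add: power2_eq_square if_distrib sum.delta cong: if_cong)
  finally show ?thesis .
qed

lemma delta_mult: "(if a = b then 1 else 0) * (x::real) = (if a = b then x else 0)" by simp

locale spec =
  fixes n K' :: nat and V :: "nat \<Rightarrow> nat \<Rightarrow> real" and lam :: "nat \<Rightarrow> real"
    and U :: "nat \<Rightarrow> nat \<Rightarrow> real" and s :: "nat \<Rightarrow> real" and At P :: "nat \<Rightarrow> nat \<Rightarrow> real"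
    and e gam :: real
  assumes Kn: "K' \<le> n"
  and Vcol: "\<And>j j'. j<n \<Longrightarrow> j'<n \<Longrightarrow> (\<Sum>i<n. V i j * V i j') = (if j=j' then 1 else 0)"
  and Vrow: "\<And>i i'. i<n \<Longrightarrow> i'<n \<Longrightarrow> (\<Sum>j<n. V i j * V i' j) = (if i=i' then 1 else 0)"
  and lam_sorted: "\<And>i j. i \<le> j \<Longrightarrow> j < n \<Longrightarrow> \<bar>lam j\<bar> \<le> \<bar>lam i\<bar>"
  and At_eq: "\<And>i i'. i<n \<Longrightarrow> i'<n \<Longrightarrow> At i i' = (\<Sum>j<n. V i j * lam j * V i' j)"
  and Ucol: "\<And>k l. k<K' \<Longrightarrow> l<K' \<Longrightarrow> (\<Sum>i<n. U i k * U i l) = (if k=l then 1 else 0)"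
  and s_gap: "\<And>k. k<K' \<Longrightarrow> gam \<le> \<bar>s k\<bar>"
  and gam_pos: "0 < gam"
  and P_eq: "\<And>i i'. i<n \<Longrightarrow> i'<n \<Longrightarrow> P i i' = (\<Sum>k<K'. U i k * s k * U i' k)"
  and E_bound: "\<And>x. (\<Sum>i<n. (\<Sum>i'<n. (At i i' - P i i') * x i')\<^sup>2) \<le> e\<^sup>2 * (\<Sum>i<n. (x i)\<^sup>2)"
  and e_nn: "0 \<le> e"
begin

definition X where "X j k = (\<Sum>i<n. V i j * U i k)"
definition eps2 where "eps2 = (\<Sum>k<K'. \<Sum>j\<in>{K'..<n}. (X j k)\<^sup>2)"

lemma parseval: "(\<Sum>j<n. (\<Sum>i<n. V i j * y i)\<^sup>2) = (\<Sum>i<n. (y i)\<^sup>2)"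
  using parseval_gen[where n=n and m=n and V=V and y=y] Vrow by simp

lemma Xcol_sum: "k<K' \<Longrightarrow> (\<Sum>j<n. (X j k)\<^sup>2) = 1"
  unfolding X_def using parseval[of "\<lambda>i. U i k"] Ucol[of k k] by (simp add: power2_eq_square)

lemma Vcol_sq: "j<n \<Longrightarrow> (\<Sum>i<n. (V i j)\<^sup>2) = 1"
  using Vcol[of j j] by (simp add: power2_eq_square)

lemma At_left: assumes "j<n" "i'<n" shows "(\<Sum>i<n. V i j * At i i') = lam j * V i' j"
proof -
  have "(\<Sum>i<n. V i j * At i i') = (\<Sum>i<n. \<Sum>l<n. V i j * V i l * (lam l * V i' l))"
  proof (rule sum.cong[OF refl])
    fix i assume "i \<in> {..<n}"
    then have "At i i' = (\<Sum>l<n. V i l * lam l * V i' l)" using assms by (simp add: At_eq)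
    then show "V i j * At i i' = (\<Sum>l<n. V i j * V i l * (lam l * V i' l))"
      by (simp add: sum_distrib_left mult.assoc)
  qed
  also have "\<dots> = (\<Sum>l<n. (\<Sum>i<n. V i j * V i l) * (lam l * V i' l))"
    unfolding sum_distrib_right by (rule sum.swap)
  also have "\<dots> = (\<Sum>l<n. (if j = l then 1 else 0) * (lam l * V i' l))"
    using assms by (intro sum.cong refl) (simp add: Vcol)
  also have "\<dots> = lam j * V i' j" using assms by (simp add: delta_mult sum.delta)
  finally show ?thesis .
qed

lemma At_right: assumes "j<n" "i<n" shows "(\<Sum>i'<n. At i i' * V i' j) = lam j * V i j"
proof -
  have "(\<Sum>i'<n. At i i' * V i' j) = (\<Sum>i'<n. \<Sum>l<n. V i' l * V i' j * (lam l * V i l))"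
  proof (rule sum.cong[OF refl])
    fix i' assume "i' \<in> {..<n}"
    then have "At i i' = (\<Sum>l<n. V i l * lam l * V i' l)" using assms by (simp add: At_eq)
    then show "At i i' * V i' j = (\<Sum>l<n. V i' l * V i' j * (lam l * V i l))"
      by (simp add: sum_distrib_left sum_distrib_right mult_ac)
  qed
  also have "\<dots> = (\<Sum>l<n. (\<Sum>i'<n. V i' l * V i' j) * (lam l * V i l))"
    unfolding sum_distrib_right by (rule sum.swap)
  also have "\<dots> = (\<Sum>l<n. (if l = j then 1 else 0) * (lam l * V i l))"
    using assms by (intro sum.cong refl) (simp add: Vcol)
  also have "\<dots> = lam j * V i j" using assms by (simp add: delta_mult sum.delta)
  finally show ?thesis .
qed

lemma P_right: assumes "k<K'" "i<n" shows "(\<Sum>i'<n. P i i' * U i' k) = s k * U i k"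
proof -
  have "(\<Sum>i'<n. P i i' * U i' k) = (\<Sum>i'<n. \<Sum>l<K'. U i' l * U i' k * (U i l * s l))"
  proof (rule sum.cong[OF refl])
    fix i' assume "i' \<in> {..<n}"
    then have "P i i' = (\<Sum>l<K'. U i l * s l * U i' l)" using assms by (simp add: P_eq)
    then show "P i i' * U i' k = (\<Sum>l<K'. U i' l * U i' k * (U i l * s l))"
      by (simp add: sum_distrib_left sum_distrib_right mult_ac)
  qed
  also have "\<dots> = (\<Sum>l<K'. (\<Sum>i'<n. U i' l * U i' k) * (U i l * s l))"
    unfolding sum_distrib_right by (rule sum.swap)
  also have "\<dots> = (\<Sum>l<K'. (if l = k then 1 else 0) * (U i l * s l))"
    using assms by (intro sum.cong refl) (simp add: Ucol)
  also have "\<dots> = U i k * s k" using assms by (simp add: delta_mult sum.delta)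
  finally show ?thesis by (simp add: mult.commute)
qed

lemma sylvester: assumes "j<n" "k<K'"
  shows "(\<Sum>i<n. V i j * (\<Sum>i'<n. (At i i' - P i i') * U i' k)) = (lam j - s k) * X j k"
proof -
  have "(\<Sum>i<n. V i j * (\<Sum>i'<n. (At i i' - P i i') * U i' k))
     = (\<Sum>i<n. \<Sum>i'<n. V i j * At i i' * U i' k) - (\<Sum>i<n. V i j * (\<Sum>i'<n. P i i' * U i' k))"
    by (simp add: sum_distrib_left algebra_simps sum_subtractf)
  also have "(\<Sum>i<n. \<Sum>i'<n. V i j * At i i' * U i' k) = (\<Sum>i'<n. (\<Sum>i<n. V i j * At i i') * U i' k)"
    unfolding sum_distrib_right by (rule sum.swap)
  also have "\<dots> = (\<Sum>i'<n. lam j * V i' j * U i' k)"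
    using assms by (intro sum.cong refl) (simp add: At_left)
  also have "(\<Sum>i<n. V i j * (\<Sum>i'<n. P i i' * U i' k)) = (\<Sum>i<n. V i j * (s k * U i k))"
    using assms by (intro sum.cong refl) (simp add: P_right)
  finally show ?thesis
    by (simp add: X_def sum_distrib_left algebra_simps sum_subtractf)
qed

end

context spec begin

lemma sumX_le: assumes "m \<le> n" shows "(\<Sum>j<m. \<Sum>k<K'. (X j k)\<^sup>2) \<le> real K'"
proof -
  have "(\<Sum>j<m. \<Sum>k<K'. (X j k)\<^sup>2) = (\<Sum>k<K'. \<Sum>j<m. (X j k)\<^sup>2)" by (rule sum.swap)
  also have "\<dots> \<le> (\<Sum>k<K'. \<Sum>j<n. (X j k)\<^sup>2)"
    using assms by (intro sum_mono sum_mono2) auto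
  also have "\<dots> = (\<Sum>k<K'. 1)" by (intro sum.cong refl) (simp add: Xcol_sum)
  finally show ?thesis by simp
qed

lemma weyl: assumes "K' \<le> j" "j < n" shows "(lam j)\<^sup>2 \<le> real (K'+1) * e\<^sup>2"
proof -
  have Kl: "K' + 1 \<le> n" using assms by simp
  have sX: "(\<Sum>j<K'+1. \<Sum>k<K'. (X j k)\<^sup>2) \<le> real K'" using sumX_le[OF Kl] .
  obtain j0 where j0: "j0 < K'+1" "(\<Sum>k<K'. (X j0 k)\<^sup>2) \<le> real K' / real (K'+1)"
  proof (rule ccontr)
    assume "\<not> thesis"
    with that have h: "\<And>j0. j0 < K'+1 \<Longrightarrow> real K' / real (K'+1) < (\<Sum>k<K'. (X j0 k)\<^sup>2)"
      by force
    have "(\<Sum>j<K'+1. real K' / real (K'+1)) < (\<Sum>j<K'+1. \<Sum>k<K'. (X j k)\<^sup>2)"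
    proof (rule sum_strict_mono)
      fix x assume "x \<in> {..<K'+1}"
      then show "real K' / real (K'+1) < (\<Sum>k<K'. (X x k)\<^sup>2)" using h by blast
    qed auto
    moreover have "(\<Sum>j<K'+1. real K' / real (K'+1)) = real K'" by simp
    ultimately show False using sX by linarith
  qed
  have j0n: "j0 < n" using j0 Kl by simp
  define w where "w i = V i j0 - (\<Sum>k<K'. U i k * X j0 k)" for i
  have w1: "(\<Sum>i<n. U i k * w i) = 0" if k: "k<K'" for k
  proof -
    have "(\<Sum>i<n. U i k * w i) = (\<Sum>i<n. V i j0 * U i k) - (\<Sum>i<n. \<Sum>k'<K'. U i k * U i k' * X j0 k')"
      by (simp add: w_def algebra_simps sum_subtractf sum_distrib_left)
    also have "(\<Sum>i<n. \<Sum>k'<K'. U i k * U i k' * X j0 k') = (\<Sum>k'<K'. (\<Sum>i<n. U i k * U i k') * X j0 k')"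
      unfolding sum_distrib_right by (rule sum.swap)
    also have "\<dots> = (\<Sum>k'<K'. (if k = k' then 1 else 0) * X j0 k')"
      using k by (intro sum.cong refl) (simp add: Ucol)
    also have "\<dots> = X j0 k" using k by (simp add: delta_mult)
    finally show ?thesis by (simp add: X_def)
  qed
  have w2: "(\<Sum>i<n. w i * V i j0) = 1 - (\<Sum>k<K'. (X j0 k)\<^sup>2)"
  proof -
    have "(\<Sum>i<n. w i * V i j0) = (\<Sum>i<n. (V i j0)\<^sup>2) - (\<Sum>i<n. \<Sum>k<K'. V i j0 * U i k * X j0 k)"
      by (simp add: w_def algebra_simps sum_subtractf sum_distrib_left sum_distrib_right power2_eq_square)
    also have "(\<Sum>i<n. \<Sum>k<K'. V i j0 * U i k * X j0 k) = (\<Sum>k<K'. (\<Sum>i<n. V i j0 * U i k) * X j0 k)"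
      unfolding sum_distrib_right by (rule sum.swap)
    also have "\<dots> = (\<Sum>k<K'. (X j0 k)\<^sup>2)" by (simp add: X_def power2_eq_square)
    finally show ?thesis using Vcol_sq[OF j0n] by simp
  qed
  have w3: "(\<Sum>i<n. (w i)\<^sup>2) = (\<Sum>i<n. w i * V i j0)"
  proof -
    have "(\<Sum>i<n. (w i)\<^sup>2) = (\<Sum>i<n. w i * V i j0) - (\<Sum>i<n. \<Sum>k<K'. X j0 k * (U i k * w i))"
      by (simp add: power2_eq_square w_def[of i for i] algebra_simps sum_subtractf sum_distrib_left)
    also have "(\<Sum>i<n. \<Sum>k<K'. X j0 k * (U i k * w i)) = (\<Sum>k<K'. X j0 k * (\<Sum>i<n. U i k * w i))"
      unfolding sum_distrib_left by (rule sum.swap)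
    also have "\<dots> = 0" by (simp add: w1)
    finally show ?thesis by simp
  qed
  define Ev where "Ev i = (\<Sum>i'<n. (At i i' - P i i') * V i' j0)" for i
  have w4: "(\<Sum>i<n. w i * Ev i) = lam j0 * (\<Sum>i<n. w i * V i j0)"
  proof -
    have "(\<Sum>i<n. w i * Ev i) = (\<Sum>i<n. w i * (\<Sum>i'<n. At i i' * V i' j0)) - (\<Sum>i<n. w i * (\<Sum>i'<n. P i i' * V i' j0))"
      by (simp add: Ev_def algebra_simps sum_subtractf sum_distrib_left)
    also have "(\<Sum>i<n. w i * (\<Sum>i'<n. At i i' * V i' j0)) = (\<Sum>i<n. w i * (lam j0 * V i j0))"
      using j0n by (intro sum.cong refl) (simp add: At_right)
    also have "(\<Sum>i<n. w i * (\<Sum>i'<n. P i i' * V i' j0)) = 0"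
    proof -
      have "(\<Sum>i<n. w i * (\<Sum>i'<n. P i i' * V i' j0)) = (\<Sum>i'<n. (\<Sum>i<n. w i * P i i') * V i' j0)"
        unfolding sum_distrib_left sum_distrib_right by (rule sum.swap[where A="{..<n}" and B="{..<n}", THEN trans]) (simp add: mult.assoc)
      also have "\<dots> = 0"
      proof (intro sum.neutral ballI)
        fix i' assume i': "i' \<in> {..<n}"
        have "(\<Sum>i<n. w i * P i i') = (\<Sum>i<n. \<Sum>k<K'. (U i k * w i) * (s k * U i' k))"
          using i' by (intro sum.cong refl) (simp add: P_eq sum_distrib_left mult_ac)
        also have "\<dots> = (\<Sum>k<K'. (\<Sum>i<n. U i k * w i) * (s k * U i' k))"
          unfolding sum_distrib_right by (rule sum.swap)
        also have "\<dots> = 0" by (simp add: w1)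
        finally show "(\<Sum>i<n. w i * P i i') * V i' j0 = 0" by simp
      qed
      finally show ?thesis .
    qed
    finally show ?thesis by (simp add: sum_distrib_left mult_ac)
  qed
  define W where "W = (\<Sum>i<n. (w i)\<^sup>2)"
  have WX: "W = 1 - (\<Sum>k<K'. (X j0 k)\<^sup>2)" using w2 w3 W_def by simp
  have Wlow: "1 / real (K'+1) \<le> W"
  proof -
    have "1 - real K' / real (K'+1) = 1 / real (K'+1)" by (simp add: field_simps)
    then show ?thesis using WX j0(2) by linarith
  qed
  have Wpos: "0 < W" using Wlow by (smt (verit) divide_pos_pos of_nat_0_less_iff zero_less_Suc Suc_eq_plus1)
  have "(lam j0 * W)\<^sup>2 \<le> W * (\<Sum>i<n. (Ev i)\<^sup>2)"
    using cs_sum[of w Ev "{..<n}"] w4 w3 W_def by simp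
  also have "(\<Sum>i<n. (Ev i)\<^sup>2) \<le> e\<^sup>2 * (\<Sum>i<n. (V i j0)\<^sup>2)"
    unfolding Ev_def by (rule E_bound)
  also have "(\<Sum>i<n. (V i j0)\<^sup>2) = 1" using Vcol_sq[OF j0n] .
  finally have "(lam j0)\<^sup>2 * W * W \<le> e\<^sup>2 * W" using Wpos by (simp add: power2_eq_square mult_ac)
  then have l1: "(lam j0)\<^sup>2 * W \<le> e\<^sup>2" using Wpos by simp
  have "(lam j0)\<^sup>2 * (1 / real (K'+1)) \<le> (lam j0)\<^sup>2 * W"
    using Wlow by (intro mult_left_mono) auto
  with l1 have "(lam j0)\<^sup>2 / real (K'+1) \<le> e\<^sup>2" by simp
  then have "(lam j0)\<^sup>2 \<le> e\<^sup>2 * real (K'+1)" by (simp add: pos_divide_le_eq)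
  then have "(lam j0)\<^sup>2 \<le> real (K'+1) * e\<^sup>2" by (simp add: mult.commute)
  moreover have "\<bar>lam j\<bar> \<le> \<bar>lam j0\<bar>" using lam_sorted[of j0 j] j0 assms by simp
  then have "(lam j)\<^sup>2 \<le> (lam j0)\<^sup>2" by (simp add: abs_le_square_iff)
  ultimately show ?thesis by linarith
qed

lemma gap: assumes "K' \<le> j" "j < n" "k < K'" and small: "real (K'+1) * e\<^sup>2 \<le> gam\<^sup>2/4" shows "gam/2 \<le> \<bar>s k - lam j\<bar>"
proof -
  have "(lam j)\<^sup>2 \<le> (gam/2)\<^sup>2" using weyl[OF assms(1,2)] small by (simp add: power_divide)
  then have "\<bar>lam j\<bar> \<le> \<bar>gam/2\<bar>" by (simp only: abs_le_square_iff)
  then have "\<bar>lam j\<bar> \<le> gam/2" using gam_pos by simp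
  then show ?thesis using s_gap[OF assms(3)] by linarith
qed

lemma eps2_bound: assumes small: "real (K'+1) * e\<^sup>2 \<le> gam\<^sup>2/4" shows "eps2 \<le> 4 * real K' * e\<^sup>2 / gam\<^sup>2"
proof -
  have col: "(\<Sum>j\<in>{K'..<n}. (X j k)\<^sup>2) \<le> 4 * e\<^sup>2 / gam\<^sup>2" if k: "k < K'" for k
  proof -
    define Eu where "Eu i = (\<Sum>i'<n. (At i i' - P i i') * U i' k)" for i
    define Sy where "Sy j = (\<Sum>i<n. V i j * Eu i)" for j
    have pt: "(X j k)\<^sup>2 \<le> 4 / gam\<^sup>2 * (Sy j)\<^sup>2" if j: "j \<in> {K'..<n}" for j
    proof -
      have "Sy j = (lam j - s k) * X j k" unfolding Sy_def Eu_def using sylvester[of j k] j k by simp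
      then have "(Sy j)\<^sup>2 = (s k - lam j)\<^sup>2 * (X j k)\<^sup>2" by (simp add: power_mult_distrib power2_commute)
      moreover have "(gam/2)\<^sup>2 \<le> (s k - lam j)\<^sup>2"
        using gap[of j k, OF _ _ _ small] j k gam_pos by (simp add: abs_le_square_iff[symmetric])
      ultimately have "(gam/2)\<^sup>2 * (X j k)\<^sup>2 \<le> (Sy j)\<^sup>2" by (simp add: mult_right_mono)
      then show ?thesis using gam_pos by (simp add: field_simps power_divide)
    qed
    have "(\<Sum>j\<in>{K'..<n}. (X j k)\<^sup>2) \<le> (\<Sum>j\<in>{K'..<n}. 4 / gam\<^sup>2 * (Sy j)\<^sup>2)"
      by (rule sum_mono) (rule pt)
    also have "\<dots> \<le> (\<Sum>j<n. 4 / gam\<^sup>2 * (Sy j)\<^sup>2)"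
      by (rule sum_mono2) auto
    also have "\<dots> = 4 / gam\<^sup>2 * (\<Sum>j<n. (Sy j)\<^sup>2)" by (simp add: sum_distrib_left)
    also have "(\<Sum>j<n. (Sy j)\<^sup>2) = (\<Sum>i<n. (Eu i)\<^sup>2)" unfolding Sy_def by (rule parseval)
    finally have a: "(\<Sum>j\<in>{K'..<n}. (X j k)\<^sup>2) \<le> 4 / gam\<^sup>2 * (\<Sum>i<n. (Eu i)\<^sup>2)" .
    have "(\<Sum>i<n. (Eu i)\<^sup>2) \<le> e\<^sup>2 * (\<Sum>i<n. (U i k)\<^sup>2)"
      unfolding Eu_def by (rule E_bound)
    also have "(\<Sum>i<n. (U i k)\<^sup>2) = 1" using Ucol[OF k k] by (simp add: power2_eq_square)
    finally have "4 / gam\<^sup>2 * (\<Sum>i<n. (Eu i)\<^sup>2) \<le> 4 / gam\<^sup>2 * e\<^sup>2"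
      by (intro mult_left_mono) auto
    with a show ?thesis by simp
  qed
  have "eps2 \<le> (\<Sum>k<K'. 4 * e\<^sup>2 / gam\<^sup>2)" unfolding eps2_def by (rule sum_mono) (simp add: col)
  then show ?thesis by (simp add: mult_ac)
qed

end

lemma split_sum: "m \<le> (n::nat) \<Longrightarrow> (\<Sum>j<n. f j) = (\<Sum>j<m. f j) + (\<Sum>j\<in>{m..<n}. (f j::real))"
  using sum.atLeastLessThan_concat[of 0 m n f] by (simp add: lessThan_atLeast0)

context spec begin

lemma VU_X: "(\<Sum>i<n. V i j * (\<Sum>k<K'. U i k * y k)) = (\<Sum>k<K'. X j k * y k)"
proof -
  have "(\<Sum>i<n. V i j * (\<Sum>k<K'. U i k * y k)) = (\<Sum>i<n. \<Sum>k<K'. V i j * U i k * y k)"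
    by (simp add: sum_distrib_left mult.assoc)
  also have "\<dots> = (\<Sum>k<K'. (\<Sum>i<n. V i j * U i k) * y k)"
    unfolding sum_distrib_right by (rule sum.swap)
  finally show ?thesis by (simp add: X_def)
qed

lemma F1: "(\<Sum>j\<in>{K'..<n}. (\<Sum>k<K'. X j k * y k)\<^sup>2) \<le> eps2 * (\<Sum>k<K'. (y k)\<^sup>2)"
proof -
  have "(\<Sum>j\<in>{K'..<n}. (\<Sum>k<K'. X j k * y k)\<^sup>2) \<le> (\<Sum>j\<in>{K'..<n}. (\<Sum>k<K'. (X j k)\<^sup>2) * (\<Sum>k<K'. (y k)\<^sup>2))"
    by (rule sum_mono) (rule cs_sum)
  also have "\<dots> = (\<Sum>j\<in>{K'..<n}. \<Sum>k<K'. (X j k)\<^sup>2) * (\<Sum>k<K'. (y k)\<^sup>2)"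
    by (simp add: sum_distrib_right)
  also have "(\<Sum>j\<in>{K'..<n}. \<Sum>k<K'. (X j k)\<^sup>2) = eps2"
    unfolding eps2_def by (rule sum.swap)
  finally show ?thesis .
qed

lemma F2: "(\<Sum>i<n. (\<Sum>k<K'. U i k * y k)\<^sup>2) = (\<Sum>k<K'. (y k)\<^sup>2)"
  using parseval_gen[where n=K' and m=n and V="\<lambda>i j. U j i" and y=y] Ucol by simp

lemma F3: "(\<Sum>j<K'. (\<Sum>k<K'. X j k * y k)\<^sup>2) + (\<Sum>j\<in>{K'..<n}. (\<Sum>k<K'. X j k * y k)\<^sup>2)
   = (\<Sum>k<K'. (y k)\<^sup>2)"
proof -
  have "(\<Sum>j<n. (\<Sum>k<K'. X j k * y k)\<^sup>2) = (\<Sum>j<n. (\<Sum>i<n. V i j * (\<Sum>k<K'. U i k * y k))\<^sup>2)"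
    by (simp add: VU_X)
  also have "\<dots> = (\<Sum>i<n. (\<Sum>k<K'. U i k * y k)\<^sup>2)" by (rule parseval)
  also have "\<dots> = (\<Sum>k<K'. (y k)\<^sup>2)" by (rule F2)
  finally show ?thesis using split_sum[OF Kn, of "\<lambda>j. (\<Sum>k<K'. X j k * y k)\<^sup>2"] by simp
qed

lemma resid: assumes j0n: "j0<n"
  shows "(\<Sum>i<n. (V i j0 - (\<Sum>k<K'. U i k * X j0 k))\<^sup>2) = 1 - (\<Sum>k<K'. (X j0 k)\<^sup>2)"
proof -
  define w where "w i = V i j0 - (\<Sum>k<K'. U i k * X j0 k)" for i
  have w1: "(\<Sum>i<n. U i k * w i) = 0" if k: "k<K'" for k
  proof -
    have "(\<Sum>i<n. U i k * w i) = (\<Sum>i<n. V i j0 * U i k) - (\<Sum>i<n. \<Sum>k'<K'. U i k * U i k' * X j0 k')"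
      by (simp add: w_def algebra_simps sum_subtractf sum_distrib_left)
    also have "(\<Sum>i<n. \<Sum>k'<K'. U i k * U i k' * X j0 k') = (\<Sum>k'<K'. (\<Sum>i<n. U i k * U i k') * X j0 k')"
      unfolding sum_distrib_right by (rule sum.swap)
    also have "\<dots> = (\<Sum>k'<K'. (if k = k' then 1 else 0) * X j0 k')"
      using k by (intro sum.cong refl) (simp add: Ucol)
    also have "\<dots> = X j0 k" using k by (simp add: delta_mult)
    finally show ?thesis by (simp add: X_def)
  qed
  have w2: "(\<Sum>i<n. w i * V i j0) = 1 - (\<Sum>k<K'. (X j0 k)\<^sup>2)"
  proof -
    have "(\<Sum>i<n. w i * V i j0) = (\<Sum>i<n. (V i j0)\<^sup>2) - (\<Sum>i<n. \<Sum>k<K'. V i j0 * U i k * X j0 k)"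
      by (simp add: w_def algebra_simps sum_subtractf sum_distrib_left sum_distrib_right power2_eq_square)
    also have "(\<Sum>i<n. \<Sum>k<K'. V i j0 * U i k * X j0 k) = (\<Sum>k<K'. (\<Sum>i<n. V i j0 * U i k) * X j0 k)"
      unfolding sum_distrib_right by (rule sum.swap)
    also have "\<dots> = (\<Sum>k<K'. (X j0 k)\<^sup>2)" by (simp add: X_def power2_eq_square)
    finally show ?thesis using Vcol_sq[OF j0n] by simp
  qed
  have w3: "(\<Sum>i<n. (w i)\<^sup>2) = (\<Sum>i<n. w i * V i j0)"
  proof -
    have "(\<Sum>i<n. (w i)\<^sup>2) = (\<Sum>i<n. w i * V i j0) - (\<Sum>i<n. \<Sum>k<K'. X j0 k * (U i k * w i))"
      by (simp add: power2_eq_square w_def[of i for i] algebra_simps sum_subtractf sum_distrib_left)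
    also have "(\<Sum>i<n. \<Sum>k<K'. X j0 k * (U i k * w i)) = (\<Sum>k<K'. X j0 k * (\<Sum>i<n. U i k * w i))"
      unfolding sum_distrib_left by (rule sum.swap)
    also have "\<dots> = 0" by (simp add: w1)
    finally show ?thesis by simp
  qed
  show ?thesis using w2 w3 unfolding w_def by simp
qed

lemma F4: "(\<Sum>i<n. \<Sum>j<K'. (V i j - (\<Sum>k<K'. X j k * U i k))\<^sup>2) = eps2"
proof -
  have "(\<Sum>i<n. \<Sum>j<K'. (V i j - (\<Sum>k<K'. X j k * U i k))\<^sup>2)
      = (\<Sum>j<K'. \<Sum>i<n. (V i j - (\<Sum>k<K'. U i k * X j k))\<^sup>2)"
    by (subst sum.swap) (simp add: mult.commute)
  also have "\<dots> = (\<Sum>j<K'. 1 - (\<Sum>k<K'. (X j k)\<^sup>2))"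
    using Kn by (intro sum.cong refl) (simp add: resid)
  also have "\<dots> = real K' - (\<Sum>k<K'. \<Sum>j<K'. (X j k)\<^sup>2)"
    using sum.swap[of "\<lambda>j k. (X j k)\<^sup>2" "{..<K'}" "{..<K'}"] by (simp add: sum_subtractf)
  also have "eps2 = (\<Sum>k<K'. 1 - (\<Sum>j<K'. (X j k)\<^sup>2))"
    unfolding eps2_def
  proof (intro sum.cong refl)
    fix k assume "k \<in> {..<K'}"
    then show "(\<Sum>j\<in>{K'..<n}. (X j k)\<^sup>2) = 1 - (\<Sum>j<K'. (X j k)\<^sup>2)"
      using Xcol_sum[of k] split_sum[OF Kn, of "\<lambda>j. (X j k)\<^sup>2"] by simp
  qed
  then have "eps2 = real K' - (\<Sum>k<K'. \<Sum>j<K'. (X j k)\<^sup>2)" by (simp add: sum_subtractf)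
  ultimately show ?thesis by simp
qed

end

lemma L2_sq: "(L2_set f A)\<^sup>2 = (\<Sum>i\<in>A. (f i)\<^sup>2)"
  unfolding L2_set_def by (simp add: sum_nonneg)

lemma L2_scale: "L2_set (\<lambda>j. r * f j) A = \<bar>r\<bar> * L2_set f A"
proof -
  have "L2_set (\<lambda>j. r * f j) A = L2_set (\<lambda>j. \<bar>r\<bar> * f j) A"
    unfolding L2_set_def by (simp add: power_mult_distrib)
  also have "\<dots> = \<bar>r\<bar> * L2_set f A" by (rule L2_set_right_distrib[symmetric]) simp
  finally show ?thesis .
qed

lemma L2_swap: "L2_set (\<lambda>j. f j - g j) A = L2_set (\<lambda>j. g j - f j) A"
  unfolding L2_set_def by (simp add: power2_commute)

lemma L2_diff_tri: "L2_set (\<lambda>j. f j - h j) A \<le> L2_set (\<lambda>j. f j - g j) A + L2_set (\<lambda>j. g j - h j) A"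
  using L2_set_triangle_ineq[of "\<lambda>j. f j - g j" "\<lambda>j. g j - h j" A] by simp

lemma L2_rev_tri: "\<bar>L2_set f A - L2_set g A\<bar> \<le> L2_set (\<lambda>j. f j - g j) A"
proof -
  have "L2_set f A \<le> L2_set (\<lambda>j. f j - g j) A + L2_set g A"
    using L2_set_triangle_ineq[of "\<lambda>j. f j - g j" g A] by simp
  moreover have "L2_set g A \<le> L2_set (\<lambda>j. g j - f j) A + L2_set f A"
    using L2_set_triangle_ineq[of "\<lambda>j. g j - f j" f A] by simp
  ultimately show ?thesis using L2_swap[of g f A] by linarith
qed

lemma norm_lemma:
  fixes a z :: "nat \<Rightarrow> real" and A :: "nat set"
  assumes fin: "finite A" and rho: "0 < \<rho>" and zle: "L2_set z A \<le> 1"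
  defines "na \<equiv> (\<lambda>j. if L2_set a A = 0 then a j else a j / L2_set a A)"
  shows "L2_set (\<lambda>j. na j - z j) A \<le> (2 * L2_set (\<lambda>j. a j - \<rho> * z j) A + \<rho> * (1 - L2_set z A)) / \<rho>"
proof (cases "L2_set a A = 0")
  case True
  then have a0: "\<forall>j\<in>A. a j = 0" using L2_set_eq_0_iff[OF fin] by blast
  have "L2_set (\<lambda>j. na j - z j) A = L2_set z A"
    unfolding L2_set_def na_def using True a0 by (intro arg_cong[where f=sqrt] sum.cong) auto
  moreover have "L2_set (\<lambda>j. a j - \<rho> * z j) A = \<rho> * L2_set z A"
  proof -
    have "L2_set (\<lambda>j. a j - \<rho> * z j) A = L2_set (\<lambda>j. (-\<rho>) * z j) A"
      using a0 by (intro L2_set_cong) auto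
    then show ?thesis using L2_scale[of "-\<rho>" z A] rho by simp
  qed
  moreover have "L2_set z A \<le> (2 * (\<rho> * L2_set z A) + \<rho> * (1 - L2_set z A)) / \<rho>"
    using rho zle by (simp add: field_simps)
  ultimately show ?thesis by simp
next
  case False
  define N where "N = L2_set a A"
  have Npos: "0 < N" using False N_def L2_set_nonneg[of a A] by linarith
  define D where "D = L2_set (\<lambda>j. a j - \<rho> * z j) A"
  have na_eq: "na j = a j / N" for j using False by (simp add: na_def N_def)
  have split: "na j - z j = (1/N - 1/\<rho>) * a j + (1/\<rho>) * (a j - \<rho> * z j)" for j
    using rho Npos by (simp add: na_eq field_simps)
  have "L2_set (\<lambda>j. na j - z j) A \<le> L2_set (\<lambda>j. (1/N - 1/\<rho>) * a j) A + L2_set (\<lambda>j. (1/\<rho>) * (a j - \<rho> * z j)) A"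
    unfolding split by (rule L2_set_triangle_ineq)
  also have "L2_set (\<lambda>j. (1/N - 1/\<rho>) * a j) A = \<bar>1/N - 1/\<rho>\<bar> * N"
    using L2_scale N_def by simp
  also have "\<bar>1/N - 1/\<rho>\<bar> * N = \<bar>\<rho> - N\<bar> / \<rho>"
  proof -
    have "1/N - 1/\<rho> = (\<rho> - N) / (N * \<rho>)" using Npos rho by (simp add: field_simps)
    then have "\<bar>1/N - 1/\<rho>\<bar> = \<bar>\<rho> - N\<bar> / (N * \<rho>)" using Npos rho by simp
    then show ?thesis using Npos by simp
  qed
  also have "L2_set (\<lambda>j. (1/\<rho>) * (a j - \<rho> * z j)) A = D / \<rho>"
    using L2_scale[of "1/\<rho>"] rho D_def by simp
  finally have l1: "L2_set (\<lambda>j. na j - z j) A \<le> \<bar>\<rho> - N\<bar> / \<rho> + D / \<rho>" .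
  have "\<bar>L2_set a A - L2_set (\<lambda>j. \<rho> * z j) A\<bar> \<le> D"
    unfolding D_def by (rule L2_rev_tri)
  then have "\<bar>N - \<rho> * L2_set z A\<bar> \<le> D" using L2_scale[of \<rho> z A] rho N_def by simp
  moreover have "\<rho> * L2_set z A \<le> \<rho>" using zle rho by (simp add: mult_left_le)
  moreover have "\<rho> * (1 - L2_set z A) = \<rho> - \<rho> * L2_set z A" by (simp add: algebra_simps)
  ultimately have "\<bar>\<rho> - N\<bar> \<le> D + \<rho> * (1 - L2_set z A)" by linarith
  then have "\<bar>\<rho> - N\<bar> / \<rho> \<le> (D + \<rho> * (1 - L2_set z A)) / \<rho>" using rho by (simp add: divide_right_mono)
  with l1 have "L2_set (\<lambda>j. na j - z j) A \<le> (D + \<rho> * (1 - L2_set z A)) / \<rho> + D / \<rho>" by linarith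
  also have "\<dots> = (2 * D + \<rho> * (1 - L2_set z A)) / \<rho>" using rho by (simp add: field_simps)
  finally show ?thesis unfolding D_def .
qed

lemma sq_bound: fixes d t \<rho> L :: real assumes "0 \<le> d" "0 \<le> t" "t \<le> 1" "0 < \<rho>" "0 \<le> L" "L \<le> (2 * d + \<rho> * (1 - t)) / \<rho>"
  shows "L\<^sup>2 \<le> (8 * d\<^sup>2 + 2 * \<rho>\<^sup>2 * (1 - t\<^sup>2)) / \<rho>\<^sup>2"
proof -
  have "L\<^sup>2 \<le> ((2 * d + \<rho> * (1 - t)) / \<rho>)\<^sup>2" using assms by (intro power_mono) auto
  also have "\<dots> = (2 * d + \<rho> * (1 - t))\<^sup>2 / \<rho>\<^sup>2" by (simp add: power_divide)
  also have "(2 * d + \<rho> * (1 - t))\<^sup>2 \<le> 8 * d\<^sup>2 + 2 * \<rho>\<^sup>2 * (1 - t\<^sup>2)"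
  proof -
    have "(2 * d + \<rho> * (1 - t))\<^sup>2 \<le> 2 * (2*d)\<^sup>2 + 2 * (\<rho> * (1 - t))\<^sup>2"
      by (smt (verit) sum_squares_bound power2_sum two_realpow_ge_one sum_power2_ge_zero zero_le_power2 power2_diff)
    moreover have "(\<rho> * (1 - t))\<^sup>2 \<le> \<rho>\<^sup>2 * (1 - t\<^sup>2)"
    proof -
      have "(1 - t)\<^sup>2 \<le> 1 - t\<^sup>2" using assms(2,3) by (simp add: power2_eq_square algebra_simps mult_left_le)
      then show ?thesis by (simp add: power_mult_distrib mult_left_mono)
    qed
    ultimately show ?thesis by (simp add: power_mult_distrib)
  qed
  then have "(2 * d + \<rho> * (1 - t))\<^sup>2 / \<rho>\<^sup>2 \<le> (8 * d\<^sup>2 + 2 * \<rho>\<^sup>2 * (1 - t\<^sup>2)) / \<rho>\<^sup>2"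
    by (simp add: divide_right_mono)
  finally show ?thesis .
qed

locale clus = spec +
  fixes K :: nat and g :: "nat \<Rightarrow> nat" and tt :: "nat \<Rightarrow> real" and c :: "nat \<Rightarrow> nat \<Rightarrow> real" and r :: real
  assumes g_lt: "\<And>i. i<n \<Longrightarrow> g i < K"
  and U_fac: "\<And>i k. i<n \<Longrightarrow> k<K' \<Longrightarrow> U i k = tt i * c (g i) k"
  and tt_norm: "\<And>m. m<K \<Longrightarrow> (\<Sum>i\<in>{i. i<n \<and> g i = m}. (tt i)\<^sup>2) = 1"
  and cpos: "\<And>m. m<K \<Longrightarrow> 0 < (\<Sum>k<K'. (c m k)\<^sup>2)"
  and tt_pos: "\<And>i. i<n \<Longrightarrow> 0 < tt i"
  and r_pos: "0 < r"
  and r_le: "\<And>i. i<n \<Longrightarrow> r \<le> (tt i)\<^sup>2 * (\<Sum>k<K'. (c (g i) k)\<^sup>2)"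
begin

lemma group: "(\<Sum>i<n. (tt i)\<^sup>2 * f (g i)) = (\<Sum>m<K. f m)"
proof -
  have "(\<Sum>i<n. (tt i)\<^sup>2 * f (g i)) = (\<Sum>m<K. \<Sum>i\<in>{x. x \<in> {..<n} \<and> g x = m}. (tt i)\<^sup>2 * f (g i))"
    by (rule sum.group[symmetric]) (auto simp: g_lt)
  also have "\<dots> = (\<Sum>m<K. f m)"
  proof (intro sum.cong refl)
    fix m assume m: "m \<in> {..<K}"
    have "(\<Sum>i\<in>{x. x \<in> {..<n} \<and> g x = m}. (tt i)\<^sup>2 * f (g i)) = (\<Sum>i\<in>{i. i<n \<and> g i = m}. (tt i)\<^sup>2 * f m)"
      by (intro sum.cong) auto
    also have "\<dots> = f m * (\<Sum>i\<in>{i. i<n \<and> g i = m}. (tt i)\<^sup>2)"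
      by (simp add: sum_distrib_left mult.commute)
    finally show "(\<Sum>i\<in>{x. x \<in> {..<n} \<and> g x = m}. (tt i)\<^sup>2 * f (g i)) = f m" using m tt_norm by simp
  qed
  finally show ?thesis .
qed

lemma Corth: assumes "k<K'" "l<K'" shows "(\<Sum>m<K. c m k * c m l) = (if k = l then 1 else 0)"
proof -
  have "(\<Sum>i<n. U i k * U i l) = (\<Sum>i<n. (tt i)\<^sup>2 * (c (g i) k * c (g i) l))"
    using assms by (intro sum.cong refl) (simp add: U_fac power2_eq_square mult_ac)
  also have "\<dots> = (\<Sum>m<K. c m k * c m l)" by (rule group)
  finally show ?thesis using Ucol[OF assms] by simp
qed

definition cn where "cn m = sqrt (\<Sum>k<K'. (c m k)\<^sup>2)"
definition h where "h m k = c m k / cn m"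
definition z where "z m j = (\<Sum>k<K'. X j k * h m k)"
definition rho where "rho i = tt i * cn (g i)"

lemma cn_pos: "m<K \<Longrightarrow> 0 < cn m"
  unfolding cn_def using cpos by simp

lemma cn_sq: "(cn m)\<^sup>2 = (\<Sum>k<K'. (c m k)\<^sup>2)"
  unfolding cn_def by (simp add: sum_nonneg)

lemma hnorm: assumes "m<K" shows "(\<Sum>k<K'. (h m k)\<^sup>2) = 1"
proof -
  have "(\<Sum>k<K'. (h m k)\<^sup>2) = (\<Sum>k<K'. (c m k)\<^sup>2) / (cn m)\<^sup>2"
    by (simp add: h_def power_divide sum_divide_distrib)
  then show ?thesis using cn_sq[of m] cpos[OF assms] by simp
qed

lemma zsq: assumes "m<K"
  shows "(\<Sum>j<K'. (z m j)\<^sup>2) = 1 - (\<Sum>j\<in>{K'..<n}. (\<Sum>k<K'. X j k * h m k)\<^sup>2)"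
  using F3[of "h m"] hnorm[OF assms] by (simp add: z_def)

lemma z_le: assumes "m<K" shows "L2_set (z m) {..<K'} \<le> 1"
proof -
  have "(\<Sum>j<K'. (z m j)\<^sup>2) \<le> 1" using zsq[OF assms] by (simp add: sum_nonneg)
  then show ?thesis unfolding L2_set_def by simp
qed

lemma sep: assumes "m<K" "l<K"
  shows "(1 - eps2) * (\<Sum>k<K'. (h m k - h l k)\<^sup>2) \<le> (\<Sum>j<K'. (z m j - z l j)\<^sup>2)"
proof -
  define y where "y k = h m k - h l k" for k
  have zz: "z m j - z l j = (\<Sum>k<K'. X j k * y k)" for j
    by (simp add: z_def y_def algebra_simps sum_subtractf)
  have "(\<Sum>j<K'. (z m j - z l j)\<^sup>2) = (\<Sum>k<K'. (y k)\<^sup>2) - (\<Sum>j\<in>{K'..<n}. (\<Sum>k<K'. X j k * y k)\<^sup>2)"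
    using F3[of y] by (simp add: zz)
  moreover have "(\<Sum>j\<in>{K'..<n}. (\<Sum>k<K'. X j k * y k)\<^sup>2) \<le> eps2 * (\<Sum>k<K'. (y k)\<^sup>2)" by (rule F1)
  ultimately show ?thesis by (simp add: y_def algebra_simps)
qed

lemma rho_pos: "i<n \<Longrightarrow> 0 < rho i"
  unfolding rho_def using tt_pos cn_pos g_lt by simp

lemma rho_sq: "i<n \<Longrightarrow> r \<le> (rho i)\<^sup>2"
  unfolding rho_def using r_le by (simp add: power_mult_distrib cn_sq)

definition ynorm where "ynorm i j = (if L2_set (\<lambda>j. V i j) {..<K'} = 0 then V i j else V i j / L2_set (\<lambda>j. V i j) {..<K'})"

lemma p_eq: assumes "i<n" shows "(\<Sum>k<K'. X j k * U i k) = rho i * z (g i) j"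
proof -
  have "(\<Sum>k<K'. X j k * U i k) = (\<Sum>k<K'. tt i * cn (g i) * (X j k * h (g i) k))"
    using assms cn_pos[of "g i"] g_lt[OF assms] by (intro sum.cong refl) (simp add: U_fac h_def)
  then show ?thesis by (simp add: rho_def z_def sum_distrib_left)
qed

lemma err_pt: assumes i: "i<n"
  shows "(\<Sum>j<K'. (ynorm i j - z (g i) j)\<^sup>2)
     \<le> (8 * (\<Sum>j<K'. (V i j - (\<Sum>k<K'. X j k * U i k))\<^sup>2) + 2 * (rho i)\<^sup>2 * (1 - (\<Sum>j<K'. (z (g i) j)\<^sup>2))) / r"
proof -
  define d where "d = L2_set (\<lambda>j. V i j - rho i * z (g i) j) {..<K'}"
  define t where "t = L2_set (z (g i)) {..<K'}"
  have gi: "g i < K" using g_lt[OF i] .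
  have L: "L2_set (\<lambda>j. ynorm i j - z (g i) j) {..<K'} \<le> (2 * d + rho i * (1 - t)) / rho i"
    unfolding d_def t_def ynorm_def
    by (rule norm_lemma[where a="\<lambda>j. V i j", simplified]) (auto simp: rho_pos[OF i] z_le[OF gi])
  have "(L2_set (\<lambda>j. ynorm i j - z (g i) j) {..<K'})\<^sup>2 \<le> (8 * d\<^sup>2 + 2 * (rho i)\<^sup>2 * (1 - t\<^sup>2)) / (rho i)\<^sup>2"
    by (rule sq_bound[OF _ _ _ rho_pos[OF i] _ L]) (auto simp: d_def t_def z_le[OF gi])
  also have "\<dots> \<le> (8 * d\<^sup>2 + 2 * (rho i)\<^sup>2 * (1 - t\<^sup>2)) / r"
  proof (rule divide_left_mono)
    have "t\<^sup>2 \<le> 1" using z_le[OF gi] t_def by (simp add: power_le_one)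
    then show "0 \<le> 8 * d\<^sup>2 + 2 * (rho i)\<^sup>2 * (1 - t\<^sup>2)" by simp
  next
    have "0 < (rho i)\<^sup>2" using rho_sq[OF i] r_pos by linarith
    then show "0 < (rho i)\<^sup>2 * r" using r_pos by simp
  qed (use rho_sq[OF i] r_pos in auto)
  finally show ?thesis
    unfolding L2_sq d_def t_def by (simp add: p_eq[OF i])
qed

lemma cross: "(\<Sum>i<n. (rho i)\<^sup>2 * (1 - (\<Sum>j<K'. (z (g i) j)\<^sup>2))) = eps2"
proof -
  have "(\<Sum>i<n. (rho i)\<^sup>2 * (1 - (\<Sum>j<K'. (z (g i) j)\<^sup>2)))
     = (\<Sum>i<n. (tt i)\<^sup>2 * (\<Sum>j\<in>{K'..<n}. (\<Sum>k<K'. X j k * c (g i) k)\<^sup>2))"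
  proof (intro sum.cong refl)
    fix i assume "i \<in> {..<n}"
    then have i: "i<n" by simp
    have gi: "g i < K" using g_lt[OF i] .
    have "(rho i)\<^sup>2 * (1 - (\<Sum>j<K'. (z (g i) j)\<^sup>2)) = (tt i)\<^sup>2 * ((cn (g i))\<^sup>2 * (\<Sum>j\<in>{K'..<n}. (\<Sum>k<K'. X j k * h (g i) k)\<^sup>2))"
      using zsq[OF gi] by (simp add: rho_def power_mult_distrib)
    also have "(cn (g i))\<^sup>2 * (\<Sum>j\<in>{K'..<n}. (\<Sum>k<K'. X j k * h (g i) k)\<^sup>2) = (\<Sum>j\<in>{K'..<n}. (\<Sum>k<K'. X j k * c (g i) k)\<^sup>2)"
      unfolding sum_distrib_left
    proof (intro sum.cong refl)
      fix j
      have "cn (g i) * (\<Sum>k<K'. X j k * h (g i) k) = (\<Sum>k<K'. X j k * c (g i) k)"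
        using cn_pos[OF gi] by (simp add: sum_distrib_left h_def)
      then show "(cn (g i))\<^sup>2 * (\<Sum>k<K'. X j k * h (g i) k)\<^sup>2 = (\<Sum>k<K'. X j k * c (g i) k)\<^sup>2"
        by (metis power_mult_distrib)
    qed
    finally show "(rho i)\<^sup>2 * (1 - (\<Sum>j<K'. (z (g i) j)\<^sup>2)) = (tt i)\<^sup>2 * (\<Sum>j\<in>{K'..<n}. (\<Sum>k<K'. X j k * c (g i) k)\<^sup>2)" .
  qed
  also have "\<dots> = (\<Sum>m<K. \<Sum>j\<in>{K'..<n}. (\<Sum>k<K'. X j k * c m k)\<^sup>2)" by (rule group)
  also have "\<dots> = (\<Sum>j\<in>{K'..<n}. \<Sum>m<K. (\<Sum>k<K'. c m k * X j k)\<^sup>2)"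
    by (subst sum.swap) (simp add: mult.commute)
  also have "\<dots> = (\<Sum>j\<in>{K'..<n}. \<Sum>k<K'. (X j k)\<^sup>2)"
    by (intro sum.cong refl parseval_gen) (simp add: Corth)
  also have "\<dots> = eps2" unfolding eps2_def by (rule sum.swap)
  finally show ?thesis .
qed

lemma err_sum: "(\<Sum>i<n. \<Sum>j<K'. (ynorm i j - z (g i) j)\<^sup>2) \<le> 10 * eps2 / r"
proof -
  have "(\<Sum>i<n. \<Sum>j<K'. (ynorm i j - z (g i) j)\<^sup>2)
     \<le> (\<Sum>i<n. (8 * (\<Sum>j<K'. (V i j - (\<Sum>k<K'. X j k * U i k))\<^sup>2) + 2 * (rho i)\<^sup>2 * (1 - (\<Sum>j<K'. (z (g i) j)\<^sup>2))) / r)"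
    by (rule sum_mono) (simp add: err_pt)
  also have "\<dots> = (8 * (\<Sum>i<n. \<Sum>j<K'. (V i j - (\<Sum>k<K'. X j k * U i k))\<^sup>2) + 2 * (\<Sum>i<n. (rho i)\<^sup>2 * (1 - (\<Sum>j<K'. (z (g i) j)\<^sup>2)))) / r"
    by (simp add: sum_divide_distrib[symmetric] sum.distrib sum_distrib_left mult.assoc)
  also have "\<dots> = 10 * eps2 / r" by (simp add: F4 cross)
  finally show ?thesis .
qed

end

lemma pt_sq_le: "((a::real) - b)\<^sup>2 \<le> 2 * (a - c)\<^sup>2 + 2 * (c - b)\<^sup>2"
  by (smt (verit) power2_diff sum_squares_bound zero_le_power2 power2_sum)

lemma sqrt_quarter: "x < \<delta>/4 \<Longrightarrow> sqrt x < sqrt \<delta> / 2"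
proof -
  assume "x < \<delta>/4"
  then have "sqrt x < sqrt (\<delta>/4)" by (rule real_sqrt_less_mono)
  also have "sqrt (\<delta>/4) = sqrt \<delta> / 2" by (simp add: real_sqrt_divide)
  finally show ?thesis .
qed

lemma kmeans_core:
  fixes y z Xc :: "nat \<Rightarrow> nat \<Rightarrow> real" and g t :: "nat \<Rightarrow> nat" and n d K :: nat
  assumes opt: "(\<Sum>i<n. \<Sum>j<d. (Xc (t i) j - y i j)\<^sup>2) \<le> (\<Sum>i<n. \<Sum>j<d. (z (g i) j - y i j)\<^sup>2)"
  and err: "(\<Sum>i<n. \<Sum>j<d. (z (g i) j - y i j)\<^sup>2) \<le> \<tau>"
  and sep: "\<And>m l. m<K \<Longrightarrow> l<K \<Longrightarrow> m\<noteq>l \<Longrightarrow> dl \<le> (\<Sum>j<d. (z m j - z l j)\<^sup>2)"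
  and d2: "0 < dl"
  and g_lt: "\<And>i. i<n \<Longrightarrow> g i < K" and t_lt: "\<And>i. i<n \<Longrightarrow> t i < K"
  and small: "\<And>m. m<K \<Longrightarrow> 16 * \<tau> / dl < real (card {i. i<n \<and> g i = m})"
  shows "\<exists>S \<sigma>. S \<subseteq> {..<n} \<and> real (card S) \<le> 16 * \<tau> / dl \<and> \<sigma> permutes {..<K}
            \<and> (\<forall>i<n. i \<notin> S \<longrightarrow> \<sigma> (t i) = g i)"
proof -
  define D where "D i = (\<Sum>j<d. (Xc (t i) j - z (g i) j)\<^sup>2)" for i
  define S where "S = {i. i<n \<and> dl/4 \<le> D i}"
  have Ssub: "S \<subseteq> {..<n}" by (auto simp: S_def)
  have "(\<Sum>i<n. D i) \<le> (\<Sum>i<n. \<Sum>j<d. 2 * (Xc (t i) j - y i j)\<^sup>2 + 2 * (y i j - z (g i) j)\<^sup>2)"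
    unfolding D_def by (intro sum_mono) (rule pt_sq_le)
  also have "\<dots> = 2 * (\<Sum>i<n. \<Sum>j<d. (Xc (t i) j - y i j)\<^sup>2) + 2 * (\<Sum>i<n. \<Sum>j<d. (z (g i) j - y i j)\<^sup>2)"
    by (simp add: sum.distrib sum_distrib_left power2_commute)
  also have "\<dots> \<le> 4 * \<tau>" using opt err by linarith
  finally have sumD: "(\<Sum>i<n. D i) \<le> 4 * \<tau>" .
  have "real (card S) * (dl/4) = (\<Sum>i\<in>S. dl/4)" by simp
  also have "\<dots> \<le> (\<Sum>i\<in>S. D i)" by (rule sum_mono) (simp add: S_def)
  also have "\<dots> \<le> (\<Sum>i<n. D i)"
  proof (rule sum_mono2)
    show "S \<subseteq> {..<n}" by (rule Ssub)
    fix b show "0 \<le> D b" unfolding D_def by (rule sum_nonneg) simp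
  qed simp
  finally have "real (card S) * (dl/4) \<le> 4 * \<tau>" using sumD by linarith
  moreover have "real (card S) * dl = 4 * (real (card S) * (dl/4))" by simp
  ultimately have "real (card S) * dl \<le> 16 * \<tau>" by linarith
  then have cardS: "real (card S) \<le> 16 * \<tau> / dl" using d2 by (simp add: pos_le_divide_eq)
  have good: "g i = g i'" if "i<n" "i'<n" "i \<notin> S" "i' \<notin> S" "t i = t i'" for i i'
  proof (rule ccontr)
    assume ne: "g i \<noteq> g i'"
    have Di: "D i < dl/4" and Di': "D i' < dl/4" using that by (auto simp: S_def)
    have a: "L2_set (\<lambda>j. Xc (t i) j - z (g i) j) {..<d} < sqrt dl / 2"
      unfolding L2_set_def using sqrt_quarter[OF Di] by (simp add: D_def)
    have b: "L2_set (\<lambda>j. Xc (t i') j - z (g i') j) {..<d} < sqrt dl / 2"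
      unfolding L2_set_def using sqrt_quarter[OF Di'] by (simp add: D_def)
    have "sqrt dl \<le> L2_set (\<lambda>j. z (g i) j - z (g i') j) {..<d}"
      unfolding L2_set_def using sep[OF g_lt[OF that(1)] g_lt[OF that(2)] ne] by simp
    also have "\<dots> \<le> L2_set (\<lambda>j. z (g i) j - Xc (t i) j) {..<d} + L2_set (\<lambda>j. Xc (t i) j - z (g i') j) {..<d}"
      by (rule L2_diff_tri)
    also have "\<dots> < sqrt dl" using a b that(5) L2_swap[of "\<lambda>j. z (g i) j" "\<lambda>j. Xc (t i) j"] by simp
    finally show False by simp
  qed
  have exg: "\<exists>i. i<n \<and> i \<notin> S \<and> g i = m" if m: "m<K" for m
  proof (rule ccontr)
    assume "\<not> ?thesis"
    then have "{i. i<n \<and> g i = m} \<subseteq> S" by auto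
    then have "card {i. i<n \<and> g i = m} \<le> card S" by (intro card_mono) (auto simp: S_def)
    then show False using small[OF m] cardS by linarith
  qed
  define rep where "rep m = (SOME i. i<n \<and> i \<notin> S \<and> g i = m)" for m
  have rep: "rep m < n" "rep m \<notin> S" "g (rep m) = m" if "m<K" for m
    using someI_ex[OF exg[OF that]] unfolding rep_def by auto
  define f where "f m = t (rep m)" for m
  have inj: "inj_on f {..<K}"
  proof (rule inj_onI)
    fix m l assume "m \<in> {..<K}" "l \<in> {..<K}" "f m = f l"
    then show "m = l" using good[of "rep m" "rep l"] rep[of m] rep[of l] by (auto simp: f_def)
  qed
  have img: "f ` {..<K} \<subseteq> {..<K}" using rep t_lt by (auto simp: f_def)
  have bij: "bij_betw f {..<K} {..<K}"
    using endo_inj_surj[OF _ img inj] inj by (simp add: bij_betw_def)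
  define \<sigma> where "\<sigma> l = (if l < K then inv_into {..<K} f l else l)" for l
  have "bij_betw (inv_into {..<K} f) {..<K} {..<K}" by (rule bij_betw_inv_into[OF bij])
  then have "bij_betw \<sigma> {..<K} {..<K}" by (rule bij_betw_cong[THEN iffD1, rotated]) (simp add: \<sigma>_def)
  then have perm: "\<sigma> permutes {..<K}" by (rule bij_imp_permutes) (simp add: \<sigma>_def)
  have agree: "\<sigma> (t i) = g i" if i: "i<n" "i \<notin> S" for i
  proof -
    have "t i \<in> f ` {..<K}" using bij t_lt[OF i(1)] by (simp add: bij_betw_def)
    then obtain l where l: "l<K" "t i = f l" by auto
    then have "\<sigma> (t i) = l" using inj t_lt[OF i(1)] by (simp add: \<sigma>_def inv_into_f_f)
    moreover have "g (rep l) = g i" using good[of "rep l" i] rep[OF l(1)] i l(2) by (simp add: f_def)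
    ultimately show ?thesis using rep[OF l(1)] by simp
  qed
  show ?thesis using Ssub cardS perm agree by blast
qed

context clus begin

lemma clus_main:
  fixes t :: "nat \<Rightarrow> nat" and Xc :: "nat \<Rightarrow> nat \<Rightarrow> real" and dd :: real
  assumes opt: "(\<Sum>i<n. \<Sum>j<K'. (Xc (t i) j - ynorm i j)\<^sup>2) \<le> (\<Sum>i<n. \<Sum>j<K'. (z (g i) j - ynorm i j)\<^sup>2)"
  and t_lt: "\<And>i. i<n \<Longrightarrow> t i < K"
  and dsep: "\<And>m l. m<K \<Longrightarrow> l<K \<Longrightarrow> m\<noteq>l \<Longrightarrow> dd \<le> (\<Sum>k<K'. (h m k - h l k)\<^sup>2)"
  and dd: "0 < dd"
  and gam_small: "real K' * e\<^sup>2 / gam\<^sup>2 \<le> 1/8"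
  and esmall: "real (K'+1) * e\<^sup>2 \<le> gam\<^sup>2/4"
  and small: "\<And>m. m<K \<Longrightarrow> 1280 * real K' * e\<^sup>2 / (gam\<^sup>2 * r * dd) < real (card {i. i<n \<and> g i = m})"
  shows "\<exists>S \<sigma>. S \<subseteq> {..<n} \<and> real (card S) \<le> 1280 * real K' * e\<^sup>2 / (gam\<^sup>2 * r * dd) \<and> \<sigma> permutes {..<K}
            \<and> (\<forall>i<n. i \<notin> S \<longrightarrow> \<sigma> (t i) = g i)"
proof -
  have eb: "eps2 \<le> 4 * real K' * e\<^sup>2 / gam\<^sup>2" by (rule eps2_bound[OF esmall])
  have "4 * real K' * e\<^sup>2 / gam\<^sup>2 = 4 * (real K' * e\<^sup>2 / gam\<^sup>2)" by simp
  with eb gam_small have eps_half: "eps2 \<le> 1/2" by linarith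
  have eps_nn: "0 \<le> eps2" unfolding eps2_def by (intro sum_nonneg) simp
  have sep2: "dd/2 \<le> (\<Sum>j<K'. (z m j - z l j)\<^sup>2)" if "m<K" "l<K" "m\<noteq>l" for m l
  proof -
    have "dd * eps2 \<le> dd * (1/2)" using eps_half dd by (intro mult_left_mono) auto
    then have "dd/2 \<le> (1 - eps2) * dd" by (simp add: algebra_simps)
    also have "\<dots> \<le> (1 - eps2) * (\<Sum>k<K'. (h m k - h l k)\<^sup>2)"
      using dsep[OF that] eps_half by (intro mult_left_mono) auto
    also have "\<dots> \<le> (\<Sum>j<K'. (z m j - z l j)\<^sup>2)" by (rule sep[OF that(1,2)])
    finally show ?thesis .
  qed
  have err: "(\<Sum>i<n. \<Sum>j<K'. (z (g i) j - ynorm i j)\<^sup>2) \<le> 10 * eps2 / r"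
    using err_sum by (simp add: power2_commute)
  have bnd: "16 * (10 * eps2 / r) / (dd/2) \<le> 1280 * real K' * e\<^sup>2 / (gam\<^sup>2 * r * dd)"
  proof -
    have "16 * (10 * eps2 / r) / (dd/2) = 320 * eps2 / (r * dd)" by (simp add: field_simps)
    also have "\<dots> \<le> 320 * (4 * real K' * e\<^sup>2 / gam\<^sup>2) / (r * dd)"
      using eb r_pos dd by (intro divide_right_mono mult_left_mono) auto
    also have "\<dots> = 1280 * real K' * e\<^sup>2 / (gam\<^sup>2 * r * dd)" by (simp add: field_simps)
    finally show ?thesis .
  qed
  obtain S \<sigma> where res: "S \<subseteq> {..<n}" "real (card S) \<le> 16 * (10 * eps2 / r) / (dd/2)" "\<sigma> permutes {..<K}"
     "\<forall>i<n. i \<notin> S \<longrightarrow> \<sigma> (t i) = g i"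
    using kmeans_core[where y=ynorm and z=z and Xc=Xc and g=g and t=t and n=n and d=K' and K=K
        and \<tau>="10 * eps2 / r" and dl="dd/2", OF opt err sep2 _ g_lt t_lt] dd small bnd
    by (smt (verit, best) half_gt_zero)
  then show ?thesis using bnd by (meson order_trans)
qed

end

locale dcm = spec +
  fixes K :: nat and g :: "nat \<Rightarrow> nat" and th :: "nat \<Rightarrow> real" and Bf :: "nat \<Rightarrow> nat \<Rightarrow> real"
  assumes g_lt: "\<And>i. i<n \<Longrightarrow> g i < K"
  and th_pos: "\<And>i. i<n \<Longrightarrow> 0 < th i"
  and Gne: "\<And>m. m<K \<Longrightarrow> \<exists>i<n. g i = m"
  and P_model: "\<And>i i'. i<n \<Longrightarrow> i'<n \<Longrightarrow> P i i' = th i * th i' * Bf (g i) (g i')"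
begin

definition G where "G m = {i. i<n \<and> g i = m}"
definition nk where "nk m = sqrt (\<Sum>i\<in>G m. (th i)\<^sup>2)"
definition tt where "tt i = th i / nk (g i)"
definition R where "R m k = (\<Sum>i'<n. th i' * Bf m (g i') * U i' k)"
definition c where "c m k = nk m * R m k / s k"

lemma finG: "finite (G m)" unfolding G_def by simp

lemma nk_pos: assumes "m<K" shows "0 < nk m"
proof -
  obtain i where i: "i<n" "g i = m" using Gne[OF assms] by blast
  have "0 < (th i)\<^sup>2" using th_pos[OF i(1)] by simp
  also have "(th i)\<^sup>2 \<le> (\<Sum>i\<in>G m. (th i)\<^sup>2)"
    using i by (intro member_le_sum) (auto simp: G_def finG)
  finally show ?thesis unfolding nk_def by simp
qed

lemma nk_sq: "(nk m)\<^sup>2 = (\<Sum>i\<in>G m. (th i)\<^sup>2)"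
  unfolding nk_def by (simp add: sum_nonneg)

lemma tt_pos: "i<n \<Longrightarrow> 0 < tt i"
  unfolding tt_def using th_pos nk_pos g_lt by simp

lemma tt_norm: assumes "m<K" shows "(\<Sum>i\<in>{i. i<n \<and> g i = m}. (tt i)\<^sup>2) = 1"
proof -
  have "(\<Sum>i\<in>{i. i<n \<and> g i = m}. (tt i)\<^sup>2) = (\<Sum>i\<in>G m. (th i)\<^sup>2 / (nk m)\<^sup>2)"
    unfolding G_def by (intro sum.cong refl) (simp add: tt_def power_divide)
  also have "\<dots> = (\<Sum>i\<in>G m. (th i)\<^sup>2) / (nk m)\<^sup>2" by (simp add: sum_divide_distrib)
  also have "\<dots> = 1" using nk_pos[OF assms] by (simp add: nk_sq[symmetric])
  finally show ?thesis .
qed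

lemma s_nz: "k<K' \<Longrightarrow> s k \<noteq> 0" using s_gap gam_pos by force

lemma U_fac: assumes i: "i<n" and k: "k<K'" shows "U i k = tt i * c (g i) k"
proof -
  have "s k * U i k = (\<Sum>i'<n. P i i' * U i' k)" using P_right[OF k i] by simp
  also have "\<dots> = (\<Sum>i'<n. th i * (th i' * Bf (g i) (g i') * U i' k))"
    using i by (intro sum.cong refl) (simp add: P_model mult_ac)
  also have "\<dots> = th i * R (g i) k" by (simp add: R_def sum_distrib_left)
  finally have "s k * U i k = th i * R (g i) k" .
  then have "U i k = th i * R (g i) k / s k" using s_nz[OF k] by (simp add: field_simps)
  then show ?thesis using nk_pos[OF g_lt[OF i]] by (simp add: tt_def c_def)
qed

lemma c_from_U: assumes m: "m<K" and k: "k<K'" shows "c m k = (\<Sum>i\<in>G m. tt i * U i k)"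
proof -
  have "(\<Sum>i\<in>G m. tt i * U i k) = (\<Sum>i\<in>G m. (tt i)\<^sup>2 * c m k)"
    by (intro sum.cong refl) (auto simp: G_def U_fac k power2_eq_square)
  also have "\<dots> = c m k" using tt_norm[OF m] by (simp add: sum_distrib_right[symmetric] G_def)
  finally show ?thesis by simp
qed

lemma Bbar_c: assumes m: "m<K" and l: "l<K"
  shows "(\<Sum>k<K'. c m k * s k * c l k) = nk m * Bf m l * nk l"
proof -
  define a where "a i = (th i)\<^sup>2 / nk m" for i
  define b where "b i = (th i)\<^sup>2 / nk l" for i
  have "(\<Sum>k<K'. c m k * s k * c l k) = (\<Sum>k<K'. \<Sum>i\<in>G m. \<Sum>i'\<in>G l. tt i * tt i' * (U i k * s k * U i' k))"
    by (intro sum.cong refl) (simp add: c_from_U m l sum_distrib_left sum_distrib_right mult_ac)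
  also have "\<dots> = (\<Sum>i\<in>G m. \<Sum>i'\<in>G l. tt i * tt i' * (\<Sum>k<K'. U i k * s k * U i' k))"
    by (simp add: sum_distrib_left sum.swap[of _ "{..<K'}"])
  also have "\<dots> = (\<Sum>i\<in>G m. \<Sum>i'\<in>G l. (th i)\<^sup>2 / nk m * ((th i')\<^sup>2 / nk l) * Bf m l)"
  proof (intro sum.cong refl)
    fix i i' assume "i \<in> G m" "i' \<in> G l"
    then have "i<n" "i'<n" "g i = m" "g i' = l" by (auto simp: G_def)
    then show "tt i * tt i' * (\<Sum>k<K'. U i k * s k * U i' k) = (th i)\<^sup>2 / nk m * ((th i')\<^sup>2 / nk l) * Bf m l"
      using P_eq[of i i'] P_model[of i i'] by (simp add: tt_def power2_eq_square)
  qed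
  also have "\<dots> = (\<Sum>i\<in>G m. \<Sum>i'\<in>G l. a i * b i' * Bf m l)" by (simp add: a_def b_def)
  also have "\<dots> = (\<Sum>i\<in>G m. a i) * (\<Sum>i'\<in>G l. b i') * Bf m l"
    by (simp add: sum_distrib_left sum_distrib_right mult.assoc) (rule sum.swap)
  also have "\<dots> = ((\<Sum>i\<in>G m. (th i)\<^sup>2) / nk m) * ((\<Sum>i'\<in>G l. (th i')\<^sup>2) / nk l) * Bf m l"
    by (simp add: a_def b_def sum_divide_distrib)
  also have "\<dots> = nk m * Bf m l * nk l"
    using nk_pos[OF m] nk_pos[OF l] by (simp only: nk_sq[symmetric]) (simp add: power2_eq_square)
  finally show ?thesis .
qed

end

lemma mult_idx: assumes "dim_col A = dim_row B" "i < dim_row A" "j < dim_col B"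
  shows "(A * B) $$ (i,j) = (\<Sum>k<dim_row B. A $$ (i,k) * B $$ (k,j))"
  using assms by (auto simp: scalar_prod_def lessThan_atLeast0 intro!: sum.cong)

lemma diagv_idx: "i < dim_vec v \<Longrightarrow> j < dim_vec v \<Longrightarrow> diagv v $$ (i,j) = (if i = j then v $ i else 0)"
  unfolding diagv_def by simp

lemma diagv_dim[simp]: "dim_row (diagv v) = dim_vec v" "dim_col (diagv v) = dim_vec v"
  unfolding diagv_def by simp_all

lemma memb_row: assumes "memb_mat n K T" "i<n"
  shows "comm K T i < K" "\<And>k. k<K \<Longrightarrow> T $$ (i,k) = (if k = comm K T i then 1 else 0)"
proof -
  have "\<forall>i<n. card {k. k < K \<and> T $$ (i,k) = 1} = 1" using assms(1) by (simp add: memb_mat_def)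
  then have c1: "card {k. k < K \<and> T $$ (i,k) = 1} = 1" using assms(2) by blast
  obtain k0 where k0: "{k. k < K \<and> T $$ (i,k) = 1} = {k0}" using card_1_singletonE[OF c1] by blast
  have k0K: "k0 < K" "T $$ (i,k0) = 1" using k0 by auto
  have uniq: "\<And>k. k < K \<Longrightarrow> T $$ (i,k) = 1 \<Longrightarrow> k = k0" using k0 by auto
  have cm: "comm K T i = k0" unfolding comm_def
    using k0K uniq by (intro the_equality) blast+
  show "comm K T i < K" using cm k0K by simp
  fix k assume k: "k<K"
  have "\<forall>i<n. \<forall>k<K. T $$ (i,k) = 0 \<or> T $$ (i,k) = 1" using assms(1) by (simp add: memb_mat_def)
  then have disj: "T $$ (i,k) = 0 \<or> T $$ (i,k) = 1" using assms(2) k by blast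
  show "T $$ (i,k) = (if k = comm K T i then 1 else 0)"
  proof (cases "k = k0")
    case True
    then show ?thesis using cm k0K(2) by simp
  next
    case False
    then have "T $$ (i,k) \<noteq> 1" using uniq[OF k] by blast
    then have "T $$ (i,k) = 0" using disj by blast
    then show ?thesis using cm False by simp
  qed
qed

lemma memb_carrier: "memb_mat n K T \<Longrightarrow> T \<in> carrier_mat n K" unfolding memb_mat_def by blast

lemma memb_mult: assumes T: "memb_mat n K T" and Xm: "Xm \<in> carrier_mat K d" and i: "i<n" and j: "j<d"
  shows "(T * Xm) $$ (i,j) = Xm $$ (comm K T i, j)"
proof -
  have Tc: "T \<in> carrier_mat n K" using memb_carrier[OF T] .
  have "(T * Xm) $$ (i,j) = (\<Sum>k<K. T $$ (i,k) * Xm $$ (k,j))"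
    using Tc Xm i j by (subst mult_idx) auto
  also have "\<dots> = (\<Sum>k<K. (if k = comm K T i then 1 else 0) * Xm $$ (k,j))"
    by (intro sum.cong refl) (simp add: memb_row(2)[OF T i])
  also have "\<dots> = Xm $$ (comm K T i, j)" using memb_row(1)[OF T i] by (simp add: delta_mult)
  finally show ?thesis .
qed

lemma frob_memb: assumes T: "memb_mat n K T" and Xm: "Xm \<in> carrier_mat K d" and Y: "Y \<in> carrier_mat n d"
  shows "frob_sq (T * Xm - Y) = (\<Sum>i<n. \<Sum>j<d. (Xm $$ (comm K T i, j) - Y $$ (i,j))\<^sup>2)"
proof -
  have Tc: "T \<in> carrier_mat n K" using memb_carrier[OF T] .
  have dims: "dim_row (T * Xm - Y) = n" "dim_col (T * Xm - Y) = d" using Tc Xm Y by auto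
  show ?thesis unfolding frob_sq_def dims
  proof (intro sum.cong refl)
    fix i j assume "i \<in> {..<n}" "j \<in> {..<d}"
    then have ij: "i<n" "j<d" by auto
    have "(T * Xm - Y) $$ (i,j) = (T * Xm) $$ (i,j) - Y $$ (i,j)"
      using ij Tc Xm Y by (simp del: index_mult_mat)
    then show "((T * Xm - Y) $$ (i,j))\<^sup>2 = (Xm $$ (comm K T i, j) - Y $$ (i,j))\<^sup>2"
      using memb_mult[OF T Xm ij] by simp
  qed
qed

lemma vnorm_sum: "vnorm x = sqrt (\<Sum>i<dim_vec x. (x $ i)\<^sup>2)"
  unfolding vnorm_def scalar_prod_def by (simp add: power2_eq_square lessThan_atLeast0)

lemma spec_fun: assumes M: "M \<in> carrier_mat n n"
  shows "(\<Sum>i<n. (\<Sum>i'<n. M $$ (i,i') * x i')\<^sup>2) \<le> (spec_norm M)\<^sup>2 * (\<Sum>i<n. (x i)\<^sup>2)"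
    and "0 \<le> spec_norm M"
proof -
  define SS where "SS = {vnorm (M *\<^sub>v x) | x. x \<in> carrier_vec (dim_col M) \<and> vnorm x \<le> 1}"
  have Mv: "(M *\<^sub>v v) $ i = (\<Sum>i'<n. M $$ (i,i') * v $ i')" if "i<n" "v \<in> carrier_vec n" for i v
    using that M by (auto simp: scalar_prod_def lessThan_atLeast0 intro!: sum.cong)
  define F where "F = sqrt (frob_sq M)"
  have bnd: "vnorm (M *\<^sub>v v) \<le> F" if v: "v \<in> carrier_vec n" "vnorm v \<le> 1" for v
  proof -
    have "(\<Sum>i<n. ((M *\<^sub>v v) $ i)\<^sup>2) = (\<Sum>i<n. (\<Sum>i'<n. M $$ (i,i') * v $ i')\<^sup>2)"
      using Mv v by simp
    also have "\<dots> \<le> (\<Sum>i<n. (\<Sum>i'<n. (M $$ (i,i'))\<^sup>2) * (\<Sum>i'<n. (v $ i')\<^sup>2))"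
      by (intro sum_mono cs_sum)
    also have "\<dots> = frob_sq M * (\<Sum>i'<n. (v $ i')\<^sup>2)"
      using M by (simp add: frob_sq_def sum_distrib_right)
    also have "\<dots> \<le> frob_sq M * 1"
    proof (rule mult_left_mono)
      have "sqrt (\<Sum>i'<n. (v $ i')\<^sup>2) \<le> 1" using v vnorm_sum[of v] by simp
      then show "(\<Sum>i'<n. (v $ i')\<^sup>2) \<le> 1" by simp
      show "0 \<le> frob_sq M" unfolding frob_sq_def by (intro sum_nonneg) auto
    qed
    finally have "(\<Sum>i<n. ((M *\<^sub>v v) $ i)\<^sup>2) \<le> frob_sq M" by simp
    then show ?thesis unfolding F_def vnorm_sum using M by simp
  qed
  have bdd: "bdd_above SS" unfolding SS_def bdd_above_def using bnd M by auto
  have mem: "vnorm (M *\<^sub>v v) \<in> SS" if "v \<in> carrier_vec n" "vnorm v \<le> 1" for v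
    unfolding SS_def using that M by auto
  have le_sup: "vnorm (M *\<^sub>v v) \<le> spec_norm M" if "v \<in> carrier_vec n" "vnorm v \<le> 1" for v
    unfolding spec_norm_def SS_def[symmetric] by (rule cSup_upper[OF mem[OF that] bdd])
  show nn: "0 \<le> spec_norm M"
  proof -
    have "vnorm (M *\<^sub>v 0\<^sub>v n) \<le> spec_norm M" by (rule le_sup) (auto simp: vnorm_def)
    moreover have "0 \<le> vnorm (M *\<^sub>v 0\<^sub>v n)" unfolding vnorm_sum by (intro real_sqrt_ge_zero sum_nonneg) simp
    ultimately show ?thesis by linarith
  qed
  define N where "N = sqrt (\<Sum>i<n. (x i)\<^sup>2)"
  show "(\<Sum>i<n. (\<Sum>i'<n. M $$ (i,i') * x i')\<^sup>2) \<le> (spec_norm M)\<^sup>2 * (\<Sum>i<n. (x i)\<^sup>2)"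
  proof (cases "N = 0")
    case True
    then have "\<forall>i<n. x i = 0" unfolding N_def by (simp add: sum_nonneg_eq_0_iff)
    then show ?thesis by simp
  next
    case False
    then have Npos: "0 < N" unfolding N_def by (simp add: sum_nonneg order_le_neq_trans)
    define y where "y = vec n (\<lambda>i. x i / N)"
    have yc: "y \<in> carrier_vec n" unfolding y_def by simp
    have "vnorm y = sqrt ((\<Sum>i<n. (x i)\<^sup>2) / N\<^sup>2)"
      unfolding vnorm_sum y_def by (simp add: power_divide sum_divide_distrib)
    also have "\<dots> = 1" using Npos unfolding N_def by (simp add: sum_nonneg)
    finally have y1: "vnorm y = 1" .
    have My: "(M *\<^sub>v y) $ i = (\<Sum>i'<n. M $$ (i,i') * x i') / N" if "i<n" for i
    proof -
      have "(M *\<^sub>v y) $ i = (\<Sum>i'<n. M $$ (i,i') * y $ i')" by (rule Mv[OF that yc])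
      also have "\<dots> = (\<Sum>i'<n. M $$ (i,i') * x i') / N" by (simp add: y_def sum_divide_distrib)
      finally show ?thesis .
    qed
    have "vnorm (M *\<^sub>v y) = sqrt (\<Sum>i<n. ((M *\<^sub>v y) $ i)\<^sup>2)"
      unfolding vnorm_sum using M by simp
    also have "\<dots> = sqrt (\<Sum>i<n. (\<Sum>i'<n. M $$ (i,i') * x i')\<^sup>2 / N\<^sup>2)"
      by (simp add: My power_divide)
    also have "\<dots> = sqrt (\<Sum>i<n. (\<Sum>i'<n. M $$ (i,i') * x i')\<^sup>2) / N"
      using Npos by (simp add: sum_divide_distrib[symmetric] real_sqrt_divide)
    finally have "sqrt (\<Sum>i<n. (\<Sum>i'<n. M $$ (i,i') * x i')\<^sup>2) / N \<le> spec_norm M"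
      using le_sup[OF yc] y1 by simp
    then have "sqrt (\<Sum>i<n. (\<Sum>i'<n. M $$ (i,i') * x i')\<^sup>2) \<le> spec_norm M * N"
      using Npos by (simp add: pos_divide_le_eq)
    then have "(sqrt (\<Sum>i<n. (\<Sum>i'<n. M $$ (i,i') * x i')\<^sup>2))\<^sup>2 \<le> (spec_norm M * N)\<^sup>2"
      by (intro power_mono) (auto intro: sum_nonneg)
    then show ?thesis unfolding N_def by (simp add: power_mult_distrib sum_nonneg)
  qed
qed

lemma Pmat_idx: assumes T: "memb_mat n K T" and B: "B \<in> carrier_mat K K" and th: "th \<in> carrier_vec n"
  and i: "i<n" and i': "i'<n"
  shows "Pmat T B th $$ (i,i') = th $ i * th $ i' * B $$ (comm K T i, comm K T i')"
proof -
  have Tc: "T \<in> carrier_mat n K" using memb_carrier[OF T] .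
  have dth: "dim_vec th = n" using th by simp
  have s1: "(diagv th * T) $$ (a,k) = th $ a * T $$ (a,k)" if "a<n" "k<K" for a k
  proof -
    have "(diagv th * T) $$ (a,k) = (\<Sum>j<n. diagv th $$ (a,j) * T $$ (j,k))"
      using that Tc dth by (subst mult_idx) auto
    also have "\<dots> = (\<Sum>j<n. (if a = j then 1 else 0) * (th $ a * T $$ (j,k)))"
      using that dth by (intro sum.cong refl) (simp add: diagv_idx)
    also have "\<dots> = th $ a * T $$ (a,k)" using that by (simp add: delta_mult)
    finally show ?thesis .
  qed
  have s2: "(diagv th * T * B) $$ (a,l) = th $ a * B $$ (comm K T a, l)" if "a<n" "l<K" for a l
  proof -
    have "(diagv th * T * B) $$ (a,l) = (\<Sum>k<K. (diagv th * T) $$ (a,k) * B $$ (k,l))"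
      using that Tc dth B by (subst mult_idx) auto
    also have "\<dots> = (\<Sum>k<K. (if k = comm K T a then 1 else 0) * (th $ a * B $$ (k,l)))"
      using that by (intro sum.cong refl) (simp add: s1 memb_row(2)[OF T])
    also have "\<dots> = th $ a * B $$ (comm K T a, l)" using memb_row(1)[OF T that(1)] by (simp add: delta_mult)
    finally show ?thesis .
  qed
  have s3: "(diagv th * T * B * T\<^sup>T) $$ (a,b) = th $ a * B $$ (comm K T a, comm K T b)" if "a<n" "b<n" for a b
  proof -
    have "(diagv th * T * B * T\<^sup>T) $$ (a,b) = (\<Sum>l<K. (diagv th * T * B) $$ (a,l) * T\<^sup>T $$ (l,b))"
      using that Tc dth B by (subst mult_idx) auto
    also have "\<dots> = (\<Sum>l<K. (if l = comm K T b then 1 else 0) * (th $ a * B $$ (comm K T a, l)))"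
      using that Tc by (intro sum.cong refl) (simp add: s2 memb_row(2)[OF T] mult.commute)
    also have "\<dots> = th $ a * B $$ (comm K T a, comm K T b)" using memb_row(1)[OF T that(2)] by (simp add: delta_mult)
    finally show ?thesis .
  qed
  have "Pmat T B th $$ (i,i') = (\<Sum>j<n. (diagv th * T * B * T\<^sup>T) $$ (i,j) * diagv th $$ (j,i'))"
    unfolding Pmat_def using i i' Tc dth B by (subst mult_idx) auto
  also have "\<dots> = (\<Sum>j<n. (if j = i' then 1 else 0) * (th $ i * B $$ (comm K T i, comm K T j) * th $ j))"
    using i i' dth by (intro sum.cong refl) (auto simp: s3 diagv_idx)
  also have "\<dots> = th $ i * B $$ (comm K T i, comm K T i') * th $ i'" using i' by (simp add: delta_mult)
  also have "\<dots> = th $ i * th $ i' * B $$ (comm K T i, comm K T i')" by (simp add: mult_ac)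
  finally show ?thesis .
qed

lemma Pmat_carrier: assumes "memb_mat n K T" "B \<in> carrier_mat K K" "th \<in> carrier_vec n"
  shows "Pmat T B th \<in> carrier_mat n n"
  using assms memb_carrier[OF assms(1)] unfolding Pmat_def by auto

lemma wsw_idx: fixes W S :: "real mat" assumes W: "W \<in> carrier_mat m r" and S: "S \<in> carrier_mat r r" and dS: "diagonal_mat S"
  and i: "i<m" and i': "i'<m"
  shows "(W * S * W\<^sup>T) $$ (i,i') = (\<Sum>k<r. W $$ (i,k) * S $$ (k,k) * W $$ (i',k))"
proof -
  have s1: "(W * S) $$ (a,k) = W $$ (a,k) * S $$ (k,k)" if "a<m" "k<r" for a k
  proof -
    have "(W * S) $$ (a,k) = (\<Sum>j<r. W $$ (a,j) * S $$ (j,k))" using that W S by (subst mult_idx) auto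
    also have "\<dots> = (\<Sum>j<r. (if j = k then 1 else 0) * (W $$ (a,j) * S $$ (j,k)))"
      using dS S that unfolding diagonal_mat_def by (intro sum.cong refl) auto
    also have "\<dots> = W $$ (a,k) * S $$ (k,k)" using that by (simp add: delta_mult)
    finally show ?thesis .
  qed
  have "(W * S * W\<^sup>T) $$ (i,i') = (\<Sum>k<r. (W * S) $$ (i,k) * W\<^sup>T $$ (k,i'))"
    using i i' W S by (subst mult_idx) auto
  also have "\<dots> = (\<Sum>k<r. W $$ (i,k) * S $$ (k,k) * W $$ (i',k))"
    using i i' W by (intro sum.cong refl) (simp add: s1)
  finally show ?thesis .
qed

lemma eig_idx: fixes W S :: "real mat" assumes "eig_decomp m r M W S" "i<m" "i'<m"
  shows "M $$ (i,i') = (\<Sum>k<r. W $$ (i,k) * S $$ (k,k) * W $$ (i',k))"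
proof -
  have W: "W \<in> carrier_mat m r" and S: "S \<in> carrier_mat r r" and dS: "diagonal_mat S"
    and M: "M = W * S * W\<^sup>T" using assms(1) unfolding eig_decomp_def by auto
  show ?thesis unfolding M by (rule wsw_idx[OF W S dS assms(2,3)])
qed

lemma orth_cols: fixes W :: "real mat" assumes W: "W \<in> carrier_mat m r" and WW: "W\<^sup>T * W = 1\<^sub>m r" and k: "k<r" and l: "l<r"
  shows "(\<Sum>i<m. W $$ (i,k) * W $$ (i,l)) = (if k = l then 1 else 0)"
proof -
  have "(W\<^sup>T * W) $$ (k,l) = (\<Sum>i<m. W\<^sup>T $$ (k,i) * W $$ (i,l))" using W k l by (subst mult_idx) auto
  also have "\<dots> = (\<Sum>i<m. W $$ (i,k) * W $$ (i,l))" using W k by (intro sum.cong refl) auto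
  finally show ?thesis using WW k l by simp
qed

lemma orth_rows: fixes W :: "real mat" assumes W: "W \<in> carrier_mat m m" and WW: "W\<^sup>T * W = 1\<^sub>m m" and i: "i<m" and i': "i'<m"
  shows "(\<Sum>j<m. W $$ (i,j) * W $$ (i',j)) = (if i = i' then 1 else 0)"
proof -
  have WW': "W * W\<^sup>T = 1\<^sub>m m" using mat_mult_left_right_inverse[of "W\<^sup>T" m W] W WW by simp
  have "(W * W\<^sup>T) $$ (i,i') = (\<Sum>j<m. W $$ (i,j) * W\<^sup>T $$ (j,i'))" using W i i' by (subst mult_idx) auto
  also have "\<dots> = (\<Sum>j<m. W $$ (i,j) * W $$ (i',j))" using W i' by (intro sum.cong refl) auto
  finally show ?thesis using WW' i i' by simp
qed

lemma top_idx: assumes "top_eigvecs n K' At Uh"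
  obtains V lam where "V \<in> carrier_mat n n" "V\<^sup>T * V = 1\<^sub>m n"
    "\<And>i i'. i<n \<Longrightarrow> i'<n \<Longrightarrow> At $$ (i,i') = (\<Sum>j<n. V $$ (i,j) * lam j * V $$ (i',j))"
    "\<And>i j. i \<le> j \<Longrightarrow> j < n \<Longrightarrow> \<bar>lam j\<bar> \<le> \<bar>lam i\<bar>"
    "Uh = mat n K' (\<lambda>(i,j). V $$ (i,j))" "At \<in> carrier_mat n n"
proof -
  obtain V lam where V: "V \<in> carrier_mat n n" "V\<^sup>T * V = 1\<^sub>m n"
    and At: "At = V * diagv (vec n lam) * V\<^sup>T" and srt: "\<And>i j. i \<le> j \<Longrightarrow> j < n \<Longrightarrow> \<bar>lam j\<bar> \<le> \<bar>lam i\<bar>"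
    and Uh: "Uh = mat n K' (\<lambda>(i,j). V $$ (i,j))"
    using assms unfolding top_eigvecs_def by blast
  have dg: "diagonal_mat (diagv (vec n lam))" unfolding diagonal_mat_def diagv_def by simp
  have At_idx: "At $$ (i,i') = (\<Sum>j<n. V $$ (i,j) * lam j * V $$ (i',j))" if "i<n" "i'<n" for i i'
  proof -
    have "At $$ (i,i') = (\<Sum>k<n. V $$ (i,k) * diagv (vec n lam) $$ (k,k) * V $$ (i',k))"
      unfolding At by (rule wsw_idx[OF V(1) _ dg that]) (simp add: diagv_def)
    also have "\<dots> = (\<Sum>j<n. V $$ (i,j) * lam j * V $$ (i',j))"
      by (intro sum.cong refl) (simp add: diagv_def)
    finally show ?thesis .
  qed
  have "At \<in> carrier_mat n n" using V(1) by (intro carrier_matI) (auto simp: At)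
  then show ?thesis using that[OF V At_idx srt Uh] by blast
qed

lemma Gset_eq: "memb_mat n K T \<Longrightarrow> Gset T k = {i. i<n \<and> T $$ (i,k) = 1}"
  unfolding Gset_def using memb_carrier by (metis carrier_matD(1))

lemma Gset_comm: assumes T: "memb_mat n K T" and k: "k<K" shows "Gset T k = {i. i<n \<and> comm K T i = k}"
  unfolding Gset_eq[OF T] using memb_row[OF T] k by (auto split: if_splits)

lemma recovery_from_perm:
  assumes T: "memb_mat n K T" and Tt: "memb_mat n K Tt"
  and S: "S \<subseteq> {..<n}" and \<sigma>: "\<sigma> permutes {..<K}"
  and agree: "\<And>i. i<n \<Longrightarrow> i \<notin> S \<Longrightarrow> \<sigma> (comm K Tt i) = comm K T i"
  and Gpos: "\<And>k. k<K \<Longrightarrow> 1 \<le> card (Gset T k)" and K1: "1 \<le> K"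
  shows "recovery K T Tt (real (card S) / min_nk K T)"
proof -
  define g where "g i = comm K T i" for i
  define t where "t i = comm K Tt i" for i
  define J where "J = perm_mat_of K \<sigma>"
  define S' where "S' k = S \<inter> Gset T k" for k
  have Tc: "T \<in> carrier_mat n K" and Ttc: "Tt \<in> carrier_mat n K" using memb_carrier T Tt by auto
  have Jc: "J \<in> carrier_mat K K" unfolding J_def perm_mat_of_def by simp
  have JK: "J \<in> perm_mats K" unfolding J_def perm_mats_def using \<sigma> by simp
  have t_lt: "t i < K" if "i<n" for i using memb_row(1)[OF Tt that] t_def by simp
  have g_lt: "g i < K" if "i<n" for i using memb_row(1)[OF T that] g_def by simp
  have TJ: "(Tt * J) $$ (i,j) = (if \<sigma> (t i) = j then 1 else 0)" if "i<n" "j<K" for i j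
    using memb_mult[OF Tt Jc that] t_lt[OF that(1)] that(2) by (simp add: J_def perm_mat_of_def t_def)
  have Tij: "T $$ (i,j) = (if g i = j then 1 else 0)" if "i<n" "j<K" for i j
    using memb_row(2)[OF T that(1) that(2)] g_def by auto
  have Mij: "(Tt * J - T) $$ (i,j) = (if \<sigma> (t i) = j then 1 else 0) - (if g i = j then 1 else 0)" if "i<n" "j<K" for i j
    using that Ttc Jc Tc by (simp add: TJ Tij del: index_mult_mat)
  have good0: "(Tt * J - T) $$ (i,j) = 0" if "i<n" "j<K" "i \<notin> S" for i j
    using Mij[OF that(1,2)] agree[OF that(1,3)] by (simp add: t_def g_def)
  have dimM: "dim_row (Tt * J - T) = n" "dim_col (Tt * J - T) = K" using Ttc Jc Tc by auto
  have rows: "row (Tt * J) i = row T i" if "i \<in> (\<Union>k<K. Gset T k - S' k)" for i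
  proof -
    from that obtain k where k: "k<K" "i \<in> Gset T k" "i \<notin> S'  k" by auto
    then have i: "i<n" "i \<notin> S" using Gset_eq[OF T] by (auto simp: S'_def)
    show ?thesis
    proof (rule eq_vecI)
      show "dim_vec (row (Tt * J) i) = dim_vec (row T i)" using Jc Tc by simp
      fix j assume "j < dim_vec (row T i)"
      then have j: "j<K" using Tc by simp
      have "(Tt * J) $$ (i,j) = T $$ (i,j)" using TJ[OF i(1) j] Tij[OF i(1) j] agree[OF i] by (simp add: t_def g_def)
      moreover have "row (Tt * J) i $ j = (Tt * J) $$ (i,j)" using i j Ttc Jc by (intro index_row(1)) auto
      moreover have "row T i $ j = T $$ (i,j)" using i j Tc by (intro index_row(1)) auto
      ultimately show "row (Tt * J) i $ j = row T i $ j" by simp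
    qed
  qed
  define mn where "mn = min_nk K T"
  have mn_le: "mn \<le> real (card (Gset T k))" if "k<K" for k
    unfolding mn_def min_nk_def using that by (intro of_nat_mono Min_le) auto
  have mn_pos: "0 < mn"
  proof -
    have "Min ((\<lambda>k. card (Gset T k)) ` {..<K}) \<in> (\<lambda>k. card (Gset T k)) ` {..<K}"
    proof (intro Min_in)
      show "(\<lambda>k. card (Gset T k)) ` {..<K} \<noteq> {}" using K1 by (simp add: lessThan_empty_iff)
    qed simp
    then obtain k where k: "k<K" "Min ((\<lambda>k. card (Gset T k)) ` {..<K}) = card (Gset T k)" by auto
    have "1 \<le> card (Gset T k)" using Gpos[OF k(1)] .
    then show ?thesis unfolding mn_def min_nk_def k(2) by simp
  qed
  have Sdecomp: "S = (\<Union>k\<in>{..<K}. S' k)"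
    using S g_lt Gset_comm[OF T] by (auto simp: S'_def g_def)
  have cardS: "card S = (\<Sum>k<K. card (S' k))"
  proof -
    have "card (\<Union>k\<in>{..<K}. S' k) = (\<Sum>k<K. card (S' k))"
      by (rule card_UN_disjoint) (use S Gset_comm[OF T] in \<open>auto simp: S'_def intro: finite_subset\<close>)
    then show ?thesis using Sdecomp by simp
  qed
  define Sig where "Sig = (\<Sum>k<K. real (card (S' k)) / real (card (Gset T k)))"
  have Sig_le: "Sig \<le> real (card S) / mn"
  proof -
    have "Sig \<le> (\<Sum>k<K. real (card (S' k)) / mn)"
      unfolding Sig_def
    proof (intro sum_mono divide_left_mono)
      fix k assume k: "k \<in> {..<K}"
      show "mn \<le> real (card (Gset T k))" using mn_le k by simp
      have "0 < real (card (Gset T k))" using mn_le[of k] mn_pos k by simp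
      then show "0 < real (card (Gset T k)) * mn" using mn_pos by simp
    qed simp
    also have "\<dots> = real (card S) / mn" by (simp add: cardS sum_divide_distrib)
    finally show ?thesis .
  qed
  have l0: "l0_rows (Tt * J - T) (Gset T k) \<le> 2 * card (S' k)" for k
  proof -
    have "{(i,j). i \<in> Gset T k \<and> i < dim_row (Tt * J - T) \<and> j < dim_col (Tt * J - T) \<and> (Tt * J - T) $$ (i,j) \<noteq> 0}
       \<subseteq> (\<lambda>i. (i, \<sigma> (t i))) ` S' k \<union> (\<lambda>i. (i, g i)) ` S' k"
    proof
      fix p assume "p \<in> {(i,j). i \<in> Gset T k \<and> i < dim_row (Tt * J - T) \<and> j < dim_col (Tt * J - T) \<and> (Tt * J - T) $$ (i,j) \<noteq> 0}"
      then obtain i j where p: "p = (i,j)" "i \<in> Gset T k" "i<n" "j<K" "(Tt * J - T) $$ (i,j) \<noteq> 0"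
        using dimM by auto
      have iS: "i \<in> S" using good0[OF p(3,4)] p(5) by blast
      have "j = \<sigma> (t i) \<or> j = g i" using Mij[OF p(3,4)] p(5) by (auto split: if_splits)
      then show "p \<in> (\<lambda>i. (i, \<sigma> (t i))) ` S' k \<union> (\<lambda>i. (i, g i)) ` S' k"
        using iS p by (auto simp: S'_def)
    qed
    moreover have "finite (S' k)" using S by (auto simp: S'_def intro: finite_subset)
    ultimately have "l0_rows (Tt * J - T) (Gset T k) \<le> card ((\<lambda>i. (i, \<sigma> (t i))) ` S' k \<union> (\<lambda>i. (i, g i)) ` S' k)"
      unfolding l0_rows_def by (intro card_mono) auto
    also have "\<dots> \<le> card ((\<lambda>i. (i, \<sigma> (t i))) ` S' k) + card ((\<lambda>i. (i, g i)) ` S' k)" by (rule card_Un_le)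
    also have "\<dots> \<le> card (S' k) + card (S' k)" by (intro add_mono card_image_le) (use \<open>finite (S' k)\<close> in auto)
    finally show ?thesis by simp
  qed
  have finP: "finite (perm_mats K)" unfolding perm_mats_def by (intro finite_imageI finite_permutations) simp
  have "L1_loss K Tt T \<le> (\<Sum>k<K. real (l0_rows (Tt * J - T) (Gset T k)) / (2 * real (card (Gset T k))))"
    unfolding L1_loss_def by (rule Min_le) (use finP JK in auto)
  also have "\<dots> \<le> Sig"
    unfolding Sig_def
  proof (rule sum_mono)
    fix k assume k: "k \<in> {..<K}"
    have "1 \<le> card (Gset T k)" using Gpos k by simp
    then have cpos: "0 < real (card (Gset T k))" by simp
    have "real (l0_rows (Tt * J - T) (Gset T k)) \<le> 2 * real (card (S' k))" using l0[of k] by linarith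
    then show "real (l0_rows (Tt * J - T) (Gset T k)) / (2 * real (card (Gset T k))) \<le> real (card (S' k)) / real (card (Gset T k))"
      using cpos by (simp add: field_simps)
  qed
  finally have L1: "L1_loss K Tt T \<le> Sig" .
  show ?thesis unfolding recovery_def
  proof (intro exI[of _ S'] conjI)
    show "\<forall>k<K. S' k \<subseteq> Gset T k" by (auto simp: S'_def)
    show "L1_loss K Tt T \<le> (\<Sum>k<K. real (card (S' k)) / real (card (Gset T k)))" using L1 Sig_def by simp
    show "(\<Sum>k<K. real (card (S' k)) / real (card (Gset T k))) \<le> real (card S) / min_nk K T" using Sig_le Sig_def mn_def by simp
    show "\<exists>J\<in>perm_mats K. \<forall>i\<in>\<Union>k<K. Gset T k - S' k. row (Tt * J) i = row T i" using JK rows by blast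
  qed
qed

lemma recovery_mono: "recovery K T Tt b \<Longrightarrow> b \<le> b' \<Longrightarrow> recovery K T Tt b'"
  unfolding recovery_def by (meson order_trans)

lemma K_le_n: assumes T: "memb_mat n K T" and G: "\<And>k. k<K \<Longrightarrow> 1 \<le> card (Gset T k)" shows "K \<le> n"
proof -
  have ex: "\<exists>i. i \<in> Gset T k" if "k<K" for k using G[OF that] by (metis card.empty ex_in_conv not_one_le_zero)
  define f where "f k = (SOME i. i \<in> Gset T k)" for k
  have f: "f k \<in> Gset T k" if "k<K" for k using someI_ex[OF ex[OF that]] f_def by simp
  have "inj_on f {..<K}"
  proof (rule inj_onI)
    fix k l assume "k \<in> {..<K}" "l \<in> {..<K}" "f k = f l"
    then show "k = l" using f[of k] f[of l] Gset_comm[OF T] by auto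
  qed
  moreover have "f ` {..<K} \<subseteq> {..<n}" using f Gset_comm[OF T] by auto
  ultimately show ?thesis using card_inj_on_le[of f "{..<K}" "{..<n}"] by simp
qed

lemma row_norm_idx: assumes "i<n" "j<K'"
  shows "row_normalize (mat n K' (\<lambda>(i,j). V $$ (i,j))) $$ (i,j)
     = (if L2_set (\<lambda>j. V $$ (i,j)) {..<K'} = 0 then V $$ (i,j) else V $$ (i,j) / L2_set (\<lambda>j. V $$ (i,j)) {..<K'})"
proof -
  have "vnorm (row (mat n K' (\<lambda>(i,j). V $$ (i,j))) i) = L2_set (\<lambda>j. V $$ (i,j)) {..<K'}"
    unfolding vnorm_sum L2_set_def using assms by simp
  then show ?thesis unfolding row_normalize_def using assms by simp
qed

lemma setup_main:
  assumes dc: "dcsbm n K K' T B th" and ed: "eig_decomp n K' (Pmat T B th) U Sig"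
  and rs: "rssc_output n K K' At Tt" and K1: "1 \<le> K'"
  obtains V lam Xm where
    "dcm n K' (\<lambda>i j. V $$ (i,j)) lam (\<lambda>i k. U $$ (i,k)) (\<lambda>k. Sig $$ (k,k)) (\<lambda>i i'. At $$ (i,i'))
        (\<lambda>i i'. Pmat T B th $$ (i,i')) (spec_norm (At - Pmat T B th)) (gamma_n K' Sig) K (comm K T) (\<lambda>i. th $ i) (\<lambda>m l. B $$ (m,l))"
    "memb_mat n K Tt" "\<And>i. i<n \<Longrightarrow> comm K Tt i < K"
    "\<And>Zf. (\<Sum>i<n. \<Sum>j<K'. (Xm $$ (comm K Tt i, j) - (if L2_set (\<lambda>j. V $$ (i,j)) {..<K'} = 0 then V $$ (i,j) else V $$ (i,j) / L2_set (\<lambda>j. V $$ (i,j)) {..<K'}))\<^sup>2)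
        \<le> (\<Sum>i<n. \<Sum>j<K'. (Zf (comm K T i) j - (if L2_set (\<lambda>j. V $$ (i,j)) {..<K'} = 0 then V $$ (i,j) else V $$ (i,j) / L2_set (\<lambda>j. V $$ (i,j)) {..<K'}))\<^sup>2)"
proof -
  note dcd = dc[unfolded dcsbm_def]
  have K1K: "1 \<le> K" and T: "memb_mat n K T" and Gpos: "\<And>k. k<K \<Longrightarrow> 1 \<le> card (Gset T k)"
    and B: "B \<in> carrier_mat K K" and KK: "K' \<le> K" and th: "th \<in> carrier_vec n"
    and thpos: "\<And>i. i<n \<Longrightarrow> 0 < th $ i" using dcd by auto
  have Kn: "K' \<le> n" using K_le_n[OF T Gpos] KK by simp
  define P where "P = Pmat T B th"
  have Pc: "P \<in> carrier_mat n n" unfolding P_def by (rule Pmat_carrier[OF T B th])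
  obtain Uh Xm where top: "top_eigvecs n K' At Uh" and km: "kmeans_sol n K K' (row_normalize Uh) Tt Xm"
    using rs unfolding rssc_output_def by blast
  obtain V lam where V: "V \<in> carrier_mat n n" "V\<^sup>T * V = 1\<^sub>m n"
    and Atidx: "\<And>i i'. i<n \<Longrightarrow> i'<n \<Longrightarrow> At $$ (i,i') = (\<Sum>j<n. V $$ (i,j) * lam j * V $$ (i',j))"
    and srt: "\<And>i j. i \<le> j \<Longrightarrow> j < n \<Longrightarrow> \<bar>lam j\<bar> \<le> \<bar>lam i\<bar>"
    and Uh: "Uh = mat n K' (\<lambda>(i,j). V $$ (i,j))" and Atc: "At \<in> carrier_mat n n"
    using top_idx[OF top] by blast
  have Uc: "U \<in> carrier_mat n K'" and UU: "U\<^sup>T * U = 1\<^sub>m K'" and Sc: "Sig \<in> carrier_mat K' K'"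
    and Snz: "\<And>i. i<K' \<Longrightarrow> Sig $$ (i,i) \<noteq> 0"
    using ed unfolding eig_decomp_def by auto
  define gam where "gam = gamma_n K' Sig"
  have ne: "(\<lambda>i. \<bar>Sig $$ (i,i)\<bar>) ` {..<K'} \<noteq> {}" using K1 by (simp add: lessThan_empty_iff)
  have gam_le: "gam \<le> \<bar>Sig $$ (k,k)\<bar>" if "k<K'" for k
    unfolding gam_def gamma_n_def using that by (intro Min_le) auto
  have gam_pos: "0 < gam"
  proof -
    have "gam \<in> (\<lambda>i. \<bar>Sig $$ (i,i)\<bar>) ` {..<K'}" unfolding gam_def gamma_n_def by (rule Min_in) (use ne in auto)
    then show ?thesis using Snz by auto
  qed
  define e where "e = spec_norm (At - P)"
  have AP: "At - P \<in> carrier_mat n n" using Atc Pc by (intro minus_carrier_mat)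
  have Ebound: "(\<Sum>i<n. (\<Sum>i'<n. (At $$ (i,i') - P $$ (i,i')) * x i')\<^sup>2) \<le> e\<^sup>2 * (\<Sum>i<n. (x i)\<^sup>2)" for x
  proof -
    have "(\<Sum>i<n. (\<Sum>i'<n. (At $$ (i,i') - P $$ (i,i')) * x i')\<^sup>2) = (\<Sum>i<n. (\<Sum>i'<n. (At - P) $$ (i,i') * x i')\<^sup>2)"
      using Atc Pc by (intro sum.cong refl) auto
    also have "\<dots> \<le> e\<^sup>2 * (\<Sum>i<n. (x i)\<^sup>2)" unfolding e_def by (rule spec_fun(1)[OF AP])
    finally show ?thesis .
  qed
  have sp: "spec n K' (\<lambda>i j. V $$ (i,j)) lam (\<lambda>i k. U $$ (i,k)) (\<lambda>k. Sig $$ (k,k)) (\<lambda>i i'. At $$ (i,i'))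
        (\<lambda>i i'. P $$ (i,i')) e gam"
  proof (unfold_locales)
    show "K' \<le> n" by (rule Kn)
    show "\<And>j j'. j < n \<Longrightarrow> j' < n \<Longrightarrow> (\<Sum>i<n. V $$ (i, j) * V $$ (i, j')) = (if j = j' then 1 else 0)"
      by (rule orth_cols[OF V])
    show "\<And>i i'. i < n \<Longrightarrow> i' < n \<Longrightarrow> (\<Sum>j<n. V $$ (i, j) * V $$ (i', j)) = (if i = i' then 1 else 0)"
      by (rule orth_rows[OF V])
    show "\<And>i j. i \<le> j \<Longrightarrow> j < n \<Longrightarrow> \<bar>lam j\<bar> \<le> \<bar>lam i\<bar>" by (rule srt)
    show "\<And>i i'. i < n \<Longrightarrow> i' < n \<Longrightarrow> At $$ (i, i') = (\<Sum>j<n. V $$ (i, j) * lam j * V $$ (i', j))" by (rule Atidx)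
    show "\<And>k l. k < K' \<Longrightarrow> l < K' \<Longrightarrow> (\<Sum>i<n. U $$ (i, k) * U $$ (i, l)) = (if k = l then 1 else 0)"
      by (rule orth_cols[OF Uc UU])
    show "\<And>k. k < K' \<Longrightarrow> gam \<le> \<bar>Sig $$ (k, k)\<bar>" by (rule gam_le)
    show "0 < gam" by (rule gam_pos)
    show "\<And>i i'. i < n \<Longrightarrow> i' < n \<Longrightarrow> P $$ (i, i') = (\<Sum>k<K'. U $$ (i, k) * Sig $$ (k, k) * U $$ (i', k))"
      unfolding P_def by (rule eig_idx[OF ed])
    show "\<And>x. (\<Sum>i<n. (\<Sum>i'<n. (At $$ (i, i') - P $$ (i, i')) * x i')\<^sup>2) \<le> e\<^sup>2 * (\<Sum>i<n. (x i)\<^sup>2)" by (rule Ebound)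
    show "0 \<le> e" unfolding e_def by (rule spec_fun(2)[OF AP])
  qed
  have dm: "dcm n K' (\<lambda>i j. V $$ (i,j)) lam (\<lambda>i k. U $$ (i,k)) (\<lambda>k. Sig $$ (k,k)) (\<lambda>i i'. At $$ (i,i'))
        (\<lambda>i i'. P $$ (i,i')) e gam K (comm K T) (\<lambda>i. th $ i) (\<lambda>m l. B $$ (m,l))"
    unfolding dcm_def dcm_axioms_def
  proof (intro conjI sp allI impI)
    show "\<And>i. i < n \<Longrightarrow> comm K T i < K" by (rule memb_row(1)[OF T])
    show "\<And>i. i < n \<Longrightarrow> 0 < th $ i" by (rule thpos)
    show "\<And>m. m < K \<Longrightarrow> \<exists>i<n. comm K T i = m"
    proof -
      fix m assume m: "m<K"
      have "Gset T m \<noteq> {}" using Gpos[OF m] by auto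
      then show "\<exists>i<n. comm K T i = m" using Gset_comm[OF T m] by auto
    qed
    show "\<And>i i'. i < n \<Longrightarrow> i' < n \<Longrightarrow> P $$ (i, i') = th $ i * th $ i' * B $$ (comm K T i, comm K T i')"
      unfolding P_def by (rule Pmat_idx[OF T B th])
  qed
  have Ttm: "memb_mat n K Tt" and Xmc: "Xm \<in> carrier_mat K K'"
    and opt: "\<And>T' X'. memb_mat n K T' \<Longrightarrow> X' \<in> carrier_mat K K' \<Longrightarrow>
        frob_sq (Tt * Xm - row_normalize Uh) \<le> frob_sq (T' * X' - row_normalize Uh)"
    using km unfolding kmeans_sol_def by auto
  define Yf where "Yf i j = (if L2_set (\<lambda>j. V $$ (i,j)) {..<K'} = 0 then V $$ (i,j) else V $$ (i,j) / L2_set (\<lambda>j. V $$ (i,j)) {..<K'})" for i j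
  have Yc: "row_normalize Uh \<in> carrier_mat n K'" unfolding Uh row_normalize_def by simp
  have Yidx: "row_normalize Uh $$ (i,j) = Yf i j" if "i<n" "j<K'" for i j
    unfolding Uh Yf_def by (rule row_norm_idx[OF that])
  have optf: "(\<Sum>i<n. \<Sum>j<K'. (Xm $$ (comm K Tt i, j) - Yf i j)\<^sup>2) \<le> (\<Sum>i<n. \<Sum>j<K'. (Zf (comm K T i) j - Yf i j)\<^sup>2)" for Zf
  proof -
    define Zm where "Zm = mat K K' (\<lambda>(m,j). Zf m j)"
    have Zc: "Zm \<in> carrier_mat K K'" unfolding Zm_def by simp
    have "(\<Sum>i<n. \<Sum>j<K'. (Xm $$ (comm K Tt i, j) - Yf i j)\<^sup>2) = frob_sq (Tt * Xm - row_normalize Uh)"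
      unfolding frob_memb[OF Ttm Xmc Yc] by (intro sum.cong refl) (simp add: Yidx)
    also have "\<dots> \<le> frob_sq (T * Zm - row_normalize Uh)" by (rule opt[OF T Zc])
    also have "\<dots> = (\<Sum>i<n. \<Sum>j<K'. (Zf (comm K T i) j - Yf i j)\<^sup>2)"
      unfolding frob_memb[OF T Zc Yc] using memb_row(1)[OF T] by (intro sum.cong refl) (simp add: Yidx Zm_def)
    finally show ?thesis .
  qed
  show ?thesis
    using that[OF dm[unfolded P_def e_def gam_def] Ttm memb_row(1)[OF Ttm] optf[unfolded Yf_def]] by blast
qed

context dcm begin

lemma group_d: "(\<Sum>i<n. (tt i)\<^sup>2 * f (g i)) = (\<Sum>m<K. f m)"
proof -
  have "(\<Sum>i<n. (tt i)\<^sup>2 * f (g i)) = (\<Sum>m<K. \<Sum>i\<in>{x. x \<in> {..<n} \<and> g x = m}. (tt i)\<^sup>2 * f (g i))"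
    by (rule sum.group[symmetric]) (auto simp: g_lt)
  also have "\<dots> = (\<Sum>m<K. f m)"
  proof (intro sum.cong refl)
    fix m assume m: "m \<in> {..<K}"
    have "(\<Sum>i\<in>{x. x \<in> {..<n} \<and> g x = m}. (tt i)\<^sup>2 * f (g i)) = (\<Sum>i\<in>{i. i<n \<and> g i = m}. (tt i)\<^sup>2 * f m)"
      by (intro sum.cong) auto
    also have "\<dots> = f m * (\<Sum>i\<in>{i. i<n \<and> g i = m}. (tt i)\<^sup>2)"
      by (simp add: sum_distrib_left mult.commute)
    finally show "(\<Sum>i\<in>{x. x \<in> {..<n} \<and> g x = m}. (tt i)\<^sup>2 * f (g i)) = f m" using m tt_norm by simp
  qed
  finally show ?thesis .
qed

lemma Corth_d: assumes "k<K'" "l<K'" shows "(\<Sum>m<K. c m k * c m l) = (if k = l then 1 else 0)"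
proof -
  have "(\<Sum>i<n. U i k * U i l) = (\<Sum>i<n. (tt i)\<^sup>2 * (c (g i) k * c (g i) l))"
    using assms by (intro sum.cong refl) (simp add: U_fac power2_eq_square mult_ac)
  also have "\<dots> = (\<Sum>m<K. c m k * c m l)" by (rule group_d)
  finally show ?thesis using Ucol[OF assms] by simp
qed

lemma c_norm_le1: assumes m: "m<K" shows "(\<Sum>k<K'. (c m k)\<^sup>2) \<le> 1"
proof -
  define a where "a = (\<Sum>k<K'. (c m k)\<^sup>2)"
  have "(\<Sum>l<K. (\<Sum>k<K'. c l k * c m k)\<^sup>2) = (\<Sum>k<K'. (c m k)\<^sup>2)"
    by (rule parseval_gen[where V="\<lambda>i j. c j i"]) (simp add: Corth_d)
  moreover have "(\<Sum>k<K'. c m k * c m k)\<^sup>2 \<le> (\<Sum>l<K. (\<Sum>k<K'. c l k * c m k)\<^sup>2)"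
    using m by (intro member_le_sum[where f="\<lambda>l. (\<Sum>k<K'. c l k * c m k)\<^sup>2"]) auto
  ultimately have "a\<^sup>2 \<le> a" unfolding a_def by (simp add: power2_eq_square)
  moreover have "0 \<le> a" unfolding a_def by (simp add: sum_nonneg)
  ultimately have aa: "a * a \<le> a" "0 \<le> a" by (simp_all add: power2_eq_square)
  have "a \<le> 1"
  proof (rule ccontr)
    assume "\<not> a \<le> 1"
    then have "a * 1 < a * a" using aa(2) by (intro mult_strict_left_mono) auto
    then show False using aa(1) by simp
  qed
  then show ?thesis unfolding a_def .
qed

lemma dcm_final:
  fixes t :: "nat \<Rightarrow> nat" and Xc :: "nat \<Rightarrow> nat \<Rightarrow> real" and r dd :: real
  assumes opt: "\<And>Zf. (\<Sum>i<n. \<Sum>j<K'. (Xc (t i) j - (if L2_set (\<lambda>j. V i j) {..<K'} = 0 then V i j else V i j / L2_set (\<lambda>j. V i j) {..<K'}))\<^sup>2)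
        \<le> (\<Sum>i<n. \<Sum>j<K'. (Zf (g i) j - (if L2_set (\<lambda>j. V i j) {..<K'} = 0 then V i j else V i j / L2_set (\<lambda>j. V i j) {..<K'}))\<^sup>2)"
  and t_lt: "\<And>i. i<n \<Longrightarrow> t i < K"
  and cpos: "\<And>m. m<K \<Longrightarrow> 0 < (\<Sum>k<K'. (c m k)\<^sup>2)"
  and r_pos: "0 < r" and r_le: "\<And>i. i<n \<Longrightarrow> r \<le> (tt i)\<^sup>2 * (\<Sum>k<K'. (c (g i) k)\<^sup>2)"
  and dsep: "\<And>m l. m<K \<Longrightarrow> l<K \<Longrightarrow> m\<noteq>l \<Longrightarrow>
      dd \<le> (\<Sum>k<K'. (c m k / sqrt (\<Sum>k<K'. (c m k)\<^sup>2) - c l k / sqrt (\<Sum>k<K'. (c l k)\<^sup>2))\<^sup>2)"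
  and dd: "0 < dd"
  and gam_small: "real K' * e\<^sup>2 / gam\<^sup>2 \<le> 1/8"
  and esmall: "real (K'+1) * e\<^sup>2 \<le> gam\<^sup>2/4"
  and small: "\<And>m. m<K \<Longrightarrow> 1280 * real K' * e\<^sup>2 / (gam\<^sup>2 * r * dd) < real (card {i. i<n \<and> g i = m})"
  shows "\<exists>S \<sigma>. S \<subseteq> {..<n} \<and> real (card S) \<le> 1280 * real K' * e\<^sup>2 / (gam\<^sup>2 * r * dd) \<and> \<sigma> permutes {..<K}
            \<and> (\<forall>i<n. i \<notin> S \<longrightarrow> \<sigma> (t i) = g i)"
proof -
  interpret cl: clus n K' V lam U s At P e gam K g tt c r
    by unfold_locales (auto simp: g_lt U_fac tt_norm tt_pos cpos r_pos r_le)
  show ?thesis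
  proof (rule cl.clus_main[OF _ t_lt _ dd gam_small esmall small])
    show "(\<Sum>i<n. \<Sum>j<K'. (Xc (t i) j - cl.ynorm i j)\<^sup>2) \<le> (\<Sum>i<n. \<Sum>j<K'. (cl.z (g i) j - cl.ynorm i j)\<^sup>2)"
      unfolding cl.ynorm_def by (rule opt)
    show "\<And>m l. m < K \<Longrightarrow> l < K \<Longrightarrow> m \<noteq> l \<Longrightarrow> dd \<le> (\<Sum>k<K'. (cl.h m k - cl.h l k)\<^sup>2)"
      unfolding cl.h_def cl.cn_def by (rule dsep)
  qed auto
qed

end

lemma vnorm_phi: assumes T: "memb_mat n K T" and th: "th \<in> carrier_vec n" and m: "m<K"
  shows "vnorm (phi T th m) = sqrt (\<Sum>i\<in>{i. i<n \<and> comm K T i = m}. (th $ i)\<^sup>2)"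
proof -
  have "vnorm (phi T th m) = sqrt (\<Sum>i<n. (if i \<in> Gset T m then th $ i else 0)\<^sup>2)"
    unfolding vnorm_sum phi_def using th by simp
  also have "(\<Sum>i<n. (if i \<in> Gset T m then th $ i else 0)\<^sup>2) = (\<Sum>i<n. if i \<in> Gset T m then (th $ i)\<^sup>2 else 0)"
    by (intro sum.cong refl) auto
  also have "\<dots> = (\<Sum>i\<in>{..<n} \<inter> Gset T m. (th $ i)\<^sup>2)" by (rule sum.inter_restrict[symmetric]) simp
  also have "{..<n} \<inter> Gset T m = {i. i<n \<and> comm K T i = m}" using Gset_comm[OF T m] by auto
  finally show ?thesis .
qed

lemma tt_idx: assumes "i < dim_vec th"
  shows "theta_tilde K T th $ i = th $ i / vnorm (phi T th (comm K T i))"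
  unfolding theta_tilde_def using assms by simp

lemma Bbar_idx: assumes B: "B \<in> carrier_mat K K" and m: "m<K" and l: "l<K"
  shows "Bbar K T B th $$ (m,l) = vnorm (phi T th m) * B $$ (m,l) * vnorm (phi T th l)"
proof -
  define Om where "Om = Omega_mat K T th"
  have Omc: "Om \<in> carrier_mat K K" unfolding Om_def Omega_mat_def diagv_def by simp
  have Omi: "Om $$ (a,b) = (if a = b then vnorm (phi T th a) else 0)" if "a<K" "b<K" for a b
    unfolding Om_def Omega_mat_def diagv_def using that by simp
  have s1: "(Om * B) $$ (a,b) = vnorm (phi T th a) * B $$ (a,b)" if "a<K" "b<K" for a b
  proof -
    have "(Om * B) $$ (a,b) = (\<Sum>k<K. Om $$ (a,k) * B $$ (k,b))" using Omc B that by (subst mult_idx) auto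
    also have "\<dots> = (\<Sum>k<K. (if a = k then 1 else 0) * (vnorm (phi T th a) * B $$ (k,b)))"
      using that by (intro sum.cong refl) (simp add: Omi)
    also have "\<dots> = vnorm (phi T th a) * B $$ (a,b)" using that by (simp add: delta_mult)
    finally show ?thesis .
  qed
  have "Bbar K T B th $$ (m,l) = (\<Sum>k<K. (Om * B) $$ (m,k) * Om $$ (k,l))"
    unfolding Bbar_def Om_def[symmetric] using Omc B m l by (subst mult_idx) auto
  also have "\<dots> = (\<Sum>k<K. (if k = l then 1 else 0) * (vnorm (phi T th m) * B $$ (m,k) * vnorm (phi T th l)))"
    using m l by (intro sum.cong refl) (auto simp: s1 Omi)
  also have "\<dots> = vnorm (phi T th m) * B $$ (m,l) * vnorm (phi T th l)" using l by (simp add: delta_mult)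
  finally show ?thesis .
qed

lemma square_orth: fixes f :: "nat \<Rightarrow> nat \<Rightarrow> real"
  assumes orth: "\<And>k l. k<K \<Longrightarrow> l<K \<Longrightarrow> (\<Sum>m<K. f m k * f m l) = (if k = l then 1 else 0)"
  and m: "m<K" and l: "l<K"
  shows "(\<Sum>k<K. f m k * f l k) = (if m = l then 1 else 0)"
proof -
  define C where "C = mat K K (\<lambda>(m,k). f m k)"
  have Cc: "C \<in> carrier_mat K K" unfolding C_def by simp
  have "C\<^sup>T * C = 1\<^sub>m K"
  proof (rule eq_matI)
    fix k l assume "k < dim_row (1\<^sub>m K)" "l < dim_col (1\<^sub>m K)"
    then have kl: "k<K" "l<K" by auto
    have "(C\<^sup>T * C) $$ (k,l) = (\<Sum>m<K. C\<^sup>T $$ (k,m) * C $$ (m,l))" using Cc kl by (subst mult_idx) auto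
    also have "\<dots> = (\<Sum>m<K. f m k * f m l)" using kl by (intro sum.cong refl) (simp add: C_def)
    finally show "(C\<^sup>T * C) $$ (k,l) = 1\<^sub>m K $$ (k,l)" using orth[OF kl] kl by simp
  qed (use Cc in auto)
  then have CC: "C * C\<^sup>T = 1\<^sub>m K" using mat_mult_left_right_inverse[of "C\<^sup>T" K C] Cc by simp
  have "(C * C\<^sup>T) $$ (m,l) = (\<Sum>k<K. C $$ (m,k) * C\<^sup>T $$ (k,l))" using Cc m l by (subst mult_idx) auto
  also have "\<dots> = (\<Sum>k<K. f m k * f l k)" using m l by (intro sum.cong refl) (simp add: C_def)
  finally show ?thesis using CC m l by simp
qed

lemma common_facts:
  assumes dc: "dcsbm n K K' T B th"
  shows "1 \<le> K" "memb_mat n K T" "\<And>k. k<K \<Longrightarrow> 1 \<le> card (Gset T k)" "B \<in> carrier_mat K K"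
    "th \<in> carrier_vec n" "\<And>i. i<n \<Longrightarrow> 0 < th $ i" "K \<le> n" "K' \<le> K"
    "\<And>k l. k<K \<Longrightarrow> l<K \<Longrightarrow> 0 \<le> B $$ (k,l)"
proof -
  note dcd = dc[unfolded dcsbm_def]
  show "1 \<le> K" "memb_mat n K T" "\<And>k. k<K \<Longrightarrow> 1 \<le> card (Gset T k)" "B \<in> carrier_mat K K"
    "th \<in> carrier_vec n" "\<And>i. i<n \<Longrightarrow> 0 < th $ i" "K' \<le> K" "\<And>k l. k<K \<Longrightarrow> l<K \<Longrightarrow> 0 \<le> B $$ (k,l)"
    using dcd by auto
  then show "K \<le> n" using K_le_n by blast
qed

lemma mtt_facts:
  assumes T: "memb_mat n K T" and th: "th \<in> carrier_vec n" and n1: "1 \<le> n"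
  and ttpos: "\<And>i. i<n \<Longrightarrow> 0 < theta_tilde K T th $ i"
  shows "\<And>i. i<n \<Longrightarrow> min_tt_sq n K T th \<le> (theta_tilde K T th $ i)\<^sup>2" "0 < min_tt_sq n K T th"
proof -
  show "\<And>i. i<n \<Longrightarrow> min_tt_sq n K T th \<le> (theta_tilde K T th $ i)\<^sup>2"
    unfolding min_tt_sq_def by (intro Min_le) auto
  have "min_tt_sq n K T th \<in> (\<lambda>i. (theta_tilde K T th $ i)\<^sup>2) ` {..<n}"
    unfolding min_tt_sq_def by (rule Min_in) (use n1 in \<open>auto simp: lessThan_empty_iff\<close>)
  then obtain i where "i<n" "min_tt_sq n K T th = (theta_tilde K T th $ i)\<^sup>2" by auto
  then show "0 < min_tt_sq n K T th" using ttpos[of i] by simp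
qed

lemma mn_facts:
  assumes T: "memb_mat n K T" and K1: "1 \<le> K" and Gpos: "\<And>k. k<K \<Longrightarrow> 1 \<le> card (Gset T k)"
  shows "\<And>k. k<K \<Longrightarrow> min_nk K T \<le> real (card {i. i<n \<and> comm K T i = k})" "0 < min_nk K T"
proof -
  show "\<And>k. k<K \<Longrightarrow> min_nk K T \<le> real (card {i. i<n \<and> comm K T i = k})"
    unfolding min_nk_def using Gset_comm[OF T] by (intro of_nat_mono) (auto intro!: Min_le)
  have "Min ((\<lambda>k. card (Gset T k)) ` {..<K}) \<in> (\<lambda>k. card (Gset T k)) ` {..<K}"
    by (rule Min_in) (use K1 in \<open>auto simp: lessThan_empty_iff\<close>)
  then obtain k where k: "k<K" "Min ((\<lambda>k. card (Gset T k)) ` {..<K}) = card (Gset T k)" by auto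
  have "1 \<le> card (Gset T k)" using Gpos[OF k(1)] .
  then show "0 < min_nk K T" unfolding min_nk_def k(2) by simp
qed

lemma part_a_core:
  assumes dc: "dcsbm n K K' T B th" and ed: "eig_decomp n K' (Pmat T B th) U Sig"
  and rs: "rssc_output n K K' At Tt" and KK: "K' = K"
  and Qs: "1 / min_tt_sq n K T th * (real K' * (spec_norm (At - Pmat T B th))\<^sup>2 / ((gamma_n K' Sig)\<^sup>2 * min_nk K T)) \<le> 1/1000"
  shows "recovery K T Tt (1000 * (1 / min_tt_sq n K T th * (real K' * (spec_norm (At - Pmat T B th))\<^sup>2 / ((gamma_n K' Sig)\<^sup>2 * min_nk K T))))"
proof -
  note cf = common_facts[OF dc]
  have K1: "1 \<le> K" and T: "memb_mat n K T" and Gpos: "\<And>k. k<K \<Longrightarrow> 1 \<le> card (Gset T k)"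
    and th: "th \<in> carrier_vec n" and Kn: "K \<le> n" using cf by auto
  have K1': "1 \<le> K'" using KK K1 by simp
  obtain V lam Xm where dm: "dcm n K' (\<lambda>i j. V $$ (i,j)) lam (\<lambda>i k. U $$ (i,k)) (\<lambda>k. Sig $$ (k,k)) (\<lambda>i i'. At $$ (i,i'))
        (\<lambda>i i'. Pmat T B th $$ (i,i')) (spec_norm (At - Pmat T B th)) (gamma_n K' Sig) K (comm K T) (\<lambda>i. th $ i) (\<lambda>m l. B $$ (m,l))"
    and Ttm: "memb_mat n K Tt" and tlt: "\<And>i. i<n \<Longrightarrow> comm K Tt i < K"
    and opt: "\<And>Zf. (\<Sum>i<n. \<Sum>j<K'. (Xm $$ (comm K Tt i, j) - (if L2_set (\<lambda>j. V $$ (i,j)) {..<K'} = 0 then V $$ (i,j) else V $$ (i,j) / L2_set (\<lambda>j. V $$ (i,j)) {..<K'}))\<^sup>2)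
        \<le> (\<Sum>i<n. \<Sum>j<K'. (Zf (comm K T i) j - (if L2_set (\<lambda>j. V $$ (i,j)) {..<K'} = 0 then V $$ (i,j) else V $$ (i,j) / L2_set (\<lambda>j. V $$ (i,j)) {..<K'}))\<^sup>2)"
    using setup_main[OF dc ed rs K1'] by blast
  define e where "e = spec_norm (At - Pmat T B th)"
  define gam where "gam = gamma_n K' Sig"
  define mtt where "mtt = min_tt_sq n K T th"
  define mn where "mn = min_nk K T"
  define Q where "Q = 1 / mtt * (real K' * e\<^sup>2 / (gam\<^sup>2 * mn))"
  interpret d: dcm n K' "\<lambda>i j. V $$ (i,j)" lam "\<lambda>i k. U $$ (i,k)" "\<lambda>k. Sig $$ (k,k)" "\<lambda>i i'. At $$ (i,i')"
        "\<lambda>i i'. Pmat T B th $$ (i,i')" e gam K "comm K T" "\<lambda>i. th $ i" "\<lambda>m l. B $$ (m,l)"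
    using dm unfolding e_def gam_def .
  have nk_eq: "d.nk m = vnorm (phi T th m)" if "m<K" for m
    unfolding d.nk_def d.G_def vnorm_phi[OF T th that] ..
  have tt_eq: "d.tt i = theta_tilde K T th $ i" if "i<n" for i
    unfolding d.tt_def using tt_idx[of i th K T] th that nk_eq memb_row(1)[OF T that] by simp
  have n1: "1 \<le> n" using K1 Kn by simp
  have mtt_le: "mtt \<le> (d.tt i)\<^sup>2" if "i<n" for i
    unfolding mtt_def tt_eq[OF that] by (rule mtt_facts(1)[OF T th n1 _ that]) (metis tt_eq d.tt_pos)
  have mtt_pos: "0 < mtt" unfolding mtt_def by (rule mtt_facts(2)[OF T th n1]) (metis tt_eq d.tt_pos)
  have mn_le: "mn \<le> real (card {i. i<n \<and> comm K T i = k})" if "k<K" for k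
    unfolding mn_def by (rule mn_facts(1)[OF T K1 Gpos that])
  have mn_pos: "0 < mn" unfolding mn_def by (rule mn_facts(2)[OF T K1 Gpos])
  have mtt_card: "mtt * real (card {i. i<n \<and> comm K T i = k}) \<le> 1" if "k<K" for k
  proof -
    have "mtt * real (card {i. i<n \<and> comm K T i = k}) = (\<Sum>i\<in>{i. i<n \<and> comm K T i = k}. mtt)" by simp
    also have "\<dots> \<le> (\<Sum>i\<in>{i. i<n \<and> comm K T i = k}. (d.tt i)\<^sup>2)" by (intro sum_mono mtt_le) auto
    also have "\<dots> = 1" by (rule d.tt_norm[OF that])
    finally show ?thesis .
  qed
  have mm1: "mtt * mn \<le> 1"
  proof -
    have "mtt * mn \<le> mtt * real (card {i. i<n \<and> comm K T i = 0})"
      using mn_le[of 0] K1 mtt_pos by (intro mult_left_mono) auto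
    also have "\<dots> \<le> 1" using mtt_card[of 0] K1 by simp
    finally show ?thesis .
  qed
  have gpos: "0 < gam" by (rule d.gam_pos)
  have enn: "0 \<le> e" by (rule d.e_nn)
  have Qeq: "Q = (real K' * e\<^sup>2 / gam\<^sup>2) / (mtt * mn)" unfolding Q_def using mtt_pos mn_pos gpos by (simp add: field_simps)
  have base: "real K' * e\<^sup>2 / gam\<^sup>2 \<le> Q"
  proof -
    define x where "x = real K' * e\<^sup>2 / gam\<^sup>2"
    have "0 \<le> x" unfolding x_def by simp
    then have "x * (mtt * mn) \<le> x" using mm1 by (intro mult_left_le)
    moreover have "0 < mtt * mn" using mtt_pos mn_pos by simp
    ultimately have "x \<le> x / (mtt * mn)" by (simp add: le_divide_eq)
    then show ?thesis unfolding Qeq x_def .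
  qed
  have Qs': "Q \<le> 1/1000" using Qs unfolding Q_def e_def gam_def mtt_def mn_def .
  have gsmall: "real K' * e\<^sup>2 / gam\<^sup>2 \<le> 1/8" using base Qs' by linarith
  have esmall: "real (K'+1) * e\<^sup>2 \<le> gam\<^sup>2/4"
  proof -
    have a: "real K' * e\<^sup>2 \<le> Q * gam\<^sup>2" using base gpos by (simp add: divide_le_eq)
    have b: "Q * gam\<^sup>2 \<le> 1/1000 * gam\<^sup>2" using Qs' by (intro mult_right_mono) auto
    from a b have "real K' * e\<^sup>2 \<le> gam\<^sup>2 / 1000" by linarith
    moreover have "real (K'+1) * e\<^sup>2 \<le> 2 * (real K' * e\<^sup>2)"
    proof -
      have "1 * e\<^sup>2 \<le> real K' * e\<^sup>2" using K1' by (intro mult_right_mono) auto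
      then show ?thesis by (simp add: algebra_simps)
    qed
    ultimately show ?thesis using zero_le_power2[of gam] by linarith
  qed
  have corth: "(\<Sum>k<K'. d.c m k * d.c l k) = (if m = l then 1 else 0)" if "m<K" "l<K" for m l
    using square_orth[where K=K and f=d.c] d.Corth_d that KK by simp
  have cn1: "(\<Sum>k<K'. (d.c m k)\<^sup>2) = 1" if "m<K" for m using corth[OF that that] by (simp add: power2_eq_square)
  obtain S \<sigma> where res: "S \<subseteq> {..<n}" "real (card S) \<le> 1280 * real K' * e\<^sup>2 / (gam\<^sup>2 * mtt * 2)" "\<sigma> permutes {..<K}"
      "\<forall>i<n. i \<notin> S \<longrightarrow> \<sigma> (comm K Tt i) = comm K T i"
  proof -
    have "\<exists>S \<sigma>. S \<subseteq> {..<n} \<and> real (card S) \<le> 1280 * real K' * e\<^sup>2 / (gam\<^sup>2 * mtt * 2) \<and> \<sigma> permutes {..<K}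
            \<and> (\<forall>i<n. i \<notin> S \<longrightarrow> \<sigma> (comm K Tt i) = comm K T i)"
    proof (rule d.dcm_final[where Xc="\<lambda>m j. Xm $$ (m,j)" and t="comm K Tt" and r=mtt and dd=2])
      show "\<And>Zf. (\<Sum>i<n. \<Sum>j<K'. (Xm $$ (comm K Tt i, j) - (if L2_set (\<lambda>j. V $$ (i,j)) {..<K'} = 0 then V $$ (i,j) else V $$ (i,j) / L2_set (\<lambda>j. V $$ (i,j)) {..<K'}))\<^sup>2)
        \<le> (\<Sum>i<n. \<Sum>j<K'. (Zf (comm K T i) j - (if L2_set (\<lambda>j. V $$ (i,j)) {..<K'} = 0 then V $$ (i,j) else V $$ (i,j) / L2_set (\<lambda>j. V $$ (i,j)) {..<K'}))\<^sup>2)"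
        by (rule opt)
      show "\<And>i. i<n \<Longrightarrow> comm K Tt i < K" by (rule tlt)
      show "\<And>m. m<K \<Longrightarrow> 0 < (\<Sum>k<K'. (d.c m k)\<^sup>2)" using cn1 by simp
      show "0 < mtt" by (rule mtt_pos)
      show "\<And>i. i<n \<Longrightarrow> mtt \<le> (d.tt i)\<^sup>2 * (\<Sum>k<K'. (d.c (comm K T i) k)\<^sup>2)"
        using mtt_le cn1 memb_row(1)[OF T] by simp
      show "\<And>m l. m<K \<Longrightarrow> l<K \<Longrightarrow> m \<noteq> l \<Longrightarrow>
          2 \<le> (\<Sum>k<K'. (d.c m k / sqrt (\<Sum>k<K'. (d.c m k)\<^sup>2) - d.c l k / sqrt (\<Sum>k<K'. (d.c l k)\<^sup>2))\<^sup>2)"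
      proof -
        fix m l assume ml: "m<K" "l<K" "m \<noteq> l"
        have "(\<Sum>k<K'. (d.c m k / sqrt (\<Sum>k<K'. (d.c m k)\<^sup>2) - d.c l k / sqrt (\<Sum>k<K'. (d.c l k)\<^sup>2))\<^sup>2)
            = (\<Sum>k<K'. (d.c m k)\<^sup>2 + (d.c l k)\<^sup>2 - 2 * (d.c m k * d.c l k))"
          using cn1[OF ml(1)] cn1[OF ml(2)] by (simp add: power2_diff mult.assoc)
        also have "\<dots> = 2" using cn1[OF ml(1)] cn1[OF ml(2)] corth[OF ml(1,2)] ml(3)
          by (simp add: sum.distrib sum_subtractf sum_distrib_left[symmetric])
        finally show "2 \<le> (\<Sum>k<K'. (d.c m k / sqrt (\<Sum>k<K'. (d.c m k)\<^sup>2) - d.c l k / sqrt (\<Sum>k<K'. (d.c l k)\<^sup>2))\<^sup>2)" by simp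
      qed
      show "(0::real) < 2" by simp
      show "real K' * e\<^sup>2 / gam\<^sup>2 \<le> 1/8" by (rule gsmall)
      show "real (K'+1) * e\<^sup>2 \<le> gam\<^sup>2/4" by (rule esmall)
      show "\<And>m. m<K \<Longrightarrow> 1280 * real K' * e\<^sup>2 / (gam\<^sup>2 * mtt * 2) < real (card {i. i<n \<and> comm K T i = m})"
      proof -
        fix m assume m: "m<K"
        have "1280 * real K' * e\<^sup>2 / (gam\<^sup>2 * mtt * 2) = 640 * Q * mn"
          unfolding Q_def using mtt_pos mn_pos gpos by (simp add: field_simps)
        also have "\<dots> \<le> 640 * (1/1000) * mn" using Qs' mn_pos by (intro mult_right_mono) auto
        also have "\<dots> < mn" using mn_pos by simp
        also have "\<dots> \<le> real (card {i. i<n \<and> comm K T i = m})" by (rule mn_le[OF m])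
        finally show "1280 * real K' * e\<^sup>2 / (gam\<^sup>2 * mtt * 2) < real (card {i. i<n \<and> comm K T i = m})" .
      qed
    qed
    then show ?thesis using that by blast
  qed
  have rec: "recovery K T Tt (real (card S) / min_nk K T)"
  proof -
    have ag: "\<And>i. i<n \<Longrightarrow> i \<notin> S \<Longrightarrow> \<sigma> (comm K Tt i) = comm K T i" using res(4) by blast
    show ?thesis by (rule recovery_from_perm[OF T Ttm res(1) res(3) ag Gpos K1])
  qed
  have "real (card S) / mn \<le> 640 * Q"
  proof -
    have "1280 * real K' * e\<^sup>2 / (gam\<^sup>2 * mtt * 2) = 640 * Q * mn"
      unfolding Q_def using mtt_pos mn_pos gpos by (simp add: field_simps)
    then have "real (card S) \<le> 640 * Q * mn" using res(2) by simp
    then show ?thesis using mn_pos by (simp add: pos_divide_le_eq)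
  qed
  also have "\<dots> \<le> 1000 * Q"
  proof -
    have "0 \<le> real K' * e\<^sup>2 / gam\<^sup>2" by simp
    then show ?thesis using base by linarith
  qed
  finally have "real (card S) / min_nk K T \<le> 1000 * Q" unfolding mn_def .
  then show ?thesis using recovery_mono[OF rec] unfolding Q_def e_def gam_def mtt_def mn_def by blast
qed

lemma cancel_left: fixes L R X :: "real mat"
  assumes "L \<in> carrier_mat p q" "R \<in> carrier_mat q p" "L * R = 1\<^sub>m p" "X \<in> carrier_mat p c"
  shows "L * (R * X) = X"
proof -
  have "L * (R * X) = (L * R) * X" using assoc_mult_mat[OF assms(1,2,4)] by simp
  then show ?thesis using assms(3,4) by simp
qed

lemma assoc3: fixes A B C X :: "real mat"
  assumes "A \<in> carrier_mat a b" "B \<in> carrier_mat b c" "C \<in> carrier_mat c d" "X \<in> carrier_mat d e"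
  shows "A * B * C * X = A * (B * (C * X))"
proof -
  have AB: "A * B \<in> carrier_mat a c" using assms by simp
  have CX: "C * X \<in> carrier_mat c e" using assms by simp
  have "A * B * C * X = (A * B) * (C * X)" by (rule assoc_mult_mat[OF AB assms(3,4)])
  also have "\<dots> = A * (B * (C * X))" by (rule assoc_mult_mat[OF assms(1,2) CX])
  finally show ?thesis .
qed

lemma proj_eq: fixes C H S D Si Di :: "real mat"
  assumes C: "C \<in> carrier_mat K r" and H: "H \<in> carrier_mat K r"
  and CC: "C\<^sup>T * C = 1\<^sub>m r" and HH: "H\<^sup>T * H = 1\<^sub>m r"
  and S: "S \<in> carrier_mat r r" and D: "D \<in> carrier_mat r r" and Si: "Si \<in> carrier_mat r r" and Di: "Di \<in> carrier_mat r r"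
  and SSi: "S * Si = 1\<^sub>m r" and DDi: "D * Di = 1\<^sub>m r"
  and eq: "C * S * C\<^sup>T = H * D * H\<^sup>T"
  shows "C * C\<^sup>T = H * H\<^sup>T"
proof -
  have Ct: "C\<^sup>T \<in> carrier_mat r K" and Ht: "H\<^sup>T \<in> carrier_mat r K" using C H by auto
  have CCt: "C * C\<^sup>T \<in> carrier_mat K K" and HHt: "H * H\<^sup>T \<in> carrier_mat K K" using C H by auto
  have HtC: "H\<^sup>T * C \<in> carrier_mat r r" and CtH: "C\<^sup>T * H \<in> carrier_mat r r" using C H by auto
  have h1: "H * (D * (H\<^sup>T * (H * Di))) = H"
    using cancel_left[OF Ht H HH Di] DDi H by simp
  have M_H: "C * (S * (C\<^sup>T * (H * Di))) = H"
  proof -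
    have HDi: "H * Di \<in> carrier_mat K r" using H Di by simp
    have "C * (S * (C\<^sup>T * (H * Di))) = (C * S * C\<^sup>T) * (H * Di)"
      using assoc3[OF C S Ct HDi] by simp
    also have "\<dots> = (H * D * H\<^sup>T) * (H * Di)" by (simp add: eq)
    also have "\<dots> = H * (D * (H\<^sup>T * (H * Di)))" using assoc3[OF H D Ht HDi] by simp
    finally show ?thesis using h1 by simp
  qed
  have c1: "C * (S * (C\<^sup>T * (C * Si))) = C"
    using cancel_left[OF Ct C CC Si] SSi C by simp
  have M_C: "H * (D * (H\<^sup>T * (C * Si))) = C"
  proof -
    have CSi: "C * Si \<in> carrier_mat K r" using C Si by simp
    have "H * (D * (H\<^sup>T * (C * Si))) = (H * D * H\<^sup>T) * (C * Si)"
      using assoc3[OF H D Ht CSi] by simp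
    also have "\<dots> = (C * S * C\<^sup>T) * (C * Si)" by (simp add: eq)
    also have "\<dots> = C * (S * (C\<^sup>T * (C * Si)))" using assoc3[OF C S Ct CSi] by simp
    finally show ?thesis using c1 by simp
  qed
  have CCH: "C * (C\<^sup>T * H) = H"
  proof -
    have "C * (C\<^sup>T * H) = C * (C\<^sup>T * (C * (S * (C\<^sup>T * (H * Di)))))" using M_H by simp
    also have "C\<^sup>T * (C * (S * (C\<^sup>T * (H * Di)))) = S * (C\<^sup>T * (H * Di))"
      by (rule cancel_left[OF Ct C CC]) (use S Ct H Di in auto)
    finally show ?thesis using M_H by simp
  qed
  have HHC: "H * (H\<^sup>T * C) = C"
  proof -
    have "H * (H\<^sup>T * C) = H * (H\<^sup>T * (H * (D * (H\<^sup>T * (C * Si)))))" using M_C by simp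
    also have "H\<^sup>T * (H * (D * (H\<^sup>T * (C * Si)))) = D * (H\<^sup>T * (C * Si))"
      by (rule cancel_left[OF Ht H HH]) (use D Ht C Si in auto)
    finally show ?thesis using M_C by simp
  qed
  have A: "C * C\<^sup>T = H * H\<^sup>T * (C * C\<^sup>T)"
  proof -
    have "H * H\<^sup>T * (C * C\<^sup>T) = H * (H\<^sup>T * (C * C\<^sup>T))" by (rule assoc_mult_mat[OF H Ht CCt])
    also have "\<dots> = H * (H\<^sup>T * C * C\<^sup>T)" using assoc_mult_mat[OF Ht C Ct] by simp
    also have "\<dots> = (H * (H\<^sup>T * C)) * C\<^sup>T" by (rule assoc_mult_mat[symmetric, OF H HtC Ct])
    finally have "H * H\<^sup>T * (C * C\<^sup>T) = (H * (H\<^sup>T * C)) * C\<^sup>T" .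
    then show ?thesis using HHC by simp
  qed
  have B: "H * H\<^sup>T = C * C\<^sup>T * (H * H\<^sup>T)"
  proof -
    have "C * C\<^sup>T * (H * H\<^sup>T) = C * (C\<^sup>T * (H * H\<^sup>T))" by (rule assoc_mult_mat[OF C Ct HHt])
    also have "\<dots> = C * (C\<^sup>T * H * H\<^sup>T)" using assoc_mult_mat[OF Ct H Ht] by simp
    also have "\<dots> = (C * (C\<^sup>T * H)) * H\<^sup>T" by (rule assoc_mult_mat[symmetric, OF C CtH Ht])
    finally have "C * C\<^sup>T * (H * H\<^sup>T) = (C * (C\<^sup>T * H)) * H\<^sup>T" .
    then show ?thesis using CCH by simp
  qed
  have "(H * H\<^sup>T)\<^sup>T = (C * C\<^sup>T * (H * H\<^sup>T))\<^sup>T" using B by simp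
  also have "(C * C\<^sup>T * (H * H\<^sup>T))\<^sup>T = (H * H\<^sup>T)\<^sup>T * (C * C\<^sup>T)\<^sup>T"
    by (rule transpose_mult) (use C H in auto)
  also have "(H * H\<^sup>T)\<^sup>T = H * H\<^sup>T" using transpose_mult[OF H Ht] by simp
  also have "(C * C\<^sup>T)\<^sup>T = C * C\<^sup>T" using transpose_mult[OF C Ct] by simp
  finally have "H * H\<^sup>T = H * H\<^sup>T * (C * C\<^sup>T)" .
  then show ?thesis using A by simp
qed

lemma diag_inv: fixes S :: "real mat"
  assumes S: "S \<in> carrier_mat r r" and dS: "diagonal_mat S" and nz: "\<And>i. i<r \<Longrightarrow> S $$ (i,i) \<noteq> 0"
  shows "S * mat r r (\<lambda>(i,j). if i = j then 1 / S $$ (i,i) else 0) = 1\<^sub>m r"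
proof (rule eq_matI)
  fix i j assume "i < dim_row (1\<^sub>m r)" "j < dim_col (1\<^sub>m r)"
  then have ij: "i<r" "j<r" by auto
  have "(S * mat r r (\<lambda>(i,j). if i = j then 1 / S $$ (i,i) else 0)) $$ (i,j)
      = (\<Sum>k<r. S $$ (i,k) * (if k = j then 1 / S $$ (k,k) else 0))" using S ij by (subst mult_idx) auto
  also have "\<dots> = (\<Sum>k<r. (if k = j then 1 else 0) * (S $$ (i,k) / S $$ (k,k)))"
    by (intro sum.cong refl) auto
  also have "\<dots> = S $$ (i,j) / S $$ (j,j)" using ij by (simp only: delta_mult sum.delta finite_lessThan) simp
  also have "\<dots> = 1\<^sub>m r $$ (i,j)" using dS S ij nz[of j] unfolding diagonal_mat_def by auto
  finally show "(S * mat r r (\<lambda>(i,j). if i = j then 1 / S $$ (i,i) else 0)) $$ (i,j) = 1\<^sub>m r $$ (i,j)" .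
qed (use S in auto)

lemma cos_ge: fixes a b :: "nat \<Rightarrow> real"
  shows "- (sqrt (\<Sum>k<r. (a k)\<^sup>2) * sqrt (\<Sum>k<r. (b k)\<^sup>2)) \<le> (\<Sum>k<r. a k * b k)"
proof -
  have "(\<Sum>k<r. a k * b k)\<^sup>2 \<le> (\<Sum>k<r. (a k)\<^sup>2) * (\<Sum>k<r. (b k)\<^sup>2)" by (rule cs_sum)
  also have "\<dots> = (sqrt (\<Sum>k<r. (a k)\<^sup>2) * sqrt (\<Sum>k<r. (b k)\<^sup>2))\<^sup>2"
    by (simp add: power_mult_distrib sum_nonneg)
  finally have "\<bar>\<Sum>k<r. a k * b k\<bar> \<le> \<bar>sqrt (\<Sum>k<r. (a k)\<^sup>2) * sqrt (\<Sum>k<r. (b k)\<^sup>2)\<bar>"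
    by (simp only: abs_le_square_iff)
  moreover have "0 \<le> sqrt (\<Sum>k<r. (a k)\<^sup>2) * sqrt (\<Sum>k<r. (b k)\<^sup>2)" by (simp add: sum_nonneg)
  ultimately show ?thesis by (simp add: abs_le_iff)
qed

lemma unit_diff: fixes a b :: "nat \<Rightarrow> real" and x y :: real
  assumes x: "0 < x" and y: "0 < y" and ax: "(\<Sum>k<r. (a k)\<^sup>2) = x\<^sup>2" and by': "(\<Sum>k<r. (b k)\<^sup>2) = y\<^sup>2"
  shows "(\<Sum>k<r. (a k / x - b k / y)\<^sup>2) = 2 - 2 * ((\<Sum>k<r. a k * b k) / (x * y))"
proof -
  have "(\<Sum>k<r. (a k / x - b k / y)\<^sup>2) = (\<Sum>k<r. (a k)\<^sup>2 / x\<^sup>2 + (b k)\<^sup>2 / y\<^sup>2 - 2 * (a k * b k) / (x * y))"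
    by (intro sum.cong refl) (simp add: power2_diff power_divide)
  also have "\<dots> = (\<Sum>k<r. (a k)\<^sup>2) / x\<^sup>2 + (\<Sum>k<r. (b k)\<^sup>2) / y\<^sup>2 - 2 * (\<Sum>k<r. a k * b k) / (x * y)"
    by (simp add: sum.distrib sum_subtractf sum_divide_distrib sum_distrib_left)
  also have "\<dots> = 2 - 2 * ((\<Sum>k<r. a k * b k) / (x * y))" using x y ax by' by simp
  finally show ?thesis .
qed

lemma part_b_core:
  assumes dc: "dcsbm n K K' T B th" and ed: "eig_decomp n K' (Pmat T B th) U Sig"
  and edH: "eig_decomp K K' (Bbar K T B th) H D"
  and rs: "rssc_output n K K' At Tt" and KK: "K' < K"
  and xi1: "xi < 1" and cosb: "\<forall>k<K. \<forall>l<K. k \<noteq> l \<longrightarrow> cosv (row H k) (row H l) \<le> xi"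
  and iot: "\<forall>i<K'. Sig $$ (i,i) < iota" and Bpos: "\<forall>k<K. 0 < B $$ (k,k)"
  and Qs: "iota / (min_tt_sq n K T th * Min ((\<lambda>k. Bbar K T B th $$ (k,k)) ` {..<K})) *
       (real K' * (spec_norm (At - Pmat T B th))\<^sup>2 / ((1 - xi) * (gamma_n K' Sig)\<^sup>2 * min_nk K T)) \<le> 1/1000"
  shows "recovery K T Tt (1000 * (iota / (min_tt_sq n K T th * Min ((\<lambda>k. Bbar K T B th $$ (k,k)) ` {..<K})) *
       (real K' * (spec_norm (At - Pmat T B th))\<^sup>2 / ((1 - xi) * (gamma_n K' Sig)\<^sup>2 * min_nk K T))))"
proof -
  note cf = common_facts[OF dc]
  have K1: "1 \<le> K" and T: "memb_mat n K T" and Gpos: "\<And>k. k<K \<Longrightarrow> 1 \<le> card (Gset T k)"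
    and th: "th \<in> carrier_vec n" and Kn: "K \<le> n" and Bc: "B \<in> carrier_mat K K"
    and thpos: "\<And>i. i<n \<Longrightarrow> 0 < th $ i" using cf by auto
  have n1: "1 \<le> n" using K1 Kn by simp
  have K1': "1 \<le> K'"
  proof (rule ccontr)
    assume "\<not> 1 \<le> K'"
    then have K0: "K' = 0" by simp
    have g0: "comm K T 0 < K" using memb_row(1)[OF T] n1 by simp
    have "Pmat T B th $$ (0,0) = 0" using eig_idx[OF ed, of 0 0] n1 K0 by simp
    moreover have "Pmat T B th $$ (0,0) = th $ 0 * th $ 0 * B $$ (comm K T 0, comm K T 0)"
      using Pmat_idx[OF T Bc th, of 0 0] n1 by simp
    moreover have "0 < th $ 0 * th $ 0 * B $$ (comm K T 0, comm K T 0)"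
      using thpos[of 0] n1 Bpos g0 by simp
    ultimately show False by linarith
  qed
  obtain V lam Xm where dm: "dcm n K' (\<lambda>i j. V $$ (i,j)) lam (\<lambda>i k. U $$ (i,k)) (\<lambda>k. Sig $$ (k,k)) (\<lambda>i i'. At $$ (i,i'))
        (\<lambda>i i'. Pmat T B th $$ (i,i')) (spec_norm (At - Pmat T B th)) (gamma_n K' Sig) K (comm K T) (\<lambda>i. th $ i) (\<lambda>m l. B $$ (m,l))"
    and Ttm: "memb_mat n K Tt" and tlt: "\<And>i. i<n \<Longrightarrow> comm K Tt i < K"
    and opt: "\<And>Zf. (\<Sum>i<n. \<Sum>j<K'. (Xm $$ (comm K Tt i, j) - (if L2_set (\<lambda>j. V $$ (i,j)) {..<K'} = 0 then V $$ (i,j) else V $$ (i,j) / L2_set (\<lambda>j. V $$ (i,j)) {..<K'}))\<^sup>2)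
        \<le> (\<Sum>i<n. \<Sum>j<K'. (Zf (comm K T i) j - (if L2_set (\<lambda>j. V $$ (i,j)) {..<K'} = 0 then V $$ (i,j) else V $$ (i,j) / L2_set (\<lambda>j. V $$ (i,j)) {..<K'}))\<^sup>2)"
    using setup_main[OF dc ed rs K1'] by blast
  define e where "e = spec_norm (At - Pmat T B th)"
  define gam where "gam = gamma_n K' Sig"
  define mtt where "mtt = min_tt_sq n K T th"
  define mn where "mn = min_nk K T"
  define Bb where "Bb = Bbar K T B th"
  define mB where "mB = Min ((\<lambda>k. Bb $$ (k,k)) ` {..<K})"
  define Q where "Q = iota / (mtt * mB) * (real K' * e\<^sup>2 / ((1 - xi) * gam\<^sup>2 * mn))"
  interpret d: dcm n K' "\<lambda>i j. V $$ (i,j)" lam "\<lambda>i k. U $$ (i,k)" "\<lambda>k. Sig $$ (k,k)" "\<lambda>i i'. At $$ (i,i')"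
        "\<lambda>i i'. Pmat T B th $$ (i,i')" e gam K "comm K T" "\<lambda>i. th $ i" "\<lambda>m l. B $$ (m,l)"
    using dm unfolding e_def gam_def .
  have nk_eq: "d.nk m = vnorm (phi T th m)" if "m<K" for m
    unfolding d.nk_def d.G_def vnorm_phi[OF T th that] ..
  have tt_eq: "d.tt i = theta_tilde K T th $ i" if "i<n" for i
    unfolding d.tt_def using tt_idx[of i th K T] th that nk_eq memb_row(1)[OF T that] by simp
  have mtt_le: "mtt \<le> (d.tt i)\<^sup>2" if "i<n" for i
    unfolding mtt_def tt_eq[OF that] by (rule mtt_facts(1)[OF T th n1 _ that]) (metis tt_eq d.tt_pos)
  have mtt_pos: "0 < mtt" unfolding mtt_def by (rule mtt_facts(2)[OF T th n1]) (metis tt_eq d.tt_pos)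
  have mn_le: "mn \<le> real (card {i. i<n \<and> comm K T i = k})" if "k<K" for k
    unfolding mn_def by (rule mn_facts(1)[OF T K1 Gpos that])
  have mn_pos: "0 < mn" unfolding mn_def by (rule mn_facts(2)[OF T K1 Gpos])
  have mtt_card: "mtt * real (card {i. i<n \<and> comm K T i = k}) \<le> 1" if "k<K" for k
  proof -
    have "mtt * real (card {i. i<n \<and> comm K T i = k}) = (\<Sum>i\<in>{i. i<n \<and> comm K T i = k}. mtt)" by simp
    also have "\<dots> \<le> (\<Sum>i\<in>{i. i<n \<and> comm K T i = k}. (d.tt i)\<^sup>2)" by (intro sum_mono mtt_le) auto
    also have "\<dots> = 1" by (rule d.tt_norm[OF that])
    finally show ?thesis .
  qed
  have mm1: "mtt * mn \<le> 1"
  proof -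
    have "mtt * mn \<le> mtt * real (card {i. i<n \<and> comm K T i = 0})"
      using mn_le[of 0] K1 mtt_pos by (intro mult_left_mono) auto
    also have "\<dots> \<le> 1" using mtt_card[of 0] K1 by simp
    finally show ?thesis .
  qed
  have gpos: "0 < gam" by (rule d.gam_pos)
  have enn: "0 \<le> e" by (rule d.e_nn)
  have Bb_c: "Bb $$ (m,l) = (\<Sum>k<K'. d.c m k * Sig $$ (k,k) * d.c l k)" if "m<K" "l<K" for m l
    unfolding Bb_def Bbar_idx[OF Bc that] nk_eq[OF that(1), symmetric] nk_eq[OF that(2), symmetric]
    using d.Bbar_c[OF that] by simp
  define Cm where "Cm = mat K K' (\<lambda>(m,k). d.c m k)"
  have Cc: "Cm \<in> carrier_mat K K'" unfolding Cm_def by simp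
  have Hc: "H \<in> carrier_mat K K'" and HH: "H\<^sup>T * H = 1\<^sub>m K'" and Dc: "D \<in> carrier_mat K' K'"
    and dD: "diagonal_mat D" and Dnz: "\<And>i. i<K' \<Longrightarrow> D $$ (i,i) \<noteq> 0" and BbH: "Bb = H * D * H\<^sup>T"
    using edH unfolding eig_decomp_def Bb_def by auto
  have Sc: "Sig \<in> carrier_mat K' K'" and dS: "diagonal_mat Sig" and Snz: "\<And>i. i<K' \<Longrightarrow> Sig $$ (i,i) \<noteq> 0"
    using ed unfolding eig_decomp_def by auto
  have CC: "Cm\<^sup>T * Cm = 1\<^sub>m K'"
  proof (rule eq_matI)
    fix k l assume "k < dim_row (1\<^sub>m K')" "l < dim_col (1\<^sub>m K')"
    then have kl: "k<K'" "l<K'" by auto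
    have "(Cm\<^sup>T * Cm) $$ (k,l) = (\<Sum>m<K. Cm\<^sup>T $$ (k,m) * Cm $$ (m,l))" using Cc kl by (subst mult_idx) auto
    also have "\<dots> = (\<Sum>m<K. d.c m k * d.c m l)" using kl by (intro sum.cong refl) (simp add: Cm_def)
    finally show "(Cm\<^sup>T * Cm) $$ (k,l) = 1\<^sub>m K' $$ (k,l)" using d.Corth_d[OF kl] kl by simp
  qed (use Cc in auto)
  have CSC: "Cm * Sig * Cm\<^sup>T = H * D * H\<^sup>T"
  proof (rule eq_matI)
    fix m l assume "m < dim_row (H * D * H\<^sup>T)" "l < dim_col (H * D * H\<^sup>T)"
    then have ml: "m<K" "l<K" using Hc by auto
    have "(Cm * Sig * Cm\<^sup>T) $$ (m,l) = (\<Sum>k<K'. Cm $$ (m,k) * Sig $$ (k,k) * Cm $$ (l,k))"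
      by (rule wsw_idx[OF Cc Sc dS ml])
    also have "\<dots> = Bb $$ (m,l)" using ml by (simp add: Bb_c Cm_def)
    finally show "(Cm * Sig * Cm\<^sup>T) $$ (m,l) = (H * D * H\<^sup>T) $$ (m,l)" using BbH by simp
  qed (use Cc Hc in auto)
  have CH: "Cm * Cm\<^sup>T = H * H\<^sup>T"
    by (rule proj_eq[OF Cc Hc CC HH Sc Dc _ _ diag_inv[OF Sc dS Snz] diag_inv[OF Dc dD Dnz] CSC]) auto
  have dotc: "(\<Sum>k<K'. d.c m k * d.c l k) = row H m \<bullet> row H l" if "m<K" "l<K" for m l
  proof -
    have "(Cm * Cm\<^sup>T) $$ (m,l) = (\<Sum>k<K'. Cm $$ (m,k) * Cm\<^sup>T $$ (k,l))" using Cc that by (subst mult_idx) auto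
    also have "\<dots> = (\<Sum>k<K'. d.c m k * d.c l k)" using that by (intro sum.cong refl) (simp add: Cm_def)
    finally have a: "(Cm * Cm\<^sup>T) $$ (m,l) = (\<Sum>k<K'. d.c m k * d.c l k)" .
    have "(H * H\<^sup>T) $$ (m,l) = row H m \<bullet> col H\<^sup>T l" using Hc that by simp
    also have "col H\<^sup>T l = row H l" using Hc that by simp
    finally show ?thesis using a CH by simp
  qed
  define cn where "cn m = sqrt (\<Sum>k<K'. (d.c m k)\<^sup>2)" for m
  have vnH: "vnorm (row H m) = cn m" if "m<K" for m
  proof -
    have "row H m \<bullet> row H m = (\<Sum>k<K'. (d.c m k)\<^sup>2)" using dotc[OF that that] by (simp add: power2_eq_square)
    then show ?thesis unfolding vnorm_def cn_def by simp
  qed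
  have cosc: "cosv (row H m) (row H l) = (\<Sum>k<K'. d.c m k * d.c l k) / (cn m * cn l)" if "m<K" "l<K" for m l
    unfolding cosv_def using dotc[OF that] vnH[OF that(1)] vnH[OF that(2)] by simp
  have Bbmm: "Bb $$ (m,m) \<le> iota * (\<Sum>k<K'. (d.c m k)\<^sup>2)" if "m<K" for m
  proof -
    have "Bb $$ (m,m) = (\<Sum>k<K'. (d.c m k)\<^sup>2 * Sig $$ (k,k))" using Bb_c[OF that that] by (simp add: power2_eq_square mult_ac)
    also have "\<dots> \<le> (\<Sum>k<K'. (d.c m k)\<^sup>2 * iota)" using iot by (intro sum_mono mult_left_mono) auto
    finally show ?thesis by (simp add: sum_distrib_left mult.commute)
  qed
  have Bbpos: "0 < Bb $$ (m,m)" if "m<K" for m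
  proof -
    have "Bb $$ (m,m) = vnorm (phi T th m) * B $$ (m,m) * vnorm (phi T th m)" unfolding Bb_def by (rule Bbar_idx[OF Bc that that])
    moreover have "0 < vnorm (phi T th m)" using d.nk_pos[OF that] nk_eq[OF that] by simp
    ultimately show ?thesis using Bpos that by simp
  qed
  have iota_cpos: "0 < iota \<and> 0 < (\<Sum>k<K'. (d.c m k)\<^sup>2)" if "m<K" for m
  proof -
    have "0 < iota * (\<Sum>k<K'. (d.c m k)\<^sup>2)" using Bbmm[OF that] Bbpos[OF that] by linarith
    moreover have "0 \<le> (\<Sum>k<K'. (d.c m k)\<^sup>2)" by (simp add: sum_nonneg)
    ultimately show ?thesis by (simp add: zero_less_mult_iff)
  qed
  have iota_pos: "0 < iota" using iota_cpos[of 0] K1 by simp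
  have cn_pos: "0 < cn m" if "m<K" for m using iota_cpos[OF that] unfolding cn_def by simp
  have mB_le: "mB \<le> Bb $$ (m,m)" if "m<K" for m unfolding mB_def using that by (intro Min_le) auto
  have mB_pos: "0 < mB"
  proof -
    have "mB \<in> (\<lambda>k. Bb $$ (k,k)) ` {..<K}" unfolding mB_def by (rule Min_in) (use K1 in \<open>auto simp: lessThan_empty_iff\<close>)
    then show ?thesis using Bbpos by auto
  qed
  have mB_iota: "mB \<le> iota"
  proof -
    have "mB \<le> iota * (\<Sum>k<K'. (d.c 0 k)\<^sup>2)" using mB_le[of 0] Bbmm[of 0] K1 by simp
    also have "\<dots> \<le> iota * 1" using d.c_norm_le1[of 0] K1 iota_pos by (intro mult_left_mono) auto
    finally show ?thesis by simp
  qed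
  have K2: "2 \<le> K" using KK K1' by simp
  have xi_low: "-1 \<le> xi"
  proof -
    have "-1 \<le> cosv (row H 0) (row H 1)"
    proof -
      have "- (cn 0 * cn 1) \<le> (\<Sum>k<K'. d.c 0 k * d.c 1 k)" unfolding cn_def by (rule cos_ge)
      moreover have "0 < cn 0 * cn 1" using cn_pos K2 by simp
      moreover have "cosv (row H 0) (row H 1) = (\<Sum>k<K'. d.c 0 k * d.c 1 k) / (cn 0 * cn 1)"
        using cosc[of 0 1] K2 by simp
      ultimately show ?thesis by (simp add: le_divide_eq)
    qed
    moreover have "cosv (row H 0) (row H 1) \<le> xi" using cosb K2 by simp
    ultimately show ?thesis by linarith
  qed
  define r where "r = mtt * mB / iota"
  define dd where "dd = 2 * (1 - xi)"
  have r_pos: "0 < r" unfolding r_def using mtt_pos mB_pos iota_pos by simp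
  have dd_pos: "0 < dd" unfolding dd_def using xi1 by simp
  have r_le: "r \<le> (d.tt i)\<^sup>2 * (\<Sum>k<K'. (d.c (comm K T i) k)\<^sup>2)" if i: "i<n" for i
  proof -
    have gi: "comm K T i < K" using memb_row(1)[OF T i] .
    have "mB / iota \<le> (\<Sum>k<K'. (d.c (comm K T i) k)\<^sup>2)"
      using mB_le[OF gi] Bbmm[OF gi] iota_pos by (simp add: divide_le_eq mult.commute)
    moreover have "mtt \<le> (d.tt i)\<^sup>2" by (rule mtt_le[OF i])
    ultimately have "mtt * (mB / iota) \<le> (d.tt i)\<^sup>2 * (\<Sum>k<K'. (d.c (comm K T i) k)\<^sup>2)"
      using mtt_pos mB_pos iota_pos by (intro mult_mono) auto
    then show ?thesis unfolding r_def by simp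
  qed
  have dsep: "dd \<le> (\<Sum>k<K'. (d.c m k / sqrt (\<Sum>k<K'. (d.c m k)\<^sup>2) - d.c l k / sqrt (\<Sum>k<K'. (d.c l k)\<^sup>2))\<^sup>2)"
    if ml: "m<K" "l<K" "m \<noteq> l" for m l
  proof -
    have "(\<Sum>k<K'. (d.c m k / cn m - d.c l k / cn l)\<^sup>2) = 2 - 2 * ((\<Sum>k<K'. d.c m k * d.c l k) / (cn m * cn l))"
      by (rule unit_diff[OF cn_pos[OF ml(1)] cn_pos[OF ml(2)]]) (simp_all add: cn_def sum_nonneg)
    also have "\<dots> = 2 - 2 * cosv (row H m) (row H l)" using cosc[OF ml(1,2)] by simp
    also have "\<dots> \<ge> dd" unfolding dd_def using cosb ml by force
    finally show ?thesis unfolding cn_def .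
  qed
  define x where "x = real K' * e\<^sup>2 / gam\<^sup>2"
  have x_nn: "0 \<le> x" unfolding x_def by simp
  have Qx: "Q = (iota / mB) * x / (mtt * mn * (1 - xi))"
    unfolding Q_def x_def using mtt_pos mn_pos gpos mB_pos xi1 by (simp add: field_simps)
  have base: "x \<le> 2 * Q"
  proof -
    have den_pos: "0 < mtt * mn * (1 - xi)" using mtt_pos mn_pos xi1 by simp
    have den_le: "mtt * mn * (1 - xi) \<le> 2"
    proof -
      have "mtt * mn * (1 - xi) \<le> 1 * 2" using mm1 xi_low xi1 mtt_pos mn_pos by (intro mult_mono) auto
      then show ?thesis by simp
    qed
    have "x \<le> (iota / mB) * x" using mB_iota mB_pos x_nn by (simp add: le_divide_eq mult_right_mono mult.commute)
    also have "\<dots> = Q * (mtt * mn * (1 - xi))"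
    proof -
      have "mtt * mn * (1 - xi) \<noteq> 0" using mtt_pos mn_pos xi1 by simp
      then show ?thesis unfolding Qx by simp
    qed
    also have "\<dots> \<le> Q * 2"
    proof (rule mult_left_mono[OF den_le])
      show "0 \<le> Q" unfolding Qx using den_pos mB_pos iota_pos x_nn by simp
    qed
    finally show ?thesis by simp
  qed
  have Qs': "Q \<le> 1/1000" using Qs unfolding Q_def e_def gam_def mtt_def mn_def mB_def Bb_def .
  have gsmall: "real K' * e\<^sup>2 / gam\<^sup>2 \<le> 1/8" using base Qs' unfolding x_def by linarith
  have esmall: "real (K'+1) * e\<^sup>2 \<le> gam\<^sup>2/4"
  proof -
    have a: "real K' * e\<^sup>2 \<le> x * gam\<^sup>2" unfolding x_def using gpos by simp
    have b: "x * gam\<^sup>2 \<le> 2/1000 * gam\<^sup>2" using base Qs' by (intro mult_right_mono) auto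
    have "real (K'+1) * e\<^sup>2 \<le> 2 * (real K' * e\<^sup>2)"
    proof -
      have "1 * e\<^sup>2 \<le> real K' * e\<^sup>2" using K1' by (intro mult_right_mono) auto
      then show ?thesis by (simp add: algebra_simps)
    qed
    then show ?thesis using a b zero_le_power2[of gam] by linarith
  qed
  have key: "1280 * real K' * e\<^sup>2 / (gam\<^sup>2 * r * dd) = 640 * Q * mn"
    unfolding Q_def r_def dd_def using mtt_pos mn_pos gpos mB_pos iota_pos xi1 by (simp add: field_simps)
  obtain S \<sigma> where res: "S \<subseteq> {..<n}" "real (card S) \<le> 1280 * real K' * e\<^sup>2 / (gam\<^sup>2 * r * dd)" "\<sigma> permutes {..<K}"
      "\<forall>i<n. i \<notin> S \<longrightarrow> \<sigma> (comm K Tt i) = comm K T i"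
  proof -
    have "\<exists>S \<sigma>. S \<subseteq> {..<n} \<and> real (card S) \<le> 1280 * real K' * e\<^sup>2 / (gam\<^sup>2 * r * dd) \<and> \<sigma> permutes {..<K}
            \<and> (\<forall>i<n. i \<notin> S \<longrightarrow> \<sigma> (comm K Tt i) = comm K T i)"
    proof (rule d.dcm_final[where Xc="\<lambda>m j. Xm $$ (m,j)" and t="comm K Tt" and r=r and dd=dd])
      show "\<And>Zf. (\<Sum>i<n. \<Sum>j<K'. (Xm $$ (comm K Tt i, j) - (if L2_set (\<lambda>j. V $$ (i,j)) {..<K'} = 0 then V $$ (i,j) else V $$ (i,j) / L2_set (\<lambda>j. V $$ (i,j)) {..<K'}))\<^sup>2)
        \<le> (\<Sum>i<n. \<Sum>j<K'. (Zf (comm K T i) j - (if L2_set (\<lambda>j. V $$ (i,j)) {..<K'} = 0 then V $$ (i,j) else V $$ (i,j) / L2_set (\<lambda>j. V $$ (i,j)) {..<K'}))\<^sup>2)"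
        by (rule opt)
      show "\<And>i. i<n \<Longrightarrow> comm K Tt i < K" by (rule tlt)
      show "\<And>m. m<K \<Longrightarrow> 0 < (\<Sum>k<K'. (d.c m k)\<^sup>2)" using iota_cpos by blast
      show "0 < r" by (rule r_pos)
      show "\<And>i. i<n \<Longrightarrow> r \<le> (d.tt i)\<^sup>2 * (\<Sum>k<K'. (d.c (comm K T i) k)\<^sup>2)" by (rule r_le)
      show "\<And>m l. m<K \<Longrightarrow> l<K \<Longrightarrow> m \<noteq> l \<Longrightarrow>
          dd \<le> (\<Sum>k<K'. (d.c m k / sqrt (\<Sum>k<K'. (d.c m k)\<^sup>2) - d.c l k / sqrt (\<Sum>k<K'. (d.c l k)\<^sup>2))\<^sup>2)"
        by (rule dsep)
      show "0 < dd" by (rule dd_pos)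
      show "real K' * e\<^sup>2 / gam\<^sup>2 \<le> 1/8" by (rule gsmall)
      show "real (K'+1) * e\<^sup>2 \<le> gam\<^sup>2/4" by (rule esmall)
      show "\<And>m. m<K \<Longrightarrow> 1280 * real K' * e\<^sup>2 / (gam\<^sup>2 * r * dd) < real (card {i. i<n \<and> comm K T i = m})"
      proof -
        fix m assume m: "m<K"
        have "1280 * real K' * e\<^sup>2 / (gam\<^sup>2 * r * dd) = 640 * Q * mn" by (rule key)
        also have "\<dots> \<le> 640 * (1/1000) * mn" using Qs' mn_pos by (intro mult_right_mono) auto
        also have "\<dots> < mn" using mn_pos by simp
        also have "\<dots> \<le> real (card {i. i<n \<and> comm K T i = m})" by (rule mn_le[OF m])
        finally show "1280 * real K' * e\<^sup>2 / (gam\<^sup>2 * r * dd) < real (card {i. i<n \<and> comm K T i = m})" .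
      qed
    qed
    then show ?thesis using that by blast
  qed
  have rec: "recovery K T Tt (real (card S) / min_nk K T)"
  proof -
    have ag: "\<And>i. i<n \<Longrightarrow> i \<notin> S \<Longrightarrow> \<sigma> (comm K Tt i) = comm K T i" using res(4) by blast
    show ?thesis by (rule recovery_from_perm[OF T Ttm res(1) res(3) ag Gpos K1])
  qed
  have "real (card S) / mn \<le> 640 * Q"
  proof -
    have "real (card S) \<le> 640 * Q * mn" using res(2) key by simp
    then show ?thesis using mn_pos by (simp add: pos_divide_le_eq)
  qed
  also have "\<dots> \<le> 1000 * Q" using base x_nn by linarith
  finally have "real (card S) / min_nk K T \<le> 1000 * Q" unfolding mn_def .
  then show ?thesis using recovery_mono[OF rec] unfolding Q_def e_def gam_def mtt_def mn_def mB_def Bb_def by blast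
qed

theorem theorem7:
  shows "(\<exists>c9>0. \<forall>n K K' T B th U Sig A At Tt.
     dcsbm n K K' T B th \<and> eig_decomp n K' (Pmat T B th) U Sig \<and>
     adj_realization n (Pmat T B th) A \<and> randomized_approx n K' A At \<and>
     rssc_output n K K' At Tt \<and> K' = K \<and>
     1 / min_tt_sq n K T th *
       (real K' * (spec_norm (At - Pmat T B th))\<^sup>2 / ((gamma_n K' Sig)\<^sup>2 * min_nk K T)) \<le> c9
     \<longrightarrow> recovery K T Tt (inverse c9 * (1 / min_tt_sq n K T th *
       (real K' * (spec_norm (At - Pmat T B th))\<^sup>2 / ((gamma_n K' Sig)\<^sup>2 * min_nk K T)))))
   \<and>
   (\<exists>c10>0. \<forall>n K K' T B th U Sig H D A At Tt xi iota.
     dcsbm n K K' T B th \<and> eig_decomp n K' (Pmat T B th) U Sig \<and>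
     eig_decomp K K' (Bbar K T B th) H D \<and>
     adj_realization n (Pmat T B th) A \<and> randomized_approx n K' A At \<and>
     rssc_output n K K' At Tt \<and> K' < K \<and>
     xi < 1 \<and> (\<forall>k<K. \<forall>l<K. k \<noteq> l \<longrightarrow> cosv (row H k) (row H l) \<le> xi) \<and>
     (\<forall>i<K'. Sig $$ (i,i) < iota) \<and> (\<forall>k<K. 0 < B $$ (k,k)) \<and>
     iota / (min_tt_sq n K T th * Min ((\<lambda>k. Bbar K T B th $$ (k,k)) ` {..<K})) *
       (real K' * (spec_norm (At - Pmat T B th))\<^sup>2 / ((1 - xi) * (gamma_n K' Sig)\<^sup>2 * min_nk K T))
       \<le> c10
     \<longrightarrow> recovery K T Tt (inverse c10 *
       (iota / (min_tt_sq n K T th * Min ((\<lambda>k. Bbar K T B th $$ (k,k)) ` {..<K})) *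
       (real K' * (spec_norm (At - Pmat T B th))\<^sup>2 / ((1 - xi) * (gamma_n K' Sig)\<^sup>2 * min_nk K T)))))"
proof (rule conjI)
  show "\<exists>c9>0. \<forall>n K K' T B th U Sig A At Tt.
     dcsbm n K K' T B th \<and> eig_decomp n K' (Pmat T B th) U Sig \<and>
     adj_realization n (Pmat T B th) A \<and> randomized_approx n K' A At \<and>
     rssc_output n K K' At Tt \<and> K' = K \<and>
     1 / min_tt_sq n K T th *
       (real K' * (spec_norm (At - Pmat T B th))\<^sup>2 / ((gamma_n K' Sig)\<^sup>2 * min_nk K T)) \<le> c9
     \<longrightarrow> recovery K T Tt (inverse c9 * (1 / min_tt_sq n K T th *
       (real K' * (spec_norm (At - Pmat T B th))\<^sup>2 / ((gamma_n K' Sig)\<^sup>2 * min_nk K T))))"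
  proof (intro exI[of _ "1/1000::real"] conjI allI impI)
    fix n K K' T B th U Sig A At Tt
    assume H: "dcsbm n K K' T B th \<and> eig_decomp n K' (Pmat T B th) U Sig \<and>
     adj_realization n (Pmat T B th) A \<and> randomized_approx n K' A At \<and>
     rssc_output n K K' At Tt \<and> K' = K \<and>
     1 / min_tt_sq n K T th *
       (real K' * (spec_norm (At - Pmat T B th))\<^sup>2 / ((gamma_n K' Sig)\<^sup>2 * min_nk K T)) \<le> 1/1000"
    then show "recovery K T Tt (inverse (1/1000) * (1 / min_tt_sq n K T th *
       (real K' * (spec_norm (At - Pmat T B th))\<^sup>2 / ((gamma_n K' Sig)\<^sup>2 * min_nk K T))))"
    proof -
      have h: "dcsbm n K K' T B th" "eig_decomp n K' (Pmat T B th) U Sig" "rssc_output n K K' At Tt" "K' = K"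
        "1 / min_tt_sq n K T th * (real K' * (spec_norm (At - Pmat T B th))\<^sup>2 / ((gamma_n K' Sig)\<^sup>2 * min_nk K T)) \<le> 1/1000"
        using H by blast+
      have "recovery K T Tt (1000 * (1 / min_tt_sq n K T th * (real K' * (spec_norm (At - Pmat T B th))\<^sup>2 / ((gamma_n K' Sig)\<^sup>2 * min_nk K T))))"
        by (rule part_a_core[OF h])
      then show ?thesis by simp
    qed
  qed simp
next
  show "\<exists>c10>0. \<forall>n K K' T B th U Sig H D A At Tt xi iota.
     dcsbm n K K' T B th \<and> eig_decomp n K' (Pmat T B th) U Sig \<and>
     eig_decomp K K' (Bbar K T B th) H D \<and>
     adj_realization n (Pmat T B th) A \<and> randomized_approx n K' A At \<and>
     rssc_output n K K' At Tt \<and> K' < K \<and>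
     xi < 1 \<and> (\<forall>k<K. \<forall>l<K. k \<noteq> l \<longrightarrow> cosv (row H k) (row H l) \<le> xi) \<and>
     (\<forall>i<K'. Sig $$ (i,i) < iota) \<and> (\<forall>k<K. 0 < B $$ (k,k)) \<and>
     iota / (min_tt_sq n K T th * Min ((\<lambda>k. Bbar K T B th $$ (k,k)) ` {..<K})) *
       (real K' * (spec_norm (At - Pmat T B th))\<^sup>2 / ((1 - xi) * (gamma_n K' Sig)\<^sup>2 * min_nk K T))
       \<le> c10
     \<longrightarrow> recovery K T Tt (inverse c10 *
       (iota / (min_tt_sq n K T th * Min ((\<lambda>k. Bbar K T B th $$ (k,k)) ` {..<K})) *
       (real K' * (spec_norm (At - Pmat T B th))\<^sup>2 / ((1 - xi) * (gamma_n K' Sig)\<^sup>2 * min_nk K T))))"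
  proof (intro exI[of _ "1/1000::real"] conjI allI impI)
    fix n K K' T B th U Sig H D A At Tt xi iota
    assume H: "dcsbm n K K' T B th \<and> eig_decomp n K' (Pmat T B th) U Sig \<and>
     eig_decomp K K' (Bbar K T B th) H D \<and>
     adj_realization n (Pmat T B th) A \<and> randomized_approx n K' A At \<and>
     rssc_output n K K' At Tt \<and> K' < K \<and>
     xi < 1 \<and> (\<forall>k<K. \<forall>l<K. k \<noteq> l \<longrightarrow> cosv (row H k) (row H l) \<le> xi) \<and>
     (\<forall>i<K'. Sig $$ (i,i) < iota) \<and> (\<forall>k<K. 0 < B $$ (k,k)) \<and>
     iota / (min_tt_sq n K T th * Min ((\<lambda>k. Bbar K T B th $$ (k,k)) ` {..<K})) *
       (real K' * (spec_norm (At - Pmat T B th))\<^sup>2 / ((1 - xi) * (gamma_n K' Sig)\<^sup>2 * min_nk K T))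
       \<le> 1/1000"
    then show "recovery K T Tt (inverse (1/1000) *
       (iota / (min_tt_sq n K T th * Min ((\<lambda>k. Bbar K T B th $$ (k,k)) ` {..<K})) *
       (real K' * (spec_norm (At - Pmat T B th))\<^sup>2 / ((1 - xi) * (gamma_n K' Sig)\<^sup>2 * min_nk K T))))"
    proof -
      have h: "dcsbm n K K' T B th" "eig_decomp n K' (Pmat T B th) U Sig" "eig_decomp K K' (Bbar K T B th) H D"
        "rssc_output n K K' At Tt" "K' < K" "xi < 1" "\<forall>k<K. \<forall>l<K. k \<noteq> l \<longrightarrow> cosv (row H k) (row H l) \<le> xi"
        "\<forall>i<K'. Sig $$ (i,i) < iota" "\<forall>k<K. 0 < B $$ (k,k)"
        "iota / (min_tt_sq n K T th * Min ((\<lambda>k. Bbar K T B th $$ (k,k)) ` {..<K})) *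
       (real K' * (spec_norm (At - Pmat T B th))\<^sup>2 / ((1 - xi) * (gamma_n K' Sig)\<^sup>2 * min_nk K T)) \<le> 1/1000"
        using H by blast+
      have "recovery K T Tt (1000 * (iota / (min_tt_sq n K T th * Min ((\<lambda>k. Bbar K T B th $$ (k,k)) ` {..<K})) *
       (real K' * (spec_norm (At - Pmat T B th))\<^sup>2 / ((1 - xi) * (gamma_n K' Sig)\<^sup>2 * min_nk K T))))"
        by (rule part_b_core[OF h])
      then show ?thesis by simp
    qed
  qed simp
qed

end
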